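(* Let $\alpha\ge\omega$ be a countable ordinal with Cantor normal form $\alpha=\omega^{\beta_1}\cdot c_1+\omega^{\beta_2}\cdot c_2+\dots+\omega^{\beta_l}\cdot c_l$, where $\beta_1>\beta_2>\dots>\beta_l\ge0$ and $1\le c_i<\omega$. Then, regarding $\alpha$ as a linear order, $\mathsf{rk}(\alpha)=\omega\cdot\beta_1+\lfloor\log_2 c_1\rfloor$. In particular, the rank depends only on the leading term of the Cantor normal form.
   Context: An ordinal is regarded as the linear order $(\alpha,\in)$. Let $\mathcal F$ be the class of finite linear orders (language $\{<\}$); countable linear orders are the structures considered; substructures are suborders and $\mathsf{age}(X)$ is the set of finite suborders of $X$. For $A\le B$, $B$ is a prime extension of $A$ if $|B\setminus A|=1$; a realization of $B$ in $X$ (where $A\le X$) is $C\le X$ with $A\le C$ and an order-isomorphism $B\to C$ fixing $A$ pointwise. For $F\in\mathsf{age}(X)$ define by recursion: $\mathsf{rk}_X(F)\ge0$ always; $\mathsf{rk}_X(F)\ge\gamma+1$ iff every prime extension $B\in\mathcal F$ of $F$ has a realization $C$ in $X$ with $\mathsf{rk}_X(C)\ge\gamma$; for limit $\gamma$, $\mathsf{rk}_X(F)\ge\gamma$ iff $\mathsf{rk}_X(F)\ge\delta$ for all $\delta<\gamma$. $\mathsf{rk}_X(F)=\sup\{\gamma:\mathsf{rk}_X(F)\ge\gamma\}$ (or $\infty$ if this holds for all ordinals), and $\mathsf{rk}(X)=\mathsf{rk}_X(\emptyset)$. *)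

theory Defs
  imports Complex_Main "HOL-Library.Countable_Set"
begin

definition osum :: "'a rel \<Rightarrow> 'b rel \<Rightarrow> ('a + 'b) rel" where
  "osum r s = {(Inl a, Inl a') | a a'. (a, a') \<in> r}
            \<union> {(Inr b, Inr b') | b b'. (b, b') \<in> s}
            \<union> {(Inl a, Inr b) | a b. a \<in> Field r \<and> b \<in> Field s}"

text \<open>Ordinal product r * s: s copies of r (lexicographic, s-coordinate major).\<close>
definition oprod :: "'a rel \<Rightarrow> 'b rel \<Rightarrow> ('a \<times> 'b) rel" where
  "oprod r s = {((a, b), (a', b')). a \<in> Field r \<and> a' \<in> Field r \<and> b \<in> Field s \<and> b' \<in> Field s \<and>
                 (((b, b') \<in> s \<and> b \<noteq> b') \<or> (b = b' \<and> (a, a') \<in> r))}"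

text \<open>Ordinal power omega ^ beta: finitely supported functions from Field beta to nat,
  compared at the beta-largest coordinate where they differ.\<close>
definition fin_supp :: "'b rel \<Rightarrow> ('b \<Rightarrow> nat) set" where
  "fin_supp \<beta> = {f. finite {x. f x \<noteq> 0} \<and> (\<forall>x. x \<notin> Field \<beta> \<longrightarrow> f x = 0)}"

definition oexp_omega :: "'b rel \<Rightarrow> ('b \<Rightarrow> nat) rel" where
  "oexp_omega \<beta> = {(f, g). f \<in> fin_supp \<beta> \<and> g \<in> fin_supp \<beta> \<and>
      (f = g \<or> (\<exists>x \<in> Field \<beta>. f x < g x \<and>
                   (\<forall>y \<in> Field \<beta>. (x, y) \<in> \<beta> \<and> y \<noteq> x \<longrightarrow> f y = g y)))}"

definition osum_list :: "'a rel list \<Rightarrow> (nat \<times> 'a) rel" where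
  "osum_list rs = {((j, x), (j', x')). j < length rs \<and> j' < length rs \<and>
                     x \<in> Field (rs ! j) \<and> x' \<in> Field (rs ! j') \<and>
                     (j < j' \<or> (j = j' \<and> (x, x') \<in> rs ! j))}"

text \<open>Cantor normal form expression: the list [(beta_1,c_1),...,(beta_l,c_l)] denotes
  omega^beta_1 * c_1 + ... + omega^beta_l * c_l.\<close>
definition cnf :: "('b rel \<times> nat) list \<Rightarrow> (nat \<times> (('b \<Rightarrow> nat) \<times> nat)) rel" where
  "cnf ts = osum_list (map (\<lambda>(\<beta>, c). oprod (oexp_omega \<beta>) (natLeq_on c)) ts)"

definition osucc :: "'b rel \<Rightarrow> 'b option rel" where
  "osucc r = {(Some a, Some b) | a b. (a, b) \<in> r}
           \<union> {(u, None) | u. u = None \<or> (\<exists>a. u = Some a \<and> a \<in> Field r)}"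

text \<open>A prime extension of the finite suborder F of X: a linear order B on the points
  Some f (f in F) plus one new point None, which restricts to the order of X on F.\<close>
definition prime_ext :: "'a rel \<Rightarrow> 'a set \<Rightarrow> 'a option rel \<Rightarrow> bool" where
  "prime_ext X F B \<longleftrightarrow> Linear_order B \<and> Field B = insert None (Some ` F) \<and>
     (\<forall>f \<in> F. \<forall>g \<in> F. (Some f, Some g) \<in> B \<longleftrightarrow> (f, g) \<in> X)"

definition emb_pt :: "'a \<Rightarrow> 'a option \<Rightarrow> 'a" where
  "emb_pt x u = (case u of None \<Rightarrow> x | Some f \<Rightarrow> f)"

definition realizes :: "'a rel \<Rightarrow> 'a set \<Rightarrow> 'a option rel \<Rightarrow> 'a \<Rightarrow> bool" where
  "realizes X F B x \<longleftrightarrow> x \<in> Field X \<and> x \<notin> F \<and>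
     (\<forall>u \<in> Field B. \<forall>v \<in> Field B. (u, v) \<in> B \<longleftrightarrow> (emb_pt x u, emb_pt x v) \<in> X)"

definition is_pred :: "'b rel \<Rightarrow> 'b \<Rightarrow> 'b \<Rightarrow> bool" where
  "is_pred r b a \<longleftrightarrow> (b, a) \<in> r \<and> b \<noteq> a \<and>
     \<not> (\<exists>c. (b, c) \<in> r \<and> c \<noteq> b \<and> (c, a) \<in> r \<and> c \<noteq> a)"

text \<open>rk_ge_aux X r a F: rk_X(F) \<ge> the order type of the r-initial segment strictly below a,
  by well-founded recursion on a (zero / successor / limit cases).\<close>
definition rk_ge_aux :: "'a rel \<Rightarrow> 'b rel \<Rightarrow> 'b \<Rightarrow> 'a set \<Rightarrow> bool" where
  "rk_ge_aux X r = wfrec (r - Id) (\<lambda>R a F.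
      if (\<forall>b. (b, a) \<notin> r - Id) then True
      else if (\<exists>b. is_pred r b a) then
        (\<forall>B. prime_ext X F B \<longrightarrow>
              (\<exists>x. realizes X F B x \<and> R (THE b. is_pred r b a) (insert x F)))
      else (\<forall>b. (b, a) \<in> r - Id \<longrightarrow> R b F))"

text \<open>rk_ge X F r: rk_X(F) \<ge> otp(r), for a well-order r.\<close>
definition rk_ge :: "'a rel \<Rightarrow> 'a set \<Rightarrow> 'b rel \<Rightarrow> bool" where
  "rk_ge X F r \<longleftrightarrow> rk_ge_aux X (osucc r) None F"

end

theory Submission
  imports Defs
begin

lemma WO_wf: "Well_order r \<Longrightarrow> wf (r - Id)"
  by (simp add: well_order_on_def)

lemma WO_lin: "Well_order r \<Longrightarrow> Linear_order r"
  by (simp add: well_order_on_def)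

lemma LO_refl: "Linear_order r \<Longrightarrow> x \<in> Field r \<Longrightarrow> (x, x) \<in> r"
proof -
  assume "Linear_order r" "x \<in> Field r"
  then have "refl_on (Field r) r" by (simp add: linear_order_on_def partial_order_on_def preorder_on_def)
  then show ?thesis using \<open>x \<in> Field r\<close> by (simp add: refl_on_def)
qed

lemma LO_trans: "Linear_order r \<Longrightarrow> (x, y) \<in> r \<Longrightarrow> (y, z) \<in> r \<Longrightarrow> (x, z) \<in> r"
proof -
  assume "Linear_order r" "(x, y) \<in> r" "(y, z) \<in> r"
  moreover have "trans r" using \<open>Linear_order r\<close> by (simp add: linear_order_on_def partial_order_on_def preorder_on_def)
  ultimately show ?thesis by (meson transD)
qed

lemma LO_antisym: "Linear_order r \<Longrightarrow> (x, y) \<in> r \<Longrightarrow> (y, x) \<in> r \<Longrightarrow> x = y"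
proof -
  assume "Linear_order r" "(x, y) \<in> r" "(y, x) \<in> r"
  moreover have "antisym r" using \<open>Linear_order r\<close> by (simp add: linear_order_on_def partial_order_on_def)
  ultimately show ?thesis by (meson antisymD)
qed

lemma LO_total: "Linear_order r \<Longrightarrow> x \<in> Field r \<Longrightarrow> y \<in> Field r \<Longrightarrow> x \<noteq> y \<Longrightarrow> (x, y) \<in> r \<or> (y, x) \<in> r"
proof -
  assume "Linear_order r" "x \<in> Field r" "y \<in> Field r" "x \<noteq> y"
  moreover have "total_on (Field r) r" using \<open>Linear_order r\<close> by (simp add: linear_order_on_def)
  ultimately show ?thesis by (simp add: total_on_def)
qed

lemma LO_total': "Linear_order r \<Longrightarrow> x \<in> Field r \<Longrightarrow> y \<in> Field r \<Longrightarrow> (x, y) \<in> r \<or> (y, x) \<in> r"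
  using LO_total[of r x y] LO_refl[of r x] by blast

lemma FieldI1': "(x, y) \<in> r \<Longrightarrow> x \<in> Field r" by (auto simp: Field_def)
lemma FieldI2': "(x, y) \<in> r \<Longrightarrow> y \<in> Field r" by (auto simp: Field_def)

lemma pred_unique:
  assumes "Linear_order r" "is_pred r b a" "is_pred r c a" shows "b = c"
proof (rule ccontr)
  assume ne: "b \<noteq> c"
  have b1: "(b, a) \<in> r" "b \<noteq> a" and b2: "\<And>x. (b, x) \<in> r \<Longrightarrow> x \<noteq> b \<Longrightarrow> (x, a) \<in> r \<Longrightarrow> x = a"
    using assms(2) unfolding is_pred_def by auto
  have c1: "(c, a) \<in> r" "c \<noteq> a" and c2: "\<And>x. (c, x) \<in> r \<Longrightarrow> x \<noteq> c \<Longrightarrow> (x, a) \<in> r \<Longrightarrow> x = a"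
    using assms(3) unfolding is_pred_def by auto
  have bF: "b \<in> Field r" "c \<in> Field r" using FieldI1'[OF b1(1)] FieldI1'[OF c1(1)] by simp_all
  have "(b, c) \<in> r \<or> (c, b) \<in> r" by (rule LO_total[OF assms(1) bF ne])
  then show False
  proof
    assume "(b, c) \<in> r" then have "c = a" using b2[of c] ne c1(1) by simp
    then show False using c1(2) by simp
  next
    assume "(c, b) \<in> r" then have "b = a" using c2[of b] ne b1(1) by simp
    then show False using b1(2) by simp
  qed
qed

lemma the_pred: "Linear_order r \<Longrightarrow> is_pred r b a \<Longrightarrow> (THE b. is_pred r b a) = b"
  using pred_unique by (metis the_equality)

section \<open>Splitting rank\<close>

definition lowr :: "'a rel \<Rightarrow> 'a set \<Rightarrow> 'a \<Rightarrow> 'a set" where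
  "lowr X G y = {z \<in> G. (z, y) \<in> X \<and> z \<noteq> y}"
definition upr :: "'a rel \<Rightarrow> 'a set \<Rightarrow> 'a \<Rightarrow> 'a set" where
  "upr X G y = {z \<in> G. (y, z) \<in> X \<and> z \<noteq> y}"

definition spl :: "'a rel \<Rightarrow> 'b rel \<Rightarrow> 'b \<Rightarrow> 'a set \<Rightarrow> bool" where
  "spl X r = wfrec (r - Id) (\<lambda>R a G.
      if (\<forall>b. (b, a) \<notin> r - Id) then True
      else if (\<exists>b. is_pred r b a) then
        (\<exists>y\<in>G. R (THE b. is_pred r b a) (lowr X G y) \<and> R (THE b. is_pred r b a) (upr X G y))
      else (\<forall>b. (b, a) \<in> r - Id \<longrightarrow> R b G))"

lemma spl_unfold:
  fixes X :: "'a rel" and r :: "'b rel"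
  assumes "Well_order r"
  shows "spl X r a G = (if (\<forall>b. (b, a) \<notin> r - Id) then True
      else if (\<exists>b. is_pred r b a) then
        (\<exists>y\<in>G. spl X r (THE b. is_pred r b a) (lowr X G y) \<and> spl X r (THE b. is_pred r b a) (upr X G y))
      else (\<forall>b. (b, a) \<in> r - Id \<longrightarrow> spl X r b G))"
proof -
  have "adm_wf (r - Id) (\<lambda>R a G.
      if (\<forall>b. (b, a) \<notin> r - Id) then True
      else if (\<exists>b. is_pred r b a) then
        (\<exists>y\<in>G. R (THE b. is_pred r b a) (lowr X G y) \<and> R (THE b. is_pred r b a) (upr X G y))
      else (\<forall>b. (b, a) \<in> r - Id \<longrightarrow> R b G))"
    unfolding adm_wf_def
  proof (intro allI impI)
    fix f g :: "'b \<Rightarrow> 'a set \<Rightarrow> bool" and x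
    assume H: "\<forall>z. (z, x) \<in> r - Id \<longrightarrow> f z = g z"
    have "(\<exists>b. is_pred r b x) \<Longrightarrow> f (THE b. is_pred r b x) = g (THE b. is_pred r b x)"
    proof -
      assume "\<exists>b. is_pred r b x"
      then obtain b where b: "is_pred r b x" by blast
      then have "(THE b. is_pred r b x) = b" using the_pred WO_lin assms by metis
      then show ?thesis using H b unfolding is_pred_def by auto
    qed
    then show "(\<lambda>G. if (\<forall>b. (b, x) \<notin> r - Id) then True
      else if (\<exists>b. is_pred r b x) then
        (\<exists>y\<in>G. f (THE b. is_pred r b x) (lowr X G y) \<and> f (THE b. is_pred r b x) (upr X G y))
      else (\<forall>b. (b, x) \<in> r - Id \<longrightarrow> f b G)) =
      (\<lambda>G. if (\<forall>b. (b, x) \<notin> r - Id) then True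
      else if (\<exists>b. is_pred r b x) then
        (\<exists>y\<in>G. g (THE b. is_pred r b x) (lowr X G y) \<and> g (THE b. is_pred r b x) (upr X G y))
      else (\<forall>b. (b, x) \<in> r - Id \<longrightarrow> g b G))"
    proof (cases "\<exists>b. is_pred r b x")
      case True
      then show ?thesis using \<open>(\<exists>b. is_pred r b x) \<Longrightarrow> _\<close> by simp
    next
      case False
      have e: "\<And>G. (\<forall>b. (b, x) \<in> r - Id \<longrightarrow> f b G) = (\<forall>b. (b, x) \<in> r - Id \<longrightarrow> g b G)" using H by auto
      show ?thesis using False by (simp only: e if_False)
    qed
  qed
  note fp = wfrec_fixpoint[OF WO_wf[OF assms] this]
  show ?thesis unfolding spl_def by (subst fp) (rule refl)
qed

lemma spl_succ:
  assumes "Well_order r" "is_pred r b a"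
  shows "spl X r a G = (\<exists>y\<in>G. spl X r b (lowr X G y) \<and> spl X r b (upr X G y))"
proof -
  have "(b, a) \<in> r - Id" using assms(2) unfolding is_pred_def by auto
  then have nz: "\<not> (\<forall>c. (c, a) \<notin> r - Id)" by blast
  have ex: "\<exists>c. is_pred r c a" using assms(2) by blast
  show ?thesis by (subst spl_unfold[OF assms(1)]) (simp only: if_not_P[OF nz] if_P[OF ex] the_pred[OF WO_lin[OF assms(1)] assms(2)])
qed

lemma spl_lim:
  assumes "Well_order r" "\<not> (\<exists>b. is_pred r b a)"
  shows "spl X r a G = (\<forall>b. (b, a) \<in> r - Id \<longrightarrow> spl X r b G)"
proof (cases "\<forall>b. (b, a) \<notin> r - Id")
  case True
  then show ?thesis by (subst spl_unfold[OF assms(1)]) (simp add: True, blast)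
next
  case False
  then show ?thesis by (subst spl_unfold[OF assms(1)]) (simp only: if_not_P[OF False] if_not_P[OF assms(2)] if_False)
qed

lemma rk_unfold:
  fixes X :: "'a rel" and r :: "'b rel"
  assumes "Well_order r"
  shows "rk_ge_aux X r a F = (if (\<forall>b. (b, a) \<notin> r - Id) then True
      else if (\<exists>b. is_pred r b a) then
        (\<forall>B. prime_ext X F B \<longrightarrow>
              (\<exists>x. realizes X F B x \<and> rk_ge_aux X r (THE b. is_pred r b a) (insert x F)))
      else (\<forall>b. (b, a) \<in> r - Id \<longrightarrow> rk_ge_aux X r b F))"
proof -
  have "adm_wf (r - Id) (\<lambda>R a F.
      if (\<forall>b. (b, a) \<notin> r - Id) then True
      else if (\<exists>b. is_pred r b a) then
        (\<forall>B. prime_ext X F B \<longrightarrow>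
              (\<exists>x. realizes X F B x \<and> R (THE b. is_pred r b a) (insert x F)))
      else (\<forall>b. (b, a) \<in> r - Id \<longrightarrow> R b F))"
    unfolding adm_wf_def
  proof (intro allI impI)
    fix f g :: "'b \<Rightarrow> 'a set \<Rightarrow> bool" and x
    assume H: "\<forall>z. (z, x) \<in> r - Id \<longrightarrow> f z = g z"
    have "(\<exists>b. is_pred r b x) \<Longrightarrow> f (THE b. is_pred r b x) = g (THE b. is_pred r b x)"
    proof -
      assume "\<exists>b. is_pred r b x"
      then obtain b where b: "is_pred r b x" by blast
      then have "(THE b. is_pred r b x) = b" using the_pred WO_lin assms by metis
      then show ?thesis using H b unfolding is_pred_def by auto
    qed
    then show "(\<lambda>F. if (\<forall>b. (b, x) \<notin> r - Id) then True
      else if (\<exists>b. is_pred r b x) then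
        (\<forall>B. prime_ext X F B \<longrightarrow>
              (\<exists>xa. realizes X F B xa \<and> f (THE b. is_pred r b x) (insert xa F)))
      else (\<forall>b. (b, x) \<in> r - Id \<longrightarrow> f b F)) =
      (\<lambda>F. if (\<forall>b. (b, x) \<notin> r - Id) then True
      else if (\<exists>b. is_pred r b x) then
        (\<forall>B. prime_ext X F B \<longrightarrow>
              (\<exists>xa. realizes X F B xa \<and> g (THE b. is_pred r b x) (insert xa F)))
      else (\<forall>b. (b, x) \<in> r - Id \<longrightarrow> g b F))"
    proof (cases "\<exists>b. is_pred r b x")
      case True
      then show ?thesis using \<open>(\<exists>b. is_pred r b x) \<Longrightarrow> _\<close> by simp
    next
      case False
      have e: "\<And>G. (\<forall>b. (b, x) \<in> r - Id \<longrightarrow> f b G) = (\<forall>b. (b, x) \<in> r - Id \<longrightarrow> g b G)" using H by auto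
      show ?thesis using False by (simp only: e if_False)
    qed
  qed
  note fp = wfrec_fixpoint[OF WO_wf[OF assms] this]
  show ?thesis unfolding rk_ge_aux_def by (subst fp) (rule refl)
qed

lemma rk_succ:
  assumes "Well_order r" "is_pred r b a"
  shows "rk_ge_aux X r a F = (\<forall>B. prime_ext X F B \<longrightarrow>
              (\<exists>x. realizes X F B x \<and> rk_ge_aux X r b (insert x F)))"
proof -
  have "(b, a) \<in> r - Id" using assms(2) unfolding is_pred_def by auto
  then have nz: "\<not> (\<forall>c. (c, a) \<notin> r - Id)" by blast
  have ex: "\<exists>c. is_pred r c a" using assms(2) by blast
  show ?thesis by (subst rk_unfold[OF assms(1)]) (simp only: if_not_P[OF nz] if_P[OF ex] the_pred[OF WO_lin[OF assms(1)] assms(2)])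
qed

lemma rk_lim:
  assumes "Well_order r" "\<not> (\<exists>b. is_pred r b a)"
  shows "rk_ge_aux X r a F = (\<forall>b. (b, a) \<in> r - Id \<longrightarrow> rk_ge_aux X r b F)"
proof (cases "\<forall>b. (b, a) \<notin> r - Id")
  case True
  then show ?thesis by (subst rk_unfold[OF assms(1)]) (simp add: True, blast)
next
  case False
  then show ?thesis by (subst rk_unfold[OF assms(1)]) (simp only: if_not_P[OF False] if_not_P[OF assms(2)] if_False)
qed

lemma spl_emb:
  assumes WO: "Well_order r"
  shows "spl X r a G \<Longrightarrow> inj_on h G \<Longrightarrow> h ` G \<subseteq> G' \<Longrightarrow>
    (\<forall>u\<in>G. \<forall>v\<in>G. (u, v) \<in> X \<longrightarrow> (h u, h v) \<in> Y) \<Longrightarrow> spl Y r a G'"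
proof (induction a arbitrary: G G' h rule: wf_induct_rule[OF WO_wf[OF WO]])
  case (1 a)
  show ?case
  proof (cases "\<exists>b. is_pred r b a")
    case True
    then obtain b where b: "is_pred r b a" by blast
    then have ba: "(b, a) \<in> r - Id" unfolding is_pred_def by auto
    obtain y where y: "y \<in> G" "spl X r b (lowr X G y)" "spl X r b (upr X G y)"
      using "1.prems"(1) spl_succ[OF WO b, of X G] by blast
    have l: "spl Y r b (lowr Y G' (h y))"
    proof (rule "1.IH"[OF ba y(2)])
      show "inj_on h (lowr X G y)" using "1.prems"(2) by (rule inj_on_subset) (auto simp: lowr_def)
      show "h ` lowr X G y \<subseteq> lowr Y G' (h y)"
      proof
        fix w assume "w \<in> h ` lowr X G y"
        then obtain z where z: "z \<in> G" "(z, y) \<in> X" "z \<noteq> y" "w = h z" by (auto simp: lowr_def)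
        have "h z \<noteq> h y" using "1.prems"(2) z y(1) by (meson inj_onD)
        then show "w \<in> lowr Y G' (h y)" using z "1.prems"(3,4) y(1) by (auto simp: lowr_def)
      qed
      show "\<forall>u\<in>lowr X G y. \<forall>v\<in>lowr X G y. (u, v) \<in> X \<longrightarrow> (h u, h v) \<in> Y"
        using "1.prems"(4) by (auto simp: lowr_def)
    qed
    have u: "spl Y r b (upr Y G' (h y))"
    proof (rule "1.IH"[OF ba y(3)])
      show "inj_on h (upr X G y)" using "1.prems"(2) by (rule inj_on_subset) (auto simp: upr_def)
      show "h ` upr X G y \<subseteq> upr Y G' (h y)"
      proof
        fix w assume "w \<in> h ` upr X G y"
        then obtain z where z: "z \<in> G" "(y, z) \<in> X" "z \<noteq> y" "w = h z" by (auto simp: upr_def)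
        have "h z \<noteq> h y" using "1.prems"(2) z y(1) by (meson inj_onD)
        then show "w \<in> upr Y G' (h y)" using z "1.prems"(3,4) y(1) by (auto simp: upr_def)
      qed
      show "\<forall>u\<in>upr X G y. \<forall>v\<in>upr X G y. (u, v) \<in> X \<longrightarrow> (h u, h v) \<in> Y"
        using "1.prems"(4) by (auto simp: upr_def)
    qed
    have "h y \<in> G'" using "1.prems"(3) y(1) by auto
    then show ?thesis using l u spl_succ[OF WO b, of Y G'] by blast
  next
    case False
    have H: "spl X r b G" if "(b, a) \<in> r - Id" for b using "1.prems"(1) spl_lim[OF WO False, of X G] that by blast
    have "spl Y r b G'" if "(b, a) \<in> r - Id" for b
      by (rule "1.IH"[OF that H[OF that] "1.prems"(2) "1.prems"(3) "1.prems"(4)])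
    then show ?thesis using spl_lim[OF WO False, of Y G'] by blast
  qed
qed

lemma spl_subset:
  assumes "Well_order r" "spl X r a G" "G \<subseteq> G'"
  shows "spl X r a G'"
  using spl_emb[OF assms(1) assms(2), of id G' X] assms(3) by auto

lemma spl_down:
  assumes WO: "Well_order r"
  shows "spl X r a G \<Longrightarrow> (b, a) \<in> r \<Longrightarrow> spl X r b G"
proof (induction a arbitrary: b G rule: wf_induct_rule[OF WO_wf[OF WO]])
  case (1 a)
  show ?case
  proof (cases "b = a")
    case True then show ?thesis using "1.prems"(1) by simp
  next
    case False
    then have ba: "(b, a) \<in> r - Id" using "1.prems"(2) by simp
    show ?thesis
    proof (cases "\<exists>c. is_pred r c a")
      case True
      then obtain c where c: "is_pred r c a" by blast
      then have ca: "(c, a) \<in> r - Id" unfolding is_pred_def by auto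
      obtain y where y: "y \<in> G" "spl X r c (lowr X G y)"
        using "1.prems"(1) spl_succ[OF WO c, of X G] by blast
      have bc: "(b, c) \<in> r"
      proof (cases "b = c")
        case True then show ?thesis using ca FieldI1'[of c a r] LO_refl[OF WO_lin[OF WO]] by auto
      next
        case False
        have bF: "b \<in> Field r" "c \<in> Field r" using ba ca FieldI1' by fastforce+
        have "\<not> (c, b) \<in> r" using c False ba unfolding is_pred_def by auto
        then show ?thesis using LO_total[OF WO_lin[OF WO] bF False] by blast
      qed
      have "spl X r b (lowr X G y)" using "1.IH"[OF ca y(2) bc] .
      then show ?thesis using spl_subset[OF WO] by (auto simp: lowr_def)
    next
      case False
      then show ?thesis using "1.prems"(1) spl_lim[OF WO False, of X G] ba by blast
    qed
  qed
qed

section \<open>Gaps\<close>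

definition dcl :: "'a rel \<Rightarrow> 'a set \<Rightarrow> 'a set \<Rightarrow> bool" where
  "dcl X F L \<longleftrightarrow> L \<subseteq> F \<and> (\<forall>f\<in>L. \<forall>g\<in>F. (g, f) \<in> X \<longrightarrow> g \<in> L)"

definition gapL :: "'a rel \<Rightarrow> 'a set \<Rightarrow> 'a set \<Rightarrow> 'a set" where
  "gapL X F L = {y \<in> Field X. y \<notin> F \<and> (\<forall>f\<in>F. (f, y) \<in> X \<longleftrightarrow> f \<in> L)}"

definition LofB :: "'a set \<Rightarrow> 'a option rel \<Rightarrow> 'a set" where
  "LofB F B = {f \<in> F. (Some f, None) \<in> B}"

definition BofL :: "'a rel \<Rightarrow> 'a set \<Rightarrow> 'a set \<Rightarrow> 'a option rel" where
  "BofL X F L = {(Some f, Some g) | f g. f \<in> F \<and> g \<in> F \<and> (f, g) \<in> X}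
     \<union> {(Some f, None) | f. f \<in> L} \<union> {(None, Some g) | g. g \<in> F \<and> g \<notin> L} \<union> {(None, None)}"

lemma LofB_dcl:
  assumes "prime_ext X F B" shows "dcl X F (LofB F B)"
proof -
  have LB: "Linear_order B" and pe: "\<forall>f\<in>F. \<forall>g\<in>F. (Some f, Some g) \<in> B \<longleftrightarrow> (f, g) \<in> X"
    using assms unfolding prime_ext_def by auto
  show ?thesis unfolding dcl_def LofB_def
  proof (intro conjI ballI impI)
    fix f g assume f: "f \<in> {f \<in> F. (Some f, None) \<in> B}" and g: "g \<in> F" and gf: "(g, f) \<in> X"
    then have "(Some g, Some f) \<in> B" using pe by auto
    then have "(Some g, None) \<in> B" using f LO_trans[OF LB] by blast
    then show "g \<in> {f \<in> F. (Some f, None) \<in> B}" using g by simp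
  qed auto
qed

lemma realizes_iff:
  assumes LX: "Linear_order X" and pe0: "prime_ext X F B"
  shows "realizes X F B y \<longleftrightarrow> y \<in> gapL X F (LofB F B)"
proof -
  have LB: "Linear_order B" and FB: "Field B = insert None (Some ` F)"
    and pe: "\<forall>f\<in>F. \<forall>g\<in>F. (Some f, Some g) \<in> B \<longleftrightarrow> (f, g) \<in> X"
    using pe0 unfolding prime_ext_def by auto
  show ?thesis
  proof
    assume R: "realizes X F B y"
    then have y: "y \<in> Field X" "y \<notin> F" and
      H: "\<forall>u\<in>Field B. \<forall>v\<in>Field B. (u, v) \<in> B \<longleftrightarrow> (emb_pt y u, emb_pt y v) \<in> X"
      unfolding realizes_def by auto
    have "\<forall>f\<in>F. (f, y) \<in> X \<longleftrightarrow> f \<in> LofB F B"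
    proof
      fix f assume f: "f \<in> F"
      have "(Some f, None) \<in> B \<longleftrightarrow> (emb_pt y (Some f), emb_pt y None) \<in> X"
        using H FB f by auto
      then show "(f, y) \<in> X \<longleftrightarrow> f \<in> LofB F B" using f by (simp add: emb_pt_def LofB_def)
    qed
    then show "y \<in> gapL X F (LofB F B)" using y unfolding gapL_def by auto
  next
    assume G: "y \<in> gapL X F (LofB F B)"
    then have y: "y \<in> Field X" "y \<notin> F" and yL: "\<forall>f\<in>F. (f, y) \<in> X \<longleftrightarrow> (Some f, None) \<in> B"
      unfolding gapL_def LofB_def by auto
    have "\<forall>u\<in>Field B. \<forall>v\<in>Field B. (u, v) \<in> B \<longleftrightarrow> (emb_pt y u, emb_pt y v) \<in> X"
    proof (intro ballI)
      fix u v assume u: "u \<in> Field B" and v: "v \<in> Field B"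
      have NN: "(None, None) \<in> B" using LO_refl[OF LB] FB by auto
      have yy: "(y, y) \<in> X" using LO_refl[OF LX y(1)] .
      have SN: "(None, Some g) \<in> B \<longleftrightarrow> (y, g) \<in> X" if g: "g \<in> F" for g
      proof -
        have "Some g \<in> Field B" using FB g by simp
        then have "(Some g, Some g) \<in> B" using LO_refl[OF LB] by blast
        then have "(g, g) \<in> X" using pe g by blast
        then have gF: "g \<in> Field X" by (rule FieldI1')
        have ne: "y \<noteq> g" using g y(2) by auto
        have "(None, Some g) \<in> B \<longleftrightarrow> (Some g, None) \<notin> B"
          using LO_total[OF LB, of None "Some g"] LO_antisym[OF LB, of None "Some g"] FB g by auto
        moreover have "(y, g) \<in> X \<longleftrightarrow> (g, y) \<notin> X"
          using LO_total[OF LX y(1) gF ne] LO_antisym[OF LX, of y g] ne by auto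
        ultimately show ?thesis using yL g by auto
      qed
      have uu: "u = None \<or> (\<exists>f\<in>F. u = Some f)" and vv: "v = None \<or> (\<exists>f\<in>F. v = Some f)"
        using u v FB by auto
      show "(u, v) \<in> B \<longleftrightarrow> (emb_pt y u, emb_pt y v) \<in> X"
      proof (cases "u = None")
        case True
        then show ?thesis
        proof (cases "v = None")
          case True then show ?thesis using \<open>u = None\<close> NN yy by (simp add: emb_pt_def)
        next
          case False then obtain g where "g \<in> F" "v = Some g" using vv by blast
          then show ?thesis using \<open>u = None\<close> SN by (simp add: emb_pt_def)
        qed
      next
        case False then obtain f where f: "f \<in> F" "u = Some f" using uu by blast
        show ?thesis
        proof (cases "v = None")
          case True then show ?thesis using f yL by (simp add: emb_pt_def)
        next
          case False then obtain g where "g \<in> F" "v = Some g" using vv by blast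
          then show ?thesis using f pe by (simp add: emb_pt_def)
        qed
      qed
    qed
    then show "realizes X F B y" using y unfolding realizes_def by auto
  qed
qed

lemma BofL_LofB: "L \<subseteq> F \<Longrightarrow> LofB F (BofL X F L) = L"
  unfolding LofB_def BofL_def by auto

lemma BofL_Field: "F \<subseteq> Field X \<Longrightarrow> Linear_order X \<Longrightarrow> L \<subseteq> F \<Longrightarrow> Field (BofL X F L) = insert None (Some ` F)"
proof -
  assume FX: "F \<subseteq> Field X" and LX: "Linear_order X" and LF: "L \<subseteq> F"
  have "(Some f, Some f) \<in> BofL X F L" if "f \<in> F" for f
    using that FX LO_refl[OF LX, of f] unfolding BofL_def by auto
  moreover have "(None, None) \<in> BofL X F L" unfolding BofL_def by auto
  ultimately have "insert None (Some ` F) \<subseteq> Field (BofL X F L)" by (auto intro: FieldI1')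
  moreover have "Field (BofL X F L) \<subseteq> insert None (Some ` F)"
    using LF unfolding BofL_def Field_def by auto
  ultimately show ?thesis by blast
qed

lemma BofL_pe:
  assumes FX: "F \<subseteq> Field X" and LX: "Linear_order X" and D: "dcl X F L"
  shows "prime_ext X F (BofL X F L)"
proof -
  let ?B = "BofL X F L"
  have LF: "L \<subseteq> F" and dc: "\<And>f g. f \<in> L \<Longrightarrow> g \<in> F \<Longrightarrow> (g, f) \<in> X \<Longrightarrow> g \<in> L"
    using D unfolding dcl_def by auto
  have FB: "Field ?B = insert None (Some ` F)" using BofL_Field[OF FX LX LF] .
  have mem: "(u, v) \<in> ?B \<longleftrightarrow> (case (u, v) of (Some f, Some g) \<Rightarrow> f \<in> F \<and> g \<in> F \<and> (f, g) \<in> X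
      | (Some f, None) \<Rightarrow> f \<in> L | (None, Some g) \<Rightarrow> g \<in> F \<and> g \<notin> L | (None, None) \<Rightarrow> True)" for u v
    unfolding BofL_def by (cases u; cases v) auto
  have refl: "refl_on (Field ?B) ?B" unfolding FB refl_on_def
    using FX LO_refl[OF LX] by (auto simp: mem)
  have trans: "trans ?B"
  proof (rule transI)
    fix u v w assume uv: "(u, v) \<in> ?B" and vw: "(v, w) \<in> ?B"
    show "(u, w) \<in> ?B"
    proof (cases u; cases v; cases w)
      fix f g h assume "u = Some f" "v = Some g" "w = Some h"
      then show ?thesis using uv vw LO_trans[OF LX] by (auto simp: mem)
    next
      fix f g assume "u = Some f" "v = Some g" "w = None"
      then show ?thesis using uv vw dc by (auto simp: mem)
    next
      fix f h assume a: "u = Some f" "v = None" "w = Some h"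
      then have f: "f \<in> L" "f \<in> F" and h: "h \<in> F" "h \<notin> L" using uv vw LF by (auto simp: mem)
      have "f \<noteq> h" using f h by auto
      moreover have "f \<in> Field X" "h \<in> Field X" using f h FX by auto
      ultimately have "(f, h) \<in> X \<or> (h, f) \<in> X" using LO_total[OF LX] by blast
      then have "(f, h) \<in> X" using dc f h by blast
      then show ?thesis using a f h by (auto simp: mem)
    next
      fix g h assume "u = None" "v = Some g" "w = Some h"
      then show ?thesis using uv vw dc by (auto simp: mem)
    qed (use uv vw in \<open>auto simp: mem\<close>)
  qed
  have antisym: "antisym ?B"
  proof (rule antisymI)
    fix u v assume uv: "(u, v) \<in> ?B" and vu: "(v, u) \<in> ?B"
    show "u = v" using uv vu LO_antisym[OF LX] by (cases u; cases v) (auto simp: mem)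
  qed
  have total: "total_on (Field ?B) ?B"
    unfolding total_on_def FB
  proof (intro ballI impI)
    fix u v assume u: "u \<in> insert None (Some ` F)" and v: "v \<in> insert None (Some ` F)" and ne: "u \<noteq> v"
    show "(u, v) \<in> ?B \<or> (v, u) \<in> ?B"
      using u v ne LO_total[OF LX] FX LF by (cases u; cases v) (auto simp: mem)
  qed
  have "Linear_order ?B"
    unfolding linear_order_on_def partial_order_on_def preorder_on_def
    using refl trans antisym total by (auto simp: Field_def)
  then show ?thesis unfolding prime_ext_def using FB by (auto simp: mem)
qed

lemma LO_intro:
  assumes "\<And>x. x \<in> Field r \<Longrightarrow> (x, x) \<in> r"
    and "\<And>x y z. (x, y) \<in> r \<Longrightarrow> (y, z) \<in> r \<Longrightarrow> (x, z) \<in> r"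
    and "\<And>x y. (x, y) \<in> r \<Longrightarrow> (y, x) \<in> r \<Longrightarrow> x = y"
    and "\<And>x y. x \<in> Field r \<Longrightarrow> y \<in> Field r \<Longrightarrow> (x, y) \<in> r \<or> (y, x) \<in> r"
  shows "Linear_order r"
  unfolding linear_order_on_def partial_order_on_def preorder_on_def
proof (intro conjI)
  show "r \<subseteq> Field r \<times> Field r" by (auto intro: FieldI1' FieldI2')
  show "refl_on (Field r) r" using assms(1) by (simp add: refl_on_def)
  show "trans r" using assms(2) by (meson transI)
  show "antisym r" using assms(3) by (meson antisymI)
  show "total_on (Field r) r" using assms(4) by (simp add: total_on_def)
qed

lemma WO_intro: "Linear_order r \<Longrightarrow> wf (r - Id) \<Longrightarrow> Well_order r"
  by (simp add: well_order_on_def)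

lemma osucc_mem: "(u, v) \<in> osucc r \<longleftrightarrow> (case v of None \<Rightarrow> (case u of None \<Rightarrow> True | Some a \<Rightarrow> a \<in> Field r)
   | Some b \<Rightarrow> (case u of None \<Rightarrow> False | Some a \<Rightarrow> (a, b) \<in> r))"
  unfolding osucc_def by (cases u; cases v) auto

lemma osucc_Field: "Field (osucc r) = insert None (Some ` Field r)"
proof -
  have "(None, None) \<in> osucc r" by (simp add: osucc_mem)
  moreover have "(Some a, None) \<in> osucc r" if "a \<in> Field r" for a using that by (simp add: osucc_mem)
  ultimately have "insert None (Some ` Field r) \<subseteq> Field (osucc r)" by (auto intro: FieldI1')
  moreover have "Field (osucc r) \<subseteq> insert None (Some ` Field r)"
  proof
    fix u assume "u \<in> Field (osucc r)"
    then obtain v where "(u, v) \<in> osucc r \<or> (v, u) \<in> osucc r" unfolding Field_def by auto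
    then show "u \<in> insert None (Some ` Field r)"
      by (cases u; cases v) (auto simp: osucc_mem intro: FieldI1' FieldI2')
  qed
  ultimately show ?thesis by blast
qed

lemma osucc_WO:
  assumes WO: "Well_order r" shows "Well_order (osucc r)"
proof (rule WO_intro)
  have LO: "Linear_order r" using WO_lin[OF WO] .
  show "Linear_order (osucc r)"
  proof (rule LO_intro)
    fix x assume "x \<in> Field (osucc r)"
    then show "(x, x) \<in> osucc r" using LO_refl[OF LO] by (auto simp: osucc_Field osucc_mem)
  next
    fix x y z assume "(x, y) \<in> osucc r" "(y, z) \<in> osucc r"
    then show "(x, z) \<in> osucc r" using LO_trans[OF LO]
      by (cases x; cases y; cases z) (auto simp: osucc_mem intro: FieldI1')
  next
    fix x y assume "(x, y) \<in> osucc r" "(y, x) \<in> osucc r"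
    then show "x = y" using LO_antisym[OF LO] by (cases x; cases y) (auto simp: osucc_mem)
  next
    fix x y assume "x \<in> Field (osucc r)" "y \<in> Field (osucc r)"
    then show "(x, y) \<in> osucc r \<or> (y, x) \<in> osucc r" using LO_total'[OF LO]
      by (cases x; cases y) (auto simp: osucc_Field osucc_mem)
  qed
  have "osucc r - Id \<subseteq> map_prod Some Some ` (r - Id) \<union> {(Some a, None) | a. True}"
  proof
    fix p assume p: "p \<in> osucc r - Id"
    obtain u v where "p = (u, v)" by force
    then show "p \<in> map_prod Some Some ` (r - Id) \<union> {(Some a, None) | a. True}"
      using p by (cases u; cases v) (auto simp: osucc_mem)
  qed
  moreover have "wf (map_prod Some Some ` (r - Id) \<union> {(Some a, None) | a. True})"
  proof (rule wf_Un)
    show "wf (map_prod Some Some ` (r - Id))" by (rule wf_map_prod_image[OF WO_wf[OF WO]]) (simp add: inj_def)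
    show "wf {(Some a, None) | a. True}"
      by (rule wf_subset[OF wf_measure[of "\<lambda>u. if u = None then 1 else 0"]]) (auto simp: measure_def)
    show "Domain (map_prod Some Some ` (r - Id)) \<inter> Range {(Some a, None) | a. True} = {}" by auto
  qed
  ultimately show "wf (osucc r - Id)" by (rule wf_subset[rotated])
qed

lemma oprod_mem: "((a, b), (a', b')) \<in> oprod r s \<longleftrightarrow> a \<in> Field r \<and> a' \<in> Field r \<and> b \<in> Field s \<and> b' \<in> Field s \<and>
                 (((b, b') \<in> s \<and> b \<noteq> b') \<or> (b = b' \<and> (a, a') \<in> r))"
  unfolding oprod_def by simp

lemma oprod_Field: "Linear_order r \<Longrightarrow> Linear_order s \<Longrightarrow> Field (oprod r s) = Field r \<times> Field s"
proof
  assume LO: "Linear_order r" "Linear_order s"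
  show "Field r \<times> Field s \<subseteq> Field (oprod r s)"
  proof
    fix p assume "p \<in> Field r \<times> Field s"
    then obtain a b where "p = (a, b)" "a \<in> Field r" "b \<in> Field s" by auto
    then have "(p, p) \<in> oprod r s" using LO_refl[OF LO(1)] by (simp add: oprod_mem)
    then show "p \<in> Field (oprod r s)" by (rule FieldI1')
  qed
  show "Field (oprod r s) \<subseteq> Field r \<times> Field s"
    unfolding Field_def oprod_def by auto
qed

lemma oprod_WO:
  assumes WO: "Well_order r" "Well_order s" shows "Well_order (oprod r s)"
proof (rule WO_intro)
  have LO: "Linear_order r" "Linear_order s" using WO_lin WO by auto
  show "Linear_order (oprod r s)"
  proof (rule LO_intro)
    fix x assume "x \<in> Field (oprod r s)"
    then show "(x, x) \<in> oprod r s" using LO_refl[OF LO(1)] by (auto simp: oprod_Field[OF LO] oprod_mem)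
  next
    fix x y z assume xy: "(x, y) \<in> oprod r s" and yz: "(y, z) \<in> oprod r s"
    obtain a b a' b' a'' b'' where e: "x = (a, b)" "y = (a', b')" "z = (a'', b'')" by (cases x; cases y; cases z) auto
    show "(x, z) \<in> oprod r s" using xy yz LO_trans[OF LO(1)] LO_trans[OF LO(2)] LO_antisym[OF LO(2)]
      unfolding e oprod_mem by metis
  next
    fix x y assume xy: "(x, y) \<in> oprod r s" and yx: "(y, x) \<in> oprod r s"
    obtain a b a' b' where e: "x = (a, b)" "y = (a', b')" by (cases x; cases y) auto
    show "x = y" using xy yx LO_antisym[OF LO(1)] LO_antisym[OF LO(2)] unfolding e oprod_mem by metis
  next
    fix x y assume "x \<in> Field (oprod r s)" "y \<in> Field (oprod r s)"
    then obtain a b a' b' where e: "x = (a, b)" "y = (a', b')" and F: "a \<in> Field r" "a' \<in> Field r" "b \<in> Field s" "b' \<in> Field s"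
      by (auto simp: oprod_Field[OF LO])
    show "(x, y) \<in> oprod r s \<or> (y, x) \<in> oprod r s"
      using LO_total'[OF LO(1) F(1,2)] LO_total'[OF LO(2) F(3,4)] F unfolding e oprod_mem by blast
  qed
  have "oprod r s - Id \<subseteq> inv_image ((s - Id) <*lex*> (r - Id)) (\<lambda>(a, b). (b, a))"
    unfolding oprod_def by auto
  moreover have "wf (inv_image ((s - Id) <*lex*> (r - Id)) (\<lambda>(a, b). (b, a)))"
    by (intro wf_inv_image wf_lex_prod WO_wf WO)
  ultimately show "wf (oprod r s - Id)" by (rule wf_subset[rotated])
qed

lemma osum_mem: "(u, v) \<in> osum r s \<longleftrightarrow> (case (u, v) of (Inl a, Inl a') \<Rightarrow> (a, a') \<in> r
   | (Inr b, Inr b') \<Rightarrow> (b, b') \<in> s | (Inl a, Inr b) \<Rightarrow> a \<in> Field r \<and> b \<in> Field s | (Inr b, Inl a) \<Rightarrow> False)"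
  unfolding osum_def by (cases u; cases v) auto

lemma osum_Field: "Field (osum r s) = Inl ` Field r \<union> Inr ` Field s"
proof
  show "Field (osum r s) \<subseteq> Inl ` Field r \<union> Inr ` Field s"
  proof
    fix u assume "u \<in> Field (osum r s)"
    then obtain v where "(u, v) \<in> osum r s \<or> (v, u) \<in> osum r s" unfolding Field_def by auto
    then show "u \<in> Inl ` Field r \<union> Inr ` Field s"
      by (cases u; cases v) (auto simp: osum_mem intro: FieldI1' FieldI2')
  qed
  show "Inl ` Field r \<union> Inr ` Field s \<subseteq> Field (osum r s)"
  proof
    fix u assume "u \<in> Inl ` Field r \<union> Inr ` Field s"
    then consider a where "u = Inl a" "a \<in> Field r" | b where "u = Inr b" "b \<in> Field s" by auto
    then show "u \<in> Field (osum r s)"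
    proof cases
      case (1 a)
      then obtain a' where "(a, a') \<in> r \<or> (a', a) \<in> r" unfolding Field_def by auto
      then have "(Inl a, Inl a') \<in> osum r s \<or> (Inl a', Inl a) \<in> osum r s" by (auto simp: osum_mem)
      then show ?thesis using 1 by (auto intro: FieldI1' FieldI2')
    next
      case (2 b)
      then obtain b' where "(b, b') \<in> s \<or> (b', b) \<in> s" unfolding Field_def by auto
      then have "(Inr b, Inr b') \<in> osum r s \<or> (Inr b', Inr b) \<in> osum r s" by (auto simp: osum_mem)
      then show ?thesis using 2 by (auto intro: FieldI1' FieldI2')
    qed
  qed
qed

lemma osum_WO:
  assumes WO: "Well_order r" "Well_order s" shows "Well_order (osum r s)"
proof (rule WO_intro)
  have LO: "Linear_order r" "Linear_order s" using WO_lin WO by auto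
  show "Linear_order (osum r s)"
  proof (rule LO_intro)
    fix x assume "x \<in> Field (osum r s)"
    then show "(x, x) \<in> osum r s" using LO_refl[OF LO(1)] LO_refl[OF LO(2)] by (auto simp: osum_Field osum_mem)
  next
    fix x y z assume "(x, y) \<in> osum r s" "(y, z) \<in> osum r s"
    then show "(x, z) \<in> osum r s" using LO_trans[OF LO(1)] LO_trans[OF LO(2)]
      by (cases x; cases y; cases z) (auto simp: osum_mem intro: FieldI1' FieldI2')
  next
    fix x y assume "(x, y) \<in> osum r s" "(y, x) \<in> osum r s"
    then show "x = y" using LO_antisym[OF LO(1)] LO_antisym[OF LO(2)] by (cases x; cases y) (auto simp: osum_mem)
  next
    fix x y assume "x \<in> Field (osum r s)" "y \<in> Field (osum r s)"
    then show "(x, y) \<in> osum r s \<or> (y, x) \<in> osum r s" using LO_total'[OF LO(1)] LO_total'[OF LO(2)]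
      by (cases x; cases y) (auto simp: osum_Field osum_mem)
  qed
  let ?T = "map_prod Inl Inl ` (r - Id) \<union> map_prod Inr Inr ` (s - Id)"
  have wT: "wf ?T"
  proof (rule wf_Un)
    show "wf (map_prod Inl Inl ` (r - Id))" by (rule wf_map_prod_image[OF WO_wf[OF WO(1)]]) (simp add: inj_def)
    show "wf (map_prod Inr Inr ` (s - Id))" by (rule wf_map_prod_image[OF WO_wf[OF WO(2)]]) (simp add: inj_def)
    show "Domain (map_prod Inl Inl ` (r - Id)) \<inter> Range (map_prod Inr Inr ` (s - Id)) = {}" by auto
  qed
  have "osum r s - Id \<subseteq> inv_image (less_than <*lex*> ?T) (\<lambda>x. (case x of Inl _ \<Rightarrow> 0 | Inr _ \<Rightarrow> 1, x))"
  proof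
    fix p assume p: "p \<in> osum r s - Id"
    obtain u v where "p = (u, v)" by force
    then show "p \<in> inv_image (less_than <*lex*> ?T) (\<lambda>x. (case x of Inl _ \<Rightarrow> 0 | Inr _ \<Rightarrow> 1, x))"
      using p by (cases u; cases v) (auto simp: osum_mem)
  qed
  moreover have "wf (inv_image (less_than <*lex*> ?T) (\<lambda>x. (case x of Inl _ \<Rightarrow> 0 | Inr _ \<Rightarrow> 1, x)))"
    by (intro wf_inv_image wf_lex_prod wT wf_less_than)
  ultimately show "wf (osum r s - Id)" by (rule wf_subset[rotated])
qed

context
  fixes X :: "'a rel" and F L :: "'a set" and y :: 'a
  assumes LX: "Linear_order X" and FX: "F \<subseteq> Field X" and D: "dcl X F L" and yG: "y \<in> gapL X F L"
begin

lemma yprops: "y \<in> Field X" "y \<notin> F" "\<And>f. f \<in> F \<Longrightarrow> (f, y) \<in> X \<longleftrightarrow> f \<in> L" "L \<subseteq> F"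
  using yG D unfolding gapL_def dcl_def by auto

lemma not_le_iff: "z \<in> Field X \<Longrightarrow> z \<noteq> y \<Longrightarrow> (y, z) \<notin> X \<longleftrightarrow> (z, y) \<in> X"
  using LO_total[OF LX yprops(1), of z] LO_antisym[OF LX, of y z] by auto

lemma k1: "gapL X (insert y F) L = lowr X (gapL X F L) y"
proof -
  have "y \<notin> L" using yprops by auto
  then show ?thesis unfolding gapL_def lowr_def using not_le_iff by auto
qed

lemma k2: "gapL X (insert y F) (insert y L) = upr X (gapL X F L) y"
  using yprops unfolding gapL_def upr_def by auto

lemma k3a: "dcl X (insert y F) L"
  unfolding dcl_def
proof (intro conjI ballI impI)
  show "L \<subseteq> insert y F" using yprops by auto
  fix f g assume f: "f \<in> L" and g: "g \<in> insert y F" and gf: "(g, f) \<in> X"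
  show "g \<in> L"
  proof (cases "g = y")
    case True
    have "(f, y) \<in> X" using f yprops by auto
    then have "f = y" using gf True LO_antisym[OF LX] by blast
    then show ?thesis using f yprops by auto
  next
    case False then show ?thesis using D g gf f unfolding dcl_def by auto
  qed
qed

lemma k3b: "dcl X (insert y F) (insert y L)"
  unfolding dcl_def
proof (intro conjI ballI impI)
  show "insert y L \<subseteq> insert y F" using yprops by auto
  fix f g assume f: "f \<in> insert y L" and g: "g \<in> insert y F" and gf: "(g, f) \<in> X"
  show "g \<in> insert y L"
  proof (cases "g = y")
    case True then show ?thesis by simp
  next
    case False
    then have gF: "g \<in> F" using g by simp
    show ?thesis
    proof (cases "f = y")
      case True then show ?thesis using gf gF yprops by auto
    next
      case False then have "f \<in> L" using f by simp
      then show ?thesis using D gF gf unfolding dcl_def by auto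
    qed
  qed
qed

lemma k4: "dcl X (insert y F) L' \<Longrightarrow> dcl X F (L' - {y})"
  using yprops unfolding dcl_def by auto

lemma k5: "dcl X (insert y F) L' \<Longrightarrow> L' - {y} = L \<Longrightarrow> L' = L \<or> L' = insert y L"
  using yprops by auto

lemma k6:
  assumes D': "dcl X (insert y F) L'" and ne: "L' - {y} \<noteq> L"
  shows "gapL X F (L' - {y}) \<subseteq> gapL X (insert y F) L'"
proof
  fix z assume z: "z \<in> gapL X F (L' - {y})"
  then have zF: "z \<in> Field X" "z \<notin> F" and zL: "\<And>f. f \<in> F \<Longrightarrow> (f, z) \<in> X \<longleftrightarrow> f \<in> L' - {y}"
    unfolding gapL_def by auto
  have L'F: "L' \<subseteq> insert y F" and dc': "\<And>f g. f \<in> L' \<Longrightarrow> g \<in> insert y F \<Longrightarrow> (g, f) \<in> X \<Longrightarrow> g \<in> L'"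
    using D' unfolding dcl_def by auto
  have zy: "z \<noteq> y"
  proof
    assume "z = y"
    then have "\<And>f. f \<in> F \<Longrightarrow> f \<in> L' - {y} \<longleftrightarrow> f \<in> L" using zL yprops by auto
    then have "L' - {y} = L" using L'F yprops by auto
    then show False using ne by simp
  qed
  have "(y, z) \<in> X \<longleftrightarrow> y \<in> L'"
  proof (cases "y \<in> L'")
    case True
    have "L \<subseteq> L' - {y}"
    proof
      fix f assume f: "f \<in> L"
      then have "f \<in> F" "(f, y) \<in> X" using yprops by auto
      then have "f \<in> L'" using dc'[OF True] by auto
      then show "f \<in> L' - {y}" using \<open>f \<in> F\<close> yprops by auto
    qed
    then obtain g where g: "g \<in> L' - {y}" "g \<notin> L" using ne by blast
    then have gF: "g \<in> F" using L'F by auto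
    then have "(g, y) \<notin> X" using g yprops by auto
    then have "(y, g) \<in> X" using LO_total[OF LX yprops(1), of g] gF FX yprops(2) by auto
    moreover have "(g, z) \<in> X" using zL gF g by auto
    ultimately show ?thesis using True LO_trans[OF LX] by blast
  next
    case False
    have "L' - {y} \<subseteq> L"
    proof
      fix f assume f: "f \<in> L' - {y}"
      then have fF: "f \<in> F" using L'F by auto
      show "f \<in> L"
      proof (rule ccontr)
        assume "f \<notin> L"
        then have "(f, y) \<notin> X" using fF yprops by auto
        then have "(y, f) \<in> X" using LO_total[OF LX yprops(1), of f] fF FX yprops(2) by auto
        then have "y \<in> L'" using dc'[of f y] f by auto
        then show False using False by simp
      qed
    qed
    then obtain g where g: "g \<in> L" "g \<notin> L' - {y}" using ne by blast
    then have gF: "g \<in> F" using yprops by auto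
    then have "(g, y) \<in> X" using g yprops by auto
    moreover have "(g, z) \<notin> X" using zL gF g by auto
    ultimately have "(y, z) \<notin> X" using LO_trans[OF LX] by blast
    then show ?thesis using False by simp
  qed
  then show "z \<in> gapL X (insert y F) L'"
    using zF zy zL unfolding gapL_def by auto
qed

end

lemma gap_main:
  assumes WO: "Well_order r" and LX: "Linear_order X"
  shows "F \<subseteq> Field X \<Longrightarrow> rk_ge_aux X r a F = (\<forall>L. dcl X F L \<longrightarrow> spl X r a (gapL X F L))"
proof (induction a arbitrary: F rule: wf_induct_rule[OF WO_wf[OF WO]])
  case (1 a)
  show ?case
  proof (cases "\<exists>b. is_pred r b a")
    case True
    then obtain b where b: "is_pred r b a" by blast
    then have ba: "(b, a) \<in> r - Id" unfolding is_pred_def by auto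
    have IH: "rk_ge_aux X r b (insert x F) = (\<forall>L. dcl X (insert x F) L \<longrightarrow> spl X r b (gapL X (insert x F) L))"
      if "x \<in> Field X" for x
      using "1.IH"[OF ba, of "insert x F"] "1.prems" that by auto
    show ?thesis
    proof
      assume R: "rk_ge_aux X r a F"
      show "\<forall>L. dcl X F L \<longrightarrow> spl X r a (gapL X F L)"
      proof (intro allI impI)
        fix L assume D: "dcl X F L"
        have LF: "L \<subseteq> F" using D unfolding dcl_def by auto
        have pe: "prime_ext X F (BofL X F L)" by (rule BofL_pe[OF "1.prems" LX D])
        obtain x where x: "realizes X F (BofL X F L) x" "rk_ge_aux X r b (insert x F)"
          using R rk_succ[OF WO b, of X F] pe by blast
        have xg: "x \<in> gapL X F L" using realizes_iff[OF LX pe] x(1) BofL_LofB[OF LF] by simp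
        have xF: "x \<in> Field X" using x(1) unfolding realizes_def by simp
        have A: "\<forall>L'. dcl X (insert x F) L' \<longrightarrow> spl X r b (gapL X (insert x F) L')"
          using IH[OF xF] x(2) by simp
        have "spl X r b (lowr X (gapL X F L) x)"
          using A k3a[OF LX "1.prems" D xg] k1[OF LX "1.prems" D xg] by auto
        moreover have "spl X r b (upr X (gapL X F L) x)"
          using A k3b[OF LX "1.prems" D xg] k2[OF LX "1.prems" D xg] by auto
        ultimately show "spl X r a (gapL X F L)"
          using spl_succ[OF WO b, of X "gapL X F L"] xg by blast
      qed
    next
      assume S: "\<forall>L. dcl X F L \<longrightarrow> spl X r a (gapL X F L)"
      show "rk_ge_aux X r a F"
        unfolding rk_succ[OF WO b, of X F]
      proof (intro allI impI)
        fix B assume pe: "prime_ext X F B"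
        define L where "L = LofB F B"
        have D: "dcl X F L" unfolding L_def by (rule LofB_dcl[OF pe])
        obtain y where y: "y \<in> gapL X F L" "spl X r b (lowr X (gapL X F L) y)"
          "spl X r b (upr X (gapL X F L) y)"
          using S D spl_succ[OF WO b, of X "gapL X F L"] by blast
        have re: "realizes X F B y" using realizes_iff[OF LX pe] y(1) L_def by simp
        have yF: "y \<in> Field X" using y(1) unfolding gapL_def by simp
        have "\<forall>L'. dcl X (insert y F) L' \<longrightarrow> spl X r b (gapL X (insert y F) L')"
        proof (intro allI impI)
          fix L' assume D': "dcl X (insert y F) L'"
          show "spl X r b (gapL X (insert y F) L')"
          proof (cases "L' - {y} = L")
            case True
            then consider "L' = L" | "L' = insert y L" using k5[OF LX "1.prems" D y(1) D'] by blast
            then show ?thesis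
            proof cases
              case 1 then show ?thesis using k1[OF LX "1.prems" D y(1)] y(2) by simp
            next
              case 2 then show ?thesis using k2[OF LX "1.prems" D y(1)] y(3) by simp
            qed
          next
            case False
            have D'': "dcl X F (L' - {y})" using k4[OF LX "1.prems" D y(1) D'] .
            have "spl X r a (gapL X F (L' - {y}))" using S D'' by blast
            then have "spl X r b (gapL X F (L' - {y}))"
              using spl_down[OF WO] ba by blast
            then show ?thesis using spl_subset[OF WO] k6[OF LX "1.prems" D y(1) D' False] by blast
          qed
        qed
        then have "rk_ge_aux X r b (insert y F)" using IH[OF yF] by simp
        then show "\<exists>x. realizes X F B x \<and> rk_ge_aux X r b (insert x F)" using re by blast
      qed
    qed
  next
    case False
    have "rk_ge_aux X r a F = (\<forall>b. (b, a) \<in> r - Id \<longrightarrow> rk_ge_aux X r b F)"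
      by (rule rk_lim[OF WO False])
    also have "\<dots> = (\<forall>b. (b, a) \<in> r - Id \<longrightarrow> (\<forall>L. dcl X F L \<longrightarrow> spl X r b (gapL X F L)))"
      using "1.IH" "1.prems" by blast
    also have "\<dots> = (\<forall>L. dcl X F L \<longrightarrow> (\<forall>b. (b, a) \<in> r - Id \<longrightarrow> spl X r b (gapL X F L)))"
      by blast
    also have "\<dots> = (\<forall>L. dcl X F L \<longrightarrow> spl X r a (gapL X F L))"
      using spl_lim[OF WO False, of X] by simp
    finally show ?thesis .
  qed
qed

lemma gapL_empty: "gapL X {} {} = Field X" unfolding gapL_def by auto
lemma dcl_empty: "dcl X {} L \<longleftrightarrow> L = {}" unfolding dcl_def by auto

lemma rk_ge_spl:
  assumes "Well_order \<gamma>" "Linear_order X"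
  shows "rk_ge X {} \<gamma> = spl X (osucc \<gamma>) None (Field X)"
proof -
  have "rk_ge X {} \<gamma> = (\<forall>L. dcl X {} L \<longrightarrow> spl X (osucc \<gamma>) None (gapL X {} L))"
    unfolding rk_ge_def by (rule gap_main[OF osucc_WO[OF assms(1)] assms(2)]) simp
  also have "\<dots> = spl X (osucc \<gamma>) None (Field X)" by (simp add: dcl_empty gapL_empty)
  finally show ?thesis .
qed

definition mono_init :: "'b rel \<Rightarrow> 'c rel \<Rightarrow> ('b \<Rightarrow> 'c) \<Rightarrow> bool" where
  "mono_init r1 r2 f \<longleftrightarrow> (\<forall>x\<in>Field r1. f x \<in> Field r2) \<and> inj_on f (Field r1) \<and>
     (\<forall>x\<in>Field r1. \<forall>y\<in>Field r1. (x, y) \<in> r1 \<longleftrightarrow> (f x, f y) \<in> r2) \<and>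
     (\<forall>x\<in>Field r1. \<forall>z. (z, f x) \<in> r2 \<longrightarrow> z \<in> f ` Field r1)"

lemma spl_transfer:
  assumes WO1: "Well_order r1" and WO2: "Well_order r2" and M: "mono_init r1 r2 f"
  shows "a \<in> Field r1 \<Longrightarrow> spl X r1 a G = spl X r2 (f a) G"
proof (induction a arbitrary: G rule: wf_induct_rule[OF WO_wf[OF WO1]])
  case (1 a)
  have fF: "\<And>x. x \<in> Field r1 \<Longrightarrow> f x \<in> Field r2" and inj: "inj_on f (Field r1)"
    and ord: "\<And>x y. x \<in> Field r1 \<Longrightarrow> y \<in> Field r1 \<Longrightarrow> (x, y) \<in> r1 \<longleftrightarrow> (f x, f y) \<in> r2"
    and ini: "\<And>x z. x \<in> Field r1 \<Longrightarrow> (z, f x) \<in> r2 \<Longrightarrow> z \<in> f ` Field r1"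
    using M unfolding mono_init_def by auto
  have aF: "a \<in> Field r1" by fact
  have ne: "\<And>x y. x \<in> Field r1 \<Longrightarrow> y \<in> Field r1 \<Longrightarrow> x \<noteq> y \<longleftrightarrow> f x \<noteq> f y"
    using inj by (meson inj_onD)
  have below: "(b, a) \<in> r1 - Id \<longleftrightarrow> (f b, f a) \<in> r2 - Id" if "b \<in> Field r1" for b
    using ord[OF that aF] ne[OF that aF] by auto
  have below2: "\<exists>b. b \<in> Field r1 \<and> c = f b \<and> (b, a) \<in> r1 - Id" if "(c, f a) \<in> r2 - Id" for c
  proof -
    have "(c, f a) \<in> r2" using that by simp
    then obtain b where b: "b \<in> Field r1" "c = f b" using ini[OF aF, of c] by auto
    then show ?thesis using below[OF b(1)] that by auto
  qed
  have predI: "is_pred r2 (f b) (f a)" if b: "is_pred r1 b a" for b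
  proof -
    have bF: "b \<in> Field r1" using b unfolding is_pred_def by (auto intro: FieldI1')
    have 1: "(f b, f a) \<in> r2" "f b \<noteq> f a" using below[OF bF] b unfolding is_pred_def by auto
    have 2: False if c: "(f b, c) \<in> r2" "c \<noteq> f b" "(c, f a) \<in> r2" "c \<noteq> f a" for c
    proof -
      obtain d where d: "d \<in> Field r1" "c = f d" using ini[OF aF, of c] c(3) by auto
      have "(b, d) \<in> r1" "d \<noteq> b" "(d, a) \<in> r1" "d \<noteq> a"
        using ord[OF bF d(1)] ord[OF d(1) aF] ne[OF bF d(1)] ne[OF d(1) aF] c d(2) by auto
      then show False using b unfolding is_pred_def by blast
    qed
    show ?thesis unfolding is_pred_def using 1 2 by blast
  qed
  have predD: "\<exists>b. is_pred r1 b a" if c: "is_pred r2 c (f a)" for c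
  proof -
    have "(c, f a) \<in> r2 - Id" using c unfolding is_pred_def by auto
    then obtain b where b: "b \<in> Field r1" "c = f b" "(b, a) \<in> r1 - Id" using below2 by blast
    have "False" if d: "(b, d) \<in> r1" "d \<noteq> b" "(d, a) \<in> r1" "d \<noteq> a" for d
    proof -
      have dF: "d \<in> Field r1" using d(1) by (rule FieldI2')
      have "(f b, f d) \<in> r2" "f d \<noteq> f b" "(f d, f a) \<in> r2" "f d \<noteq> f a"
        using ord[OF b(1) dF] ord[OF dF aF] ne[OF b(1) dF] ne[OF dF aF] d by auto
      then show False using c b(2) unfolding is_pred_def by blast
    qed
    then have "is_pred r1 b a" unfolding is_pred_def using b(3) by blast
    then show ?thesis by blast
  qed
  show ?case
  proof (cases "\<exists>b. is_pred r1 b a")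
    case True
    then obtain b where b: "is_pred r1 b a" by blast
    have bF: "b \<in> Field r1" using b unfolding is_pred_def by (auto intro: FieldI1')
    have ba: "(b, a) \<in> r1 - Id" using b unfolding is_pred_def by auto
    have IH: "\<And>G. spl X r1 b G = spl X r2 (f b) G" using "1.IH"[OF ba bF] .
    show ?thesis unfolding spl_succ[OF WO1 b, of X G] spl_succ[OF WO2 predI[OF b], of X G] IH ..
  next
    case False
    then have F2: "\<not> (\<exists>c. is_pred r2 c (f a))" using predD by blast
    have "spl X r1 a G = (\<forall>b. (b, a) \<in> r1 - Id \<longrightarrow> spl X r1 b G)" by (rule spl_lim[OF WO1 False])
    also have "\<dots> = (\<forall>c. (c, f a) \<in> r2 - Id \<longrightarrow> spl X r2 c G)"
    proof
      assume H: "\<forall>b. (b, a) \<in> r1 - Id \<longrightarrow> spl X r1 b G"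
      show "\<forall>c. (c, f a) \<in> r2 - Id \<longrightarrow> spl X r2 c G"
      proof (intro allI impI)
        fix c assume "(c, f a) \<in> r2 - Id"
        then obtain b where b: "b \<in> Field r1" "c = f b" "(b, a) \<in> r1 - Id" using below2 by blast
        have "spl X r1 b G" using H b(3) by blast
        then show "spl X r2 c G" using "1.IH"[OF b(3) b(1)] b(2) by simp
      qed
    next
      assume H: "\<forall>c. (c, f a) \<in> r2 - Id \<longrightarrow> spl X r2 c G"
      show "\<forall>b. (b, a) \<in> r1 - Id \<longrightarrow> spl X r1 b G"
      proof (intro allI impI)
        fix b assume ba: "(b, a) \<in> r1 - Id"
        then have bF: "b \<in> Field r1" by (auto intro: FieldI1')
        then show "spl X r1 b G" using H "1.IH"[OF ba bF] below[OF bF] ba by simp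
      qed
    qed
    also have "\<dots> = spl X r2 (f a) G" by (rule spl_lim[OF WO2 F2, symmetric])
    finally show ?thesis .
  qed
qed

lemma inflation:
  assumes WO: "Well_order W" and DF: "D \<subseteq> Field W" and gD: "\<And>x. x \<in> D \<Longrightarrow> g x \<in> D"
    and mono: "\<And>x y. x \<in> D \<Longrightarrow> y \<in> D \<Longrightarrow> (x, y) \<in> W \<Longrightarrow> x \<noteq> y \<Longrightarrow> (g x, g y) \<in> W \<and> g x \<noteq> g y"
  shows "x \<in> D \<Longrightarrow> (x, g x) \<in> W"
proof (rule ccontr)
  assume xD: "x \<in> D" and nx: "(x, g x) \<notin> W"
  let ?Q = "{x \<in> D. (x, g x) \<notin> W}"
  have xQ: "x \<in> ?Q" using xD nx by simp
  obtain m where m: "m \<in> ?Q" and mmin: "\<forall>y. (y, m) \<in> W - Id \<longrightarrow> y \<notin> ?Q"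
    using wf_eq_minimal[THEN iffD1, OF WO_wf[OF WO], rule_format, OF xQ] by blast
  have mD: "m \<in> D" and nm: "(m, g m) \<notin> W" using m by auto
  have gmD: "g m \<in> D" using gD[OF mD] .
  have LO: "Linear_order W" using WO_lin[OF WO] .
  have mF: "m \<in> Field W" "g m \<in> Field W" using DF mD gmD by auto
  have gmm1: "(g m, m) \<in> W" using LO_total'[OF LO mF] nm by blast
  have gmm2: "g m \<noteq> m" using nm LO_refl[OF LO mF(1)] by auto
  note gmm = gmm1 gmm2
  have "(g m, m) \<in> W - Id" using gmm by simp
  then have "g m \<notin> ?Q" using mmin by blast
  then have 1: "(g m, g (g m)) \<in> W" using gmD by auto
  have "(g (g m), g m) \<in> W" "g (g m) \<noteq> g m" using mono[OF gmD mD gmm] by auto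
  then show False using 1 LO_antisym[OF LO] by blast
qed

lemma mono_ordLeq:
  assumes WO: "Well_order r" and WO': "Well_order r'"
    and fF: "\<And>x. x \<in> Field r \<Longrightarrow> f x \<in> Field r'"
    and mono: "\<And>x y. x \<in> Field r \<Longrightarrow> y \<in> Field r \<Longrightarrow> (x, y) \<in> r \<Longrightarrow> x \<noteq> y \<Longrightarrow> (f x, f y) \<in> r' \<and> f x \<noteq> f y"
  shows "(r, r') \<in> ordLeq"
proof (rule ccontr)
  assume "(r, r') \<notin> ordLeq"
  then have "(r', r) \<in> ordLess" using not_ordLeq_iff_ordLess[OF WO' WO] by blast
  then obtain a where aF: "a \<in> Field r" and iso: "(r', Restr r (underS r a)) \<in> ordIso"
    using ordLess_iff_ordIso_Restr[OF WO WO'] by blast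
  then obtain g where g: "iso r' (Restr r (underS r a)) g" unfolding ordIso_def by blast
  have LO: "Linear_order r" using WO_lin[OF WO] .
  have LO': "Linear_order r'" using WO_lin[OF WO'] .
  have US: "underS r a \<subseteq> Field r" unfolding underS_def by (auto intro: FieldI1')
  have FR: "Field (Restr r (underS r a)) = underS r a"
    by (rule Refl_Field_Restr2[OF _ US]) (use LO in \<open>simp add: linear_order_on_def partial_order_on_def preorder_on_def\<close>)
  have gF: "g ` Field r' = underS r a" using iso_Field[OF g] FR by simp
  have gc: "compat r' (Restr r (underS r a)) g" using g unfolding iso_def by (auto intro: embed_compat)
  have gi: "inj_on g (Field r')" using g unfolding iso_def bij_betw_def by auto
  let ?h = "\<lambda>x. g (f x)"
  have hD: "?h x \<in> Field r" if "x \<in> Field r" for x using gF fF[OF that] US by auto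
  have hmono: "(?h x, ?h y) \<in> r \<and> ?h x \<noteq> ?h y" if "x \<in> Field r" "y \<in> Field r" "(x, y) \<in> r" "x \<noteq> y" for x y
  proof -
    have 1: "(f x, f y) \<in> r'" "f x \<noteq> f y" using mono[OF that] by auto
    have "(g (f x), g (f y)) \<in> Restr r (underS r a)" using gc 1(1) unfolding compat_def by blast
    moreover have "g (f x) \<noteq> g (f y)" using gi 1(2) fF that(1,2) by (meson inj_onD)
    ultimately show ?thesis by auto
  qed
  have "(a, ?h a) \<in> r" using inflation[OF WO subset_refl hD hmono aF] .
  moreover have "?h a \<in> underS r a" using gF fF[OF aF] by auto
  ultimately show False unfolding underS_def using LO_antisym[OF LO] by auto
qed

lemma embed_facts:
  assumes WO: "Well_order r" and WO': "Well_order r'" and e: "embed r r' e"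
  shows "\<And>x. x \<in> Field r \<Longrightarrow> e x \<in> Field r'"
    and "\<And>x z. x \<in> Field r \<Longrightarrow> (z, e x) \<in> r' \<Longrightarrow> z \<in> e ` Field r"
    and "inj_on e (Field r)"
    and "\<And>x y. x \<in> Field r \<Longrightarrow> y \<in> Field r \<Longrightarrow> (x, y) \<in> r \<longleftrightarrow> (e x, e y) \<in> r'"
proof -
  show F: "\<And>x. x \<in> Field r \<Longrightarrow> e x \<in> Field r'" using embed_Field[OF e] by auto
  show "\<And>x z. x \<in> Field r \<Longrightarrow> (z, e x) \<in> r' \<Longrightarrow> z \<in> e ` Field r"
  proof -
    fix x z assume x: "x \<in> Field r" and z: "(z, e x) \<in> r'"
    have "bij_betw e (under r x) (under r' (e x))" using e x unfolding embed_def by blast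
    then have "under r' (e x) = e ` under r x" by (simp add: bij_betw_def)
    moreover have "z \<in> under r' (e x)" using z by (simp add: under_def)
    moreover have "under r x \<subseteq> Field r" unfolding under_def by (auto intro: FieldI1')
    ultimately show "z \<in> e ` Field r" by blast
  qed
  show I: "inj_on e (Field r)" by (rule embed_inj_on[OF WO e])
  show "\<And>x y. x \<in> Field r \<Longrightarrow> y \<in> Field r \<Longrightarrow> (x, y) \<in> r \<longleftrightarrow> (e x, e y) \<in> r'"
  proof -
    fix x y assume x: "x \<in> Field r" and y: "y \<in> Field r"
    have c: "\<And>a b. (a, b) \<in> r \<Longrightarrow> (e a, e b) \<in> r'" using embed_compat[OF e] unfolding compat_def by blast
    show "(x, y) \<in> r \<longleftrightarrow> (e x, e y) \<in> r'"
    proof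
      assume "(x, y) \<in> r" then show "(e x, e y) \<in> r'" by (rule c)
    next
      assume xy: "(e x, e y) \<in> r'"
      show "(x, y) \<in> r"
      proof (rule ccontr)
        assume "(x, y) \<notin> r"
        then have "(y, x) \<in> r" "x \<noteq> y" using LO_total'[OF WO_lin[OF WO] x y] LO_refl[OF WO_lin[OF WO] x] by auto
        then have "(e y, e x) \<in> r'" "e x \<noteq> e y" using c I x y by (auto dest: inj_onD)
        then show False using xy LO_antisym[OF WO_lin[OF WO']] by blast
      qed
    qed
  qed
qed

lemma least_outside:
  assumes WO': "Well_order r'" and ne: "A \<subseteq> Field r'" "A \<noteq> Field r'"
  obtains m where "m \<in> Field r'" "m \<notin> A" "\<And>y. (y, m) \<in> r' \<Longrightarrow> y \<noteq> m \<Longrightarrow> y \<in> A"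
proof -
  obtain x where xQ: "x \<in> Field r' - A" using ne by blast
  obtain m where m: "m \<in> Field r' - A" and mmin: "\<forall>y. (y, m) \<in> r' - Id \<longrightarrow> y \<notin> Field r' - A"
    using wf_eq_minimal[THEN iffD1, OF WO_wf[OF WO'], rule_format, OF xQ] by blast
  have "\<And>y. (y, m) \<in> r' \<Longrightarrow> y \<noteq> m \<Longrightarrow> y \<in> A"
  proof -
    fix y assume "(y, m) \<in> r'" "y \<noteq> m"
    moreover then have "y \<in> Field r'" by (auto intro: FieldI1')
    ultimately show "y \<in> A" using mmin by blast
  qed
  then show ?thesis using that m by blast
qed

lemma ordLess_osucc:
  assumes WO: "Well_order r" and WO': "Well_order r'" and L: "(r, r') \<in> ordLess"
  shows "(osucc r, r') \<in> ordLeq"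
proof -
  obtain e where e: "embed r r' e" and nb: "\<not> bij_betw e (Field r) (Field r')"
    using L unfolding ordLess_def embedS_def by blast
  note ef = embed_facts[OF WO WO' e]
  have sub: "e ` Field r \<subseteq> Field r'" using ef(1) by blast
  have neq: "e ` Field r \<noteq> Field r'" using nb ef(3) unfolding bij_betw_def by blast
  obtain m where m: "m \<in> Field r'" "m \<notin> e ` Field r" and mmin: "\<And>y. (y, m) \<in> r' \<Longrightarrow> y \<noteq> m \<Longrightarrow> y \<in> e ` Field r"
    using least_outside[OF WO' sub neq] by blast
  have LO': "Linear_order r'" using WO_lin[OF WO'] .
  have em: "(e x, m) \<in> r' \<and> e x \<noteq> m" if x: "x \<in> Field r" for x
  proof -
    have ne: "e x \<noteq> m" using m x by auto
    have "(m, e x) \<notin> r'" using ef(2)[OF x, of m] m by auto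
    then show ?thesis using LO_total'[OF LO' ef(1)[OF x] m(1)] ne by auto
  qed
  let ?h = "\<lambda>u. case u of None \<Rightarrow> m | Some x \<Rightarrow> e x"
  show ?thesis
  proof (rule mono_ordLeq[OF osucc_WO[OF WO] WO', of ?h])
    fix u assume "u \<in> Field (osucc r)"
    then show "?h u \<in> Field r'" using m ef(1) by (auto simp: osucc_Field)
  next
    fix u v assume u: "u \<in> Field (osucc r)" and v: "v \<in> Field (osucc r)" and uv: "(u, v) \<in> osucc r" and ne: "u \<noteq> v"
    show "(?h u, ?h v) \<in> r' \<and> ?h u \<noteq> ?h v"
    proof (cases u)
      case None
      then have "v = None" using uv by (cases v) (auto simp: osucc_mem)
      then show ?thesis using None ne by simp
    next
      case (Some x)
      then have x: "x \<in> Field r" using u by (auto simp: osucc_Field)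
      show ?thesis
      proof (cases v)
        case None then show ?thesis using Some em[OF x] by simp
      next
        case (Some y)
        then have y: "y \<in> Field r" using v by (auto simp: osucc_Field)
        have "(x, y) \<in> r" "x \<noteq> y" using uv ne Some \<open>u = Some x\<close> by (auto simp: osucc_mem)
        then show ?thesis using ef(4)[OF x y] ef(3) x y Some \<open>u = Some x\<close> by (auto dest: inj_onD)
      qed
    qed
  qed
qed

lemma ordLeq_osucc_map:
  assumes WO: "Well_order r" and WO': "Well_order r'" and L: "(r, r') \<in> ordLeq"
  shows "\<exists>H. mono_init (osucc r) (osucc r') H"
proof -
  obtain e where e: "embed r r' e" using L unfolding ordLeq_def by blast
  note ef = embed_facts[OF WO WO' e]
  have sub: "e ` Field r \<subseteq> Field r'" using ef(1) by blast
  have LO': "Linear_order r'" using WO_lin[OF WO'] .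
  show ?thesis
  proof (cases "e ` Field r = Field r'")
    case True
    let ?H = "map_option e"
    have "mono_init (osucc r) (osucc r') ?H"
      unfolding mono_init_def
    proof (intro conjI ballI allI impI)
      fix x assume "x \<in> Field (osucc r)"
      then show "?H x \<in> Field (osucc r')" using ef(1) by (auto simp: osucc_Field)
    next
      show "inj_on ?H (Field (osucc r))"
        using ef(3) unfolding inj_on_def by (auto simp: osucc_Field)
    next
      fix x y assume x: "x \<in> Field (osucc r)" and y: "y \<in> Field (osucc r)"
      show "(x, y) \<in> osucc r \<longleftrightarrow> (?H x, ?H y) \<in> osucc r'"
        using x y ef(1,4) by (cases x; cases y) (auto simp: osucc_mem osucc_Field)
    next
      fix x z assume x: "x \<in> Field (osucc r)" and z: "(z, ?H x) \<in> osucc r'"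
      show "z \<in> ?H ` Field (osucc r)"
      proof (cases z)
        case None
        then have "x = None" using z by (cases x) (auto simp: osucc_mem)
        then show ?thesis using None by (auto simp: osucc_Field)
      next
        case (Some w)
        then have "w \<in> Field r'" using z by (cases x) (auto simp: osucc_mem intro: FieldI1')
        then obtain v where v: "v \<in> Field r" "w = e v" using True by blast
        have "Some v \<in> Field (osucc r)" using v by (simp add: osucc_Field)
        moreover have "z = map_option e (Some v)" using v Some by simp
        ultimately show ?thesis by (rule rev_image_eqI)
      qed
    qed
    then show ?thesis by blast
  next
    case False
    obtain m where m: "m \<in> Field r'" "m \<notin> e ` Field r" and mmin: "\<And>y. (y, m) \<in> r' \<Longrightarrow> y \<noteq> m \<Longrightarrow> y \<in> e ` Field r"
      using least_outside[OF WO' sub False] by blast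
    have em: "(e x, m) \<in> r' \<and> (m, e x) \<notin> r'" if x: "x \<in> Field r" for x
    proof -
      have ne: "e x \<noteq> m" using m x by auto
      have "(m, e x) \<notin> r'" using ef(2)[OF x, of m] m by auto
      then show ?thesis using LO_total'[OF LO' ef(1)[OF x] m(1)] ne by auto
    qed
    let ?H = "\<lambda>u. case u of None \<Rightarrow> Some m | Some x \<Rightarrow> Some (e x)"
    have "mono_init (osucc r) (osucc r') ?H"
      unfolding mono_init_def
    proof (intro conjI ballI allI impI)
      fix x assume "x \<in> Field (osucc r)"
      then show "?H x \<in> Field (osucc r')" using ef(1) m by (auto simp: osucc_Field)
    next
      show "inj_on ?H (Field (osucc r))"
        using ef(3) m unfolding inj_on_def by (auto simp: osucc_Field split: option.splits)
    next
      fix x y assume x: "x \<in> Field (osucc r)" and y: "y \<in> Field (osucc r)"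
      show "(x, y) \<in> osucc r \<longleftrightarrow> (?H x, ?H y) \<in> osucc r'"
        using x y ef(1,4) em m(1) LO_refl[OF LO' m(1)] by (cases x; cases y) (auto simp: osucc_mem osucc_Field)
    next
      fix x z assume x: "x \<in> Field (osucc r)" and z: "(z, ?H x) \<in> osucc r'"
      show "z \<in> ?H ` Field (osucc r)"
      proof (cases z)
        case None
        then show ?thesis using z by (cases x) (auto simp: osucc_mem)
      next
        case (Some w)
        show ?thesis
        proof (cases x)
          case None
          then have wm: "(w, m) \<in> r'" using z Some by (simp add: osucc_mem)
          show ?thesis
          proof (cases "w = m")
            case True then show ?thesis using Some by (auto simp: osucc_Field intro!: image_eqI[of _ _ None])
          next
            case False
            then obtain v where v: "v \<in> Field r" "w = e v" using mmin[OF wm] by blast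
            have "Some v \<in> Field (osucc r)" using v by (simp add: osucc_Field)
            moreover have "z = ?H (Some v)" using v Some by simp
            ultimately show ?thesis by (rule rev_image_eqI)
          qed
        next
          case (Some x')
          then have x': "x' \<in> Field r" using x by (auto simp: osucc_Field)
          have "(w, e x') \<in> r'" using z Some \<open>z = Some w\<close> by (simp add: osucc_mem)
          then obtain v where v: "v \<in> Field r" "w = e v" using ef(2)[OF x'] by blast
          have "Some v \<in> Field (osucc r)" using v by (simp add: osucc_Field)
          moreover have "z = ?H (Some v)" using v \<open>z = Some w\<close> by simp
          ultimately show ?thesis by (rule rev_image_eqI)
        qed
      qed
    qed
    then show ?thesis by blast
  qed
qed

lemma fs_zero: "(\<lambda>_. 0) \<in> fin_supp \<beta>" unfolding fin_supp_def by simp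

lemma fs_supp: "f \<in> fin_supp \<beta> \<Longrightarrow> f x \<noteq> 0 \<Longrightarrow> x \<in> Field \<beta>"
  unfolding fin_supp_def by auto

lemma fs_finite: "f \<in> fin_supp \<beta> \<Longrightarrow> finite {x. f x \<noteq> 0}"
  unfolding fin_supp_def by auto

lemma fs_I: "finite {x. f x \<noteq> 0} \<Longrightarrow> (\<And>x. f x \<noteq> 0 \<Longrightarrow> x \<in> Field \<beta>) \<Longrightarrow> f \<in> fin_supp \<beta>"
  unfolding fin_supp_def by auto

lemma E_mem: "(f, g) \<in> oexp_omega \<beta> \<longleftrightarrow> f \<in> fin_supp \<beta> \<and> g \<in> fin_supp \<beta> \<and>
   (f = g \<or> (\<exists>x\<in>Field \<beta>. f x < g x \<and> (\<forall>y\<in>Field \<beta>. (x, y) \<in> \<beta> \<and> y \<noteq> x \<longrightarrow> f y = g y)))"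
  unfolding oexp_omega_def by simp

lemma E_Field: "Field (oexp_omega \<beta>) = fin_supp \<beta>"
proof
  show "Field (oexp_omega \<beta>) \<subseteq> fin_supp \<beta>" unfolding Field_def oexp_omega_def by auto
  show "fin_supp \<beta> \<subseteq> Field (oexp_omega \<beta>)"
  proof
    fix f assume "f \<in> fin_supp \<beta>"
    then have "(f, f) \<in> oexp_omega \<beta>" by (simp add: E_mem)
    then show "f \<in> Field (oexp_omega \<beta>)" by (rule FieldI1')
  qed
qed

lemma finite_max:
  assumes LO: "Linear_order \<beta>"
  shows "finite S \<Longrightarrow> S \<noteq> {} \<Longrightarrow> S \<subseteq> Field \<beta> \<Longrightarrow> \<exists>x\<in>S. \<forall>y\<in>S. (y, x) \<in> \<beta>"
proof (induction S rule: finite_ne_induct)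
  case (singleton x)
  then show ?case using LO_refl[OF LO] by auto
next
  case (insert x S)
  then obtain m where m: "m \<in> S" "\<forall>y\<in>S. (y, m) \<in> \<beta>" by auto
  have xF: "x \<in> Field \<beta>" and mF: "m \<in> Field \<beta>" using insert.prems m(1) by auto
  show ?case
  proof (cases "(x, m) \<in> \<beta>")
    case True then show ?thesis using m by auto
  next
    case False
    then have "(m, x) \<in> \<beta>" using LO_total'[OF LO xF mF] by auto
    then have "\<forall>y\<in>insert x S. (y, x) \<in> \<beta>" using m LO_trans[OF LO] LO_refl[OF LO xF] by blast
    then show ?thesis by blast
  qed
qed

context
  fixes \<beta> :: "'b rel"
  assumes LOb: "Linear_order \<beta>"
begin

lemma diff_max:
  assumes f: "f \<in> fin_supp \<beta>" and g: "g \<in> fin_supp \<beta>" and ne: "f \<noteq> g"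
  shows "\<exists>x\<in>Field \<beta>. f x \<noteq> g x \<and> (\<forall>y\<in>Field \<beta>. (x, y) \<in> \<beta> \<and> y \<noteq> x \<longrightarrow> f y = g y)"
proof -
  let ?D = "{x. f x \<noteq> g x}"
  have "?D \<subseteq> {x. f x \<noteq> 0} \<union> {x. g x \<noteq> 0}" by auto
  then have fin: "finite ?D" using fs_finite[OF f] fs_finite[OF g] by (meson finite_UnI finite_subset)
  have nem: "?D \<noteq> {}" using ne by auto
  have sub: "?D \<subseteq> Field \<beta>" using fs_supp[OF f] fs_supp[OF g] by force
  obtain x where x: "x \<in> ?D" "\<forall>y\<in>?D. (y, x) \<in> \<beta>" using finite_max[OF LOb fin nem sub] by blast
  have "\<forall>y\<in>Field \<beta>. (x, y) \<in> \<beta> \<and> y \<noteq> x \<longrightarrow> f y = g y"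
  proof (intro ballI impI)
    fix y assume "y \<in> Field \<beta>" "(x, y) \<in> \<beta> \<and> y \<noteq> x"
    then show "f y = g y" using x(2) LO_antisym[OF LOb, of x y] by auto
  qed
  then show ?thesis using x(1) sub by auto
qed

lemma supp_max:
  assumes f: "f \<in> fin_supp \<beta>" and ne: "f \<noteq> (\<lambda>_. 0)"
  shows "\<exists>x\<in>Field \<beta>. f x \<noteq> 0 \<and> (\<forall>y. (x, y) \<in> \<beta> \<and> y \<noteq> x \<longrightarrow> f y = 0)"
proof -
  obtain x where x: "x \<in> Field \<beta>" "f x \<noteq> 0" "\<forall>y\<in>Field \<beta>. (x, y) \<in> \<beta> \<and> y \<noteq> x \<longrightarrow> f y = 0"
    using diff_max[OF f fs_zero ne] by auto
  have "\<forall>y. (x, y) \<in> \<beta> \<and> y \<noteq> x \<longrightarrow> f y = 0" using x(3) by (auto intro: FieldI2')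
  then show ?thesis using x by blast
qed

lemma E_total: "f \<in> fin_supp \<beta> \<Longrightarrow> g \<in> fin_supp \<beta> \<Longrightarrow> (f, g) \<in> oexp_omega \<beta> \<or> (g, f) \<in> oexp_omega \<beta>"
proof -
  assume f: "f \<in> fin_supp \<beta>" and g: "g \<in> fin_supp \<beta>"
  show ?thesis
  proof (cases "f = g")
    case True then show ?thesis using f by (simp add: E_mem)
  next
    case False
    obtain x where x: "x \<in> Field \<beta>" "f x \<noteq> g x" "\<forall>y\<in>Field \<beta>. (x, y) \<in> \<beta> \<and> y \<noteq> x \<longrightarrow> f y = g y"
      using diff_max[OF f g False] by blast
    show ?thesis
    proof (cases "f x < g x")
      case True then show ?thesis using x f g unfolding E_mem by blast
    next
      case False
      then have "g x < f x" using x(2) by simp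
      then have "\<exists>x\<in>Field \<beta>. g x < f x \<and> (\<forall>y\<in>Field \<beta>. (x, y) \<in> \<beta> \<and> y \<noteq> x \<longrightarrow> g y = f y)"
        using x by (intro bexI[of _ x]) auto
      then show ?thesis using f g unfolding E_mem by blast
    qed
  qed
qed

lemma E_antisym: "(f, g) \<in> oexp_omega \<beta> \<Longrightarrow> (g, f) \<in> oexp_omega \<beta> \<Longrightarrow> f = g"
proof (rule ccontr)
  assume fg: "(f, g) \<in> oexp_omega \<beta>" and gf: "(g, f) \<in> oexp_omega \<beta>" and ne: "f \<noteq> g"
  obtain x where x: "x \<in> Field \<beta>" "f x < g x" "\<forall>y\<in>Field \<beta>. (x, y) \<in> \<beta> \<and> y \<noteq> x \<longrightarrow> f y = g y"
    using fg ne unfolding E_mem by blast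
  obtain z where z: "z \<in> Field \<beta>" "g z < f z" "\<forall>y\<in>Field \<beta>. (z, y) \<in> \<beta> \<and> y \<noteq> z \<longrightarrow> g y = f y"
    using gf ne unfolding E_mem by metis
  show False
  proof (cases "x = z")
    case True then show ?thesis using x z by auto
  next
    case False
    then have "(x, z) \<in> \<beta> \<or> (z, x) \<in> \<beta>" using LO_total[OF LOb x(1) z(1)] by blast
    then show ?thesis
    proof
      assume "(x, z) \<in> \<beta>" then have "f z = g z" using x(3) z(1) False by auto
      then show False using z(2) by simp
    next
      assume "(z, x) \<in> \<beta>" then have "g x = f x" using z(3) x(1) False by auto
      then show False using x(2) by simp
    qed
  qed
qed

lemma E_trans: "(f, g) \<in> oexp_omega \<beta> \<Longrightarrow> (g, h) \<in> oexp_omega \<beta> \<Longrightarrow> (f, h) \<in> oexp_omega \<beta>"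
proof -
  assume fg: "(f, g) \<in> oexp_omega \<beta>" and gh: "(g, h) \<in> oexp_omega \<beta>"
  have fs: "f \<in> fin_supp \<beta>" "h \<in> fin_supp \<beta>" using fg gh unfolding E_mem by auto
  show ?thesis
  proof (cases "f = g \<or> g = h")
    case True then show ?thesis using fg gh by auto
  next
    case False
    obtain x where x: "x \<in> Field \<beta>" "f x < g x" "\<forall>y\<in>Field \<beta>. (x, y) \<in> \<beta> \<and> y \<noteq> x \<longrightarrow> f y = g y"
      using fg False unfolding E_mem by blast
    obtain z where z: "z \<in> Field \<beta>" "g z < h z" "\<forall>y\<in>Field \<beta>. (z, y) \<in> \<beta> \<and> y \<noteq> z \<longrightarrow> g y = h y"
      using gh False unfolding E_mem by blast
    have "\<exists>w\<in>Field \<beta>. f w < h w \<and> (\<forall>y\<in>Field \<beta>. (w, y) \<in> \<beta> \<and> y \<noteq> w \<longrightarrow> f y = h y)"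
    proof (cases "x = z")
      case True then show ?thesis using x z by (intro bexI[of _ x]) auto
    next
      case ne: False
      then have "(x, z) \<in> \<beta> \<or> (z, x) \<in> \<beta>" using LO_total[OF LOb x(1) z(1)] by blast
      then show ?thesis
      proof
        assume xz: "(x, z) \<in> \<beta>"
        have "f z = g z" using x(3) z(1) xz ne by auto
        moreover have "\<forall>y\<in>Field \<beta>. (z, y) \<in> \<beta> \<and> y \<noteq> z \<longrightarrow> f y = h y"
        proof (intro ballI impI)
          fix y assume y: "y \<in> Field \<beta>" "(z, y) \<in> \<beta> \<and> y \<noteq> z"
          then have "(x, y) \<in> \<beta>" using xz LO_trans[OF LOb] by blast
          moreover have "y \<noteq> x" using y xz ne LO_antisym[OF LOb] by blast
          ultimately show "f y = h y" using x(3) z(3) y by auto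
        qed
        ultimately show ?thesis using z by (intro bexI[of _ z]) auto
      next
        assume zx: "(z, x) \<in> \<beta>"
        have "g x = h x" using z(3) x(1) zx ne by auto
        moreover have "\<forall>y\<in>Field \<beta>. (x, y) \<in> \<beta> \<and> y \<noteq> x \<longrightarrow> f y = h y"
        proof (intro ballI impI)
          fix y assume y: "y \<in> Field \<beta>" "(x, y) \<in> \<beta> \<and> y \<noteq> x"
          then have "(z, y) \<in> \<beta>" using zx LO_trans[OF LOb] by blast
          moreover have "y \<noteq> z" using y zx ne LO_antisym[OF LOb] by blast
          ultimately show "f y = h y" using x(3) z(3) y by auto
        qed
        ultimately show ?thesis using x by (intro bexI[of _ x]) auto
      qed
    qed
    then show ?thesis using fs unfolding E_mem by blast
  qed
qed

lemma E_LO: "Linear_order (oexp_omega \<beta>)"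
proof (rule LO_intro)
  show "\<And>x. x \<in> Field (oexp_omega \<beta>) \<Longrightarrow> (x, x) \<in> oexp_omega \<beta>" by (simp add: E_Field E_mem)
  show "\<And>x y z. (x, y) \<in> oexp_omega \<beta> \<Longrightarrow> (y, z) \<in> oexp_omega \<beta> \<Longrightarrow> (x, z) \<in> oexp_omega \<beta>" by (rule E_trans)
  show "\<And>x y. (x, y) \<in> oexp_omega \<beta> \<Longrightarrow> (y, x) \<in> oexp_omega \<beta> \<Longrightarrow> x = y" by (rule E_antisym)
  show "\<And>x y. x \<in> Field (oexp_omega \<beta>) \<Longrightarrow> y \<in> Field (oexp_omega \<beta>) \<Longrightarrow> (x, y) \<in> oexp_omega \<beta> \<or> (y, x) \<in> oexp_omega \<beta>"
    by (simp add: E_Field E_total)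
qed

lemma zero_least: "f \<in> fin_supp \<beta> \<Longrightarrow> ((\<lambda>_. 0), f) \<in> oexp_omega \<beta>"
proof -
  assume f: "f \<in> fin_supp \<beta>"
  show ?thesis
  proof (cases "f = (\<lambda>_. 0)")
    case True then show ?thesis using f by (simp add: E_mem)
  next
    case False
    obtain x where "x \<in> Field \<beta>" "f x \<noteq> 0" "\<forall>y. (x, y) \<in> \<beta> \<and> y \<noteq> x \<longrightarrow> f y = 0"
      using supp_max[OF f False] by blast
    then show ?thesis using f fs_zero unfolding E_mem by force
  qed
qed

lemma below_zero: "(f, (\<lambda>_. 0)) \<in> oexp_omega \<beta> \<Longrightarrow> f = (\<lambda>_. 0)"
proof -
  assume a: "(f, (\<lambda>_. 0)) \<in> oexp_omega \<beta>"
  then have "f \<in> fin_supp \<beta>" by (simp add: E_mem)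
  then have "((\<lambda>_. 0), f) \<in> oexp_omega \<beta>" by (rule zero_least)
  then show ?thesis using E_antisym a by blast
qed

end

definition supp_below :: "'b rel \<Rightarrow> 'b option \<Rightarrow> ('b \<Rightarrow> nat) \<Rightarrow> bool" where
  "supp_below \<beta> b f \<longleftrightarrow> (\<forall>x. f x \<noteq> 0 \<longrightarrow> (Some x, b) \<in> osucc \<beta> \<and> Some x \<noteq> b)"

definition Pset :: "'b rel \<Rightarrow> 'b option \<Rightarrow> nat \<Rightarrow> (('b \<Rightarrow> nat) \<times> nat) set" where
  "Pset \<beta> b k = {p. fst p \<in> fin_supp \<beta> \<and> supp_below \<beta> b (fst p) \<and> snd p < 2 ^ k \<and> p \<noteq> ((\<lambda>_. 0), 0)}"

abbreviation UU :: "'b rel \<Rightarrow> (('b \<Rightarrow> nat) \<times> nat) rel" where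
  "UU \<beta> \<equiv> oprod (oexp_omega \<beta>) natLeq"

abbreviation RR :: "'b rel \<Rightarrow> (nat \<times> 'b option) rel" where
  "RR \<beta> \<equiv> oprod natLeq (osucc \<beta>)"

lemma natLeq_mem: "(x, y) \<in> natLeq \<longleftrightarrow> x \<le> y" by (simp add: natLeq_def)

lemma U_mem: "((f, m), (f', m')) \<in> UU \<beta> \<longleftrightarrow> f \<in> fin_supp \<beta> \<and> f' \<in> fin_supp \<beta> \<and>
   (m < m' \<or> (m = m' \<and> (f, f') \<in> oexp_omega \<beta>))"
  by (auto simp: oprod_mem E_Field natLeq_mem Field_natLeq)

lemma R_mem: "((n, b), (n', b')) \<in> RR \<beta> \<longleftrightarrow> b \<in> Field (osucc \<beta>) \<and> b' \<in> Field (osucc \<beta>) \<and>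
   (((b, b') \<in> osucc \<beta> \<and> b \<noteq> b') \<or> (b = b' \<and> n \<le> n'))"
  by (auto simp: oprod_mem natLeq_mem Field_natLeq)

lemma R_Field: "Well_order \<beta> \<Longrightarrow> Field (RR \<beta>) = UNIV \<times> Field (osucc \<beta>)"
  using oprod_Field[OF natLeq_Linear_order WO_lin[OF osucc_WO]] Field_natLeq by simp

lemma R_WO: "Well_order \<beta> \<Longrightarrow> Well_order (RR \<beta>)"
  by (rule oprod_WO[OF natLeq_Well_order osucc_WO])

lemma R_pred: "Well_order \<beta> \<Longrightarrow> b \<in> Field (osucc \<beta>) \<Longrightarrow> is_pred (RR \<beta>) (k, b) (Suc k, b)"
proof -
  assume WO: "Well_order \<beta>" and b: "b \<in> Field (osucc \<beta>)"
  have as: "\<And>u v. (u, v) \<in> osucc \<beta> \<Longrightarrow> (v, u) \<in> osucc \<beta> \<Longrightarrow> u = v"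
    using LO_antisym[OF WO_lin[OF osucc_WO[OF WO]]] by blast
  show ?thesis unfolding is_pred_def
  proof (intro conjI notI)
    show "((k, b), Suc k, b) \<in> RR \<beta>" using b by (simp add: R_mem)
    show "(k, b) = (Suc k, b) \<Longrightarrow> False" by simp
    assume "\<exists>c. ((k, b), c) \<in> RR \<beta> \<and> c \<noteq> (k, b) \<and> (c, Suc k, b) \<in> RR \<beta> \<and> c \<noteq> (Suc k, b)"
    then obtain a ba where c: "((k, b), (a, ba)) \<in> RR \<beta>" "(a, ba) \<noteq> (k, b)" "((a, ba), (Suc k, b)) \<in> RR \<beta>" "(a, ba) \<noteq> (Suc k, b)"
      by auto
    have 1: "((b, ba) \<in> osucc \<beta> \<and> b \<noteq> ba) \<or> (b = ba \<and> k \<le> a)" using c(1) by (simp add: R_mem)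
    have 2: "((ba, b) \<in> osucc \<beta> \<and> ba \<noteq> b) \<or> (ba = b \<and> a \<le> Suc k)" using c(3) by (simp add: R_mem)
    show False using 1 2 c(2,4) as by auto
  qed
qed

lemma R_nopred:
  assumes WO: "Well_order \<beta>" and b: "b \<in> Field (osucc \<beta>)"
  shows "\<not> (\<exists>p. is_pred (RR \<beta>) p (0, b))"
proof
  assume "\<exists>p. is_pred (RR \<beta>) p (0, b)"
  then obtain n b' where p: "is_pred (RR \<beta>) (n, b') (0, b)" by auto
  then have "((n, b'), (0, b)) \<in> RR \<beta>" "(n, b') \<noteq> (0, b)" unfolding is_pred_def by auto
  then have bb: "(b', b) \<in> osucc \<beta>" "b' \<noteq> b" "b' \<in> Field (osucc \<beta>)" by (auto simp: R_mem)
  have "((n, b'), (Suc n, b')) \<in> RR \<beta>" "((Suc n, b'), (0, b)) \<in> RR \<beta>" using bb b by (auto simp: R_mem)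
  moreover have "(Suc n, b') \<noteq> (n, b')" "(Suc n, b') \<noteq> (0, b)" by auto
  ultimately have "\<exists>c. ((n, b'), c) \<in> RR \<beta> \<and> c \<noteq> (n, b') \<and> (c, (0, b)) \<in> RR \<beta> \<and> c \<noteq> (0, b)" by blast
  then show False using p unfolding is_pred_def by blast
qed

lemma R_below0: "(q, (0, b)) \<in> RR \<beta> - Id \<Longrightarrow> \<exists>n c. q = (n, Some c) \<and> (Some c, b) \<in> osucc \<beta> \<and> Some c \<noteq> b"
proof -
  assume a: "(q, (0, b)) \<in> RR \<beta> - Id"
  obtain n b' where q: "q = (n, b')" by force
  then have bb: "(b', b) \<in> osucc \<beta>" "b' \<noteq> b" using a by (auto simp: R_mem)
  then obtain c where "b' = Some c" by (cases b'; cases b) (auto simp: osucc_mem)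
  then show ?thesis using q bb by auto
qed

context
  fixes \<beta> :: "'b rel"
  assumes WOb: "Well_order \<beta>"
begin

lemma LOb: "Linear_order \<beta>" using WO_lin[OF WOb] .

lemma shift_emb:
  "((f, m), (f', m')) \<in> UU \<beta> \<Longrightarrow> ((f, m + d), (f', m' + d)) \<in> UU \<beta>"
  by (auto simp: U_mem)

lemma lower:
  "p \<in> Field (RR \<beta>) \<Longrightarrow> spl (UU \<beta>) (RR \<beta>) p (Pset \<beta> (snd p) (fst p))"
proof (induction p rule: wf_induct_rule[OF WO_wf[OF R_WO[OF WOb]]])
  case (1 p)
  obtain k b where p: "p = (k, b)" by force
  have bF: "b \<in> Field (osucc \<beta>)" using "1.prems" p R_Field[OF WOb] by auto
  show ?case
  proof (cases k)
    case (Suc k')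
    have pr: "is_pred (RR \<beta>) (k', b) (Suc k', b)" by (rule R_pred[OF WOb bF])
    have below: "((k', b), p) \<in> RR \<beta> - Id" using pr p Suc unfolding is_pred_def by auto
    have IH: "spl (UU \<beta>) (RR \<beta>) (k', b) (Pset \<beta> b k')"
      using "1.IH"[OF below] bF R_Field[OF WOb] by auto
    let ?y = "((\<lambda>_. 0::nat), (2::nat) ^ k')"
    have yP: "?y \<in> Pset \<beta> b (Suc k')" unfolding Pset_def supp_below_def using fs_zero by auto
    have low: "spl (UU \<beta>) (RR \<beta>) (k', b) (lowr (UU \<beta>) (Pset \<beta> b (Suc k')) ?y)"
    proof (rule spl_subset[OF R_WO[OF WOb] IH])
      show "Pset \<beta> b k' \<subseteq> lowr (UU \<beta>) (Pset \<beta> b (Suc k')) ?y"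
      proof
        fix q assume q: "q \<in> Pset \<beta> b k'"
        obtain f m where qq: "q = (f, m)" by force
        have "m < 2 ^ k'" "f \<in> fin_supp \<beta>" using q qq unfolding Pset_def by auto
        moreover have "q \<in> Pset \<beta> b (Suc k')" using q unfolding Pset_def by auto
        ultimately show "q \<in> lowr (UU \<beta>) (Pset \<beta> b (Suc k')) ?y"
          unfolding lowr_def using qq fs_zero by (auto simp: U_mem)
      qed
    qed
    have upp: "spl (UU \<beta>) (RR \<beta>) (k', b) (upr (UU \<beta>) (Pset \<beta> b (Suc k')) ?y)"
    proof (rule spl_emb[OF R_WO[OF WOb] IH, of "\<lambda>(f, m). (f, m + 2 ^ k')"])
      show "inj_on (\<lambda>(f, m). (f, m + 2 ^ k')) (Pset \<beta> b k')" by (auto simp: inj_on_def)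
      show "(\<lambda>(f, m). (f, m + 2 ^ k')) ` Pset \<beta> b k' \<subseteq> upr (UU \<beta>) (Pset \<beta> b (Suc k')) ?y"
      proof
        fix q assume "q \<in> (\<lambda>(f, m). (f, m + 2 ^ k')) ` Pset \<beta> b k'"
        then obtain f m where fm: "(f, m) \<in> Pset \<beta> b k'" "q = (f, m + 2 ^ k')" by auto
        have f: "f \<in> fin_supp \<beta>" "supp_below \<beta> b f" "m < 2 ^ k'" "(f, m) \<noteq> ((\<lambda>_. 0), 0)"
          using fm unfolding Pset_def by auto
        have "q \<in> Pset \<beta> b (Suc k')" using f fm(2) unfolding Pset_def by auto
        moreover have "(?y, q) \<in> UU \<beta> \<and> q \<noteq> ?y"
        proof (cases "m = 0")
          case True
          then have "f \<noteq> (\<lambda>_. 0)" using f(4) by auto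
          then show ?thesis using fm(2) True zero_least[OF LOb f(1)] f(1) fs_zero by (auto simp: U_mem)
        next
          case False
          then show ?thesis using fm(2) f(1) fs_zero by (auto simp: U_mem)
        qed
        ultimately show "q \<in> upr (UU \<beta>) (Pset \<beta> b (Suc k')) ?y" unfolding upr_def by auto
      qed
      show "\<forall>u\<in>Pset \<beta> b k'. \<forall>v\<in>Pset \<beta> b k'. (u, v) \<in> UU \<beta> \<longrightarrow>
          ((\<lambda>(f, m). (f, m + 2 ^ k')) u, (\<lambda>(f, m). (f, m + 2 ^ k')) v) \<in> UU \<beta>"
        using shift_emb by auto
    qed
    have "spl (UU \<beta>) (RR \<beta>) (Suc k', b) (Pset \<beta> b (Suc k'))"
      using spl_succ[OF R_WO[OF WOb] pr, of "UU \<beta>" "Pset \<beta> b (Suc k')"] yP low upp by blast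
    then show ?thesis using p Suc by simp
  next
    case 0
    have np: "\<not> (\<exists>q. is_pred (RR \<beta>) q (0, b))" by (rule R_nopred[OF WOb bF])
    have "spl (UU \<beta>) (RR \<beta>) q (Pset \<beta> b 0)" if q: "(q, (0, b)) \<in> RR \<beta> - Id" for q
    proof -
      obtain n c where nc: "q = (n, Some c)" "(Some c, b) \<in> osucc \<beta>" "Some c \<noteq> b"
        using R_below0[OF q] by blast
      have cF: "c \<in> Field \<beta>" using nc(2) by (cases b) (auto simp: osucc_mem intro: FieldI1')
      have qF: "q \<in> Field (RR \<beta>)" using nc cF R_Field[OF WOb] by (auto simp: osucc_Field)
      have IH: "spl (UU \<beta>) (RR \<beta>) q (Pset \<beta> (Some c) n)"
        using "1.IH"[of q] q p 0 qF nc(1) by auto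
      let ?g = "\<lambda>(f::'b \<Rightarrow> nat, m::nat). (f(c := m), 0::nat)"
      have sb: "f x \<noteq> 0 \<Longrightarrow> (x, c) \<in> \<beta> \<and> x \<noteq> c" if "supp_below \<beta> (Some c) f" for f x
        using that unfolding supp_below_def by (auto simp: osucc_mem)
      show ?thesis
      proof (rule spl_emb[OF R_WO[OF WOb] IH, of ?g])
        show "inj_on ?g (Pset \<beta> (Some c) n)"
        proof (rule inj_onI)
          fix u v assume u: "u \<in> Pset \<beta> (Some c) n" and v: "v \<in> Pset \<beta> (Some c) n" and e: "?g u = ?g v"
          obtain f m f' m' where uv: "u = (f, m)" "v = (f', m')" by force
          have "f c = 0" "f' c = 0" using u v uv sb unfolding Pset_def by auto
          moreover have "f(c := m) = f'(c := m')" using e uv by simp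
          ultimately have "m = m'" "f = f'" by (metis fun_upd_same, metis fun_upd_triv fun_upd_upd)
          then show "u = v" using uv by simp
        qed
        show "?g ` Pset \<beta> (Some c) n \<subseteq> Pset \<beta> b 0"
        proof
          fix w assume "w \<in> ?g ` Pset \<beta> (Some c) n"
          then obtain f m where fm: "(f, m) \<in> Pset \<beta> (Some c) n" "w = (f(c := m), 0)" by auto
          have f: "f \<in> fin_supp \<beta>" "supp_below \<beta> (Some c) f" "(f, m) \<noteq> ((\<lambda>_. 0), 0)"
            using fm unfolding Pset_def by auto
          have fc: "f c = 0" using sb[OF f(2)] by auto
          have fs: "f(c := m) \<in> fin_supp \<beta>"
          proof (rule fs_I)
            have "{x. (f(c := m)) x \<noteq> 0} \<subseteq> insert c {x. f x \<noteq> 0}" by auto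
            then show "finite {x. (f(c := m)) x \<noteq> 0}" using fs_finite[OF f(1)] finite_subset by blast
            show "\<And>x. (f(c := m)) x \<noteq> 0 \<Longrightarrow> x \<in> Field \<beta>"
              using cF fs_supp[OF f(1)] by (auto split: if_splits)
          qed
          have LOo: "Linear_order (osucc \<beta>)" using WO_lin[OF osucc_WO[OF WOb]] .
          have sbb: "supp_below \<beta> b (f(c := m))"
            unfolding supp_below_def
          proof (intro allI impI)
            fix x assume x: "(f(c := m)) x \<noteq> 0"
            show "(Some x, b) \<in> osucc \<beta> \<and> Some x \<noteq> b"
            proof (cases "x = c")
              case True then show ?thesis using nc by simp
            next
              case False
              then have "(x, c) \<in> \<beta>" "x \<noteq> c" using sb[OF f(2)] x by auto
              then have xc: "(Some x, Some c) \<in> osucc \<beta>" by (simp add: osucc_mem)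
              then have "(Some x, b) \<in> osucc \<beta>" using nc(2) LO_trans[OF LOo] by blast
              moreover have "Some x \<noteq> b"
              proof
                assume "Some x = b"
                then have "Some c = Some x" using nc(2) xc LO_antisym[OF LOo] by blast
                then show False using False by simp
              qed
              ultimately show ?thesis by simp
            qed
          qed
          have nz: "f(c := m) \<noteq> (\<lambda>_. 0)"
          proof (cases "m = 0")
            case True
            then have "f \<noteq> (\<lambda>_. 0)" using f(3) by simp
            moreover have "f(c := m) = f" using True fc by (simp add: fun_upd_idem)
            ultimately show ?thesis by simp
          next
            case False then show ?thesis by (metis fun_upd_same)
          qed
          show "w \<in> Pset \<beta> b 0" using fm(2) fs sbb nz unfolding Pset_def by auto
        qed
        show "\<forall>u\<in>Pset \<beta> (Some c) n. \<forall>v\<in>Pset \<beta> (Some c) n. (u, v) \<in> UU \<beta> \<longrightarrow> (?g u, ?g v) \<in> UU \<beta>"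
        proof (intro ballI impI)
          fix u v assume u: "u \<in> Pset \<beta> (Some c) n" and v: "v \<in> Pset \<beta> (Some c) n" and uv: "(u, v) \<in> UU \<beta>"
          obtain f m f' m' where e: "u = (f, m)" "v = (f', m')" by force
          have f: "f \<in> fin_supp \<beta>" "supp_below \<beta> (Some c) f" and f': "f' \<in> fin_supp \<beta>" "supp_below \<beta> (Some c) f'"
            using u v e unfolding Pset_def by auto
          have fsu: "f(c := m) \<in> fin_supp \<beta>" "f'(c := m') \<in> fin_supp \<beta>"
            using f(1) f'(1) cF unfolding fin_supp_def
            by (auto intro: finite_subset[of _ "insert c {x. f x \<noteq> 0}"] finite_subset[of _ "insert c {x. f' x \<noteq> 0}"])
          have above0: "f y = 0" "f' y = 0" if "(c, y) \<in> \<beta>" for y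
          proof -
            show "f y = 0"
            proof (rule ccontr)
              assume "f y \<noteq> 0" then have "(y, c) \<in> \<beta>" "y \<noteq> c" using sb[OF f(2)] by auto
              then show False using that LO_antisym[OF LOb] by blast
            qed
            show "f' y = 0"
            proof (rule ccontr)
              assume "f' y \<noteq> 0" then have "(y, c) \<in> \<beta>" "y \<noteq> c" using sb[OF f'(2)] by auto
              then show False using that LO_antisym[OF LOb] by blast
            qed
          qed
          have "(f(c := m), f'(c := m')) \<in> oexp_omega \<beta>"
          proof (cases "m < m'")
            case True
            have "\<forall>y\<in>Field \<beta>. (c, y) \<in> \<beta> \<and> y \<noteq> c \<longrightarrow> (f(c := m)) y = (f'(c := m')) y"
              using above0 by auto
            then show ?thesis using True cF fsu unfolding E_mem by (intro conjI disjI2 bexI[of _ c]) auto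
          next
            case False
            then have mm: "m = m'" "(f, f') \<in> oexp_omega \<beta>" using uv e by (auto simp: U_mem)
            show ?thesis
            proof (cases "f = f'")
              case True then show ?thesis using mm fsu by (simp add: E_mem)
            next
              case False
              then obtain x where x: "x \<in> Field \<beta>" "f x < f' x" "\<forall>y\<in>Field \<beta>. (x, y) \<in> \<beta> \<and> y \<noteq> x \<longrightarrow> f y = f' y"
                using mm(2) unfolding E_mem by blast
              have xc: "x \<noteq> c" using x(2) sb[OF f'(2), of x] by auto
              have "\<forall>y\<in>Field \<beta>. (x, y) \<in> \<beta> \<and> y \<noteq> x \<longrightarrow> (f(c := m)) y = (f'(c := m')) y"
                using x(3) mm(1) by auto
              then show ?thesis using x xc fsu unfolding E_mem by (intro conjI disjI2 bexI[of _ x]) auto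
            qed
          qed
          then show "(?g u, ?g v) \<in> UU \<beta>" using e fsu by (auto simp: U_mem)
        qed
      qed
    qed
    then have "spl (UU \<beta>) (RR \<beta>) (0, b) (Pset \<beta> b 0)"
      using spl_lim[OF R_WO[OF WOb] np, of "UU \<beta>" "Pset \<beta> b 0"] by blast
    then show ?thesis using p 0 by simp
  qed
qed

end

lemma underS_sub: "underS r a \<subseteq> Field r"
  unfolding underS_def by (auto intro: FieldI1')

lemma WO_Refl: "Well_order r \<Longrightarrow> Refl r"
  by (simp add: well_order_on_def linear_order_on_def partial_order_on_def preorder_on_def)

lemma Field_Restr_sub: "Well_order r \<Longrightarrow> A \<subseteq> Field r \<Longrightarrow> Field (Restr r A) = A"
  by (rule Refl_Field_Restr2[OF WO_Refl])

definition strict_emb :: "'a rel \<Rightarrow> 'c rel \<Rightarrow> ('a \<Rightarrow> 'c) \<Rightarrow> bool" where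
  "strict_emb r r' e \<longleftrightarrow> (\<forall>x\<in>Field r. e x \<in> Field r') \<and>
     (\<forall>x\<in>Field r. \<forall>y\<in>Field r. (x, y) \<in> r \<longrightarrow> x \<noteq> y \<longrightarrow> (e x, e y) \<in> r' \<and> e x \<noteq> e y)"

lemma ordLeq_strict:
  assumes "Well_order r" "Well_order r'" "(r, r') \<in> ordLeq"
  shows "\<exists>e. strict_emb r r' e"
proof -
  obtain e where e: "embed r r' e" using assms(3) unfolding ordLeq_def by blast
  note ef = embed_facts[OF assms(1,2) e]
  have "strict_emb r r' e" unfolding strict_emb_def
    using ef(1) ef(4) ef(3) by (auto dest: inj_onD)
  then show ?thesis by blast
qed

lemma strict_ordLeq:
  assumes "Well_order r" "Well_order r'" "strict_emb r r' e"
  shows "(r, r') \<in> ordLeq"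
  using mono_ordLeq[OF assms(1,2), of e] assms(3) unfolding strict_emb_def by blast

definition WP :: "'b rel \<Rightarrow> 'b option \<Rightarrow> nat \<Rightarrow> (('b \<Rightarrow> nat) \<times> nat) rel" where
  "WP \<beta> b k = Restr (UU \<beta>) (Pset \<beta> b k)"

context
  fixes \<beta> :: "'b rel"
  assumes WOb: "Well_order \<beta>" and WOE: "Well_order (oexp_omega \<beta>)"
begin

lemma WOU: "Well_order (UU \<beta>)" by (rule oprod_WO[OF WOE natLeq_Well_order])

lemma U_Field: "Field (UU \<beta>) = fin_supp \<beta> \<times> UNIV"
  using oprod_Field[OF WO_lin[OF WOE] natLeq_Linear_order] Field_natLeq by (simp add: E_Field)

lemma Pset_sub: "Pset \<beta> b k \<subseteq> Field (UU \<beta>)"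
  unfolding U_Field Pset_def by auto

lemma WP_WO: "Well_order (WP \<beta> b k)"
  unfolding WP_def by (rule Well_order_Restr[OF WOU])

lemma WP_Field: "Field (WP \<beta> b k) = Pset \<beta> b k"
  unfolding WP_def by (rule Field_Restr_sub[OF WOU Pset_sub])

lemma WP_mem: "(u, v) \<in> WP \<beta> b k \<longleftrightarrow> (u, v) \<in> UU \<beta> \<and> u \<in> Pset \<beta> b k \<and> v \<in> Pset \<beta> b k"
  unfolding WP_def by auto

lemma LOb': "Linear_order \<beta>" using WO_lin[OF WOb] .

lemma upper_succ:
  assumes WX: "Well_order X" and y: "y \<in> G" and GX: "G \<subseteq> Field X"
    and L: "(WP \<beta> b k, Restr X (lowr X G y)) \<in> ordLeq"
    and U: "(WP \<beta> b k, Restr X (upr X G y)) \<in> ordLeq"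
  shows "(WP \<beta> b (Suc k), Restr X G) \<in> ordLeq"
proof -
  have LX: "Linear_order X" using WO_lin[OF WX] .
  have lF: "lowr X G y \<subseteq> Field X" "upr X G y \<subseteq> Field X" using GX unfolding lowr_def upr_def by auto
  obtain e1 where e1: "strict_emb (WP \<beta> b k) (Restr X (lowr X G y)) e1"
    using ordLeq_strict[OF WP_WO Well_order_Restr[OF WX] L] by blast
  obtain e2 where e2: "strict_emb (WP \<beta> b k) (Restr X (upr X G y)) e2"
    using ordLeq_strict[OF WP_WO Well_order_Restr[OF WX] U] by blast
  have e1F: "\<And>q. q \<in> Pset \<beta> b k \<Longrightarrow> e1 q \<in> lowr X G y"
    using e1 unfolding strict_emb_def WP_Field Field_Restr_sub[OF WX lF(1)] by blast
  have e2F: "\<And>q. q \<in> Pset \<beta> b k \<Longrightarrow> e2 q \<in> upr X G y"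
    using e2 unfolding strict_emb_def WP_Field Field_Restr_sub[OF WX lF(2)] by blast
  have e1m: "\<And>u v. u \<in> Pset \<beta> b k \<Longrightarrow> v \<in> Pset \<beta> b k \<Longrightarrow> (u, v) \<in> UU \<beta> \<Longrightarrow> u \<noteq> v \<Longrightarrow> (e1 u, e1 v) \<in> X \<and> e1 u \<noteq> e1 v"
    using e1 unfolding strict_emb_def WP_Field by (auto simp: WP_mem)
  have e2m: "\<And>u v. u \<in> Pset \<beta> b k \<Longrightarrow> v \<in> Pset \<beta> b k \<Longrightarrow> (u, v) \<in> UU \<beta> \<Longrightarrow> u \<noteq> v \<Longrightarrow> (e2 u, e2 v) \<in> X \<and> e2 u \<noteq> e2 v"
    using e2 unfolding strict_emb_def WP_Field by (auto simp: WP_mem)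
  define mid where "mid = ((\<lambda>_. 0::nat) :: 'b \<Rightarrow> nat, (2::nat) ^ k)"
  define h where "h q = (if snd q < 2 ^ k then e1 q else if q = mid then y else e2 (fst q, snd q - 2 ^ k))" for q
  have PL: "q \<in> Pset \<beta> b k" if "q \<in> Pset \<beta> b (Suc k)" "snd q < 2 ^ k" for q
    using that unfolding Pset_def by auto
  have PU: "(fst q, snd q - 2 ^ k) \<in> Pset \<beta> b k" if q: "q \<in> Pset \<beta> b (Suc k)" "\<not> snd q < 2 ^ k" "q \<noteq> mid" for q
  proof -
    obtain f m where fm: "q = (f, m)" by force
    have "m - 2 ^ k < 2 ^ k" using q fm unfolding Pset_def by auto
    moreover have "(f, m - 2 ^ k) \<noteq> ((\<lambda>_. 0), 0)" using q fm unfolding mid_def by auto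
    ultimately show ?thesis using q fm unfolding Pset_def by auto
  qed
  have hF: "h q \<in> G" if q: "q \<in> Pset \<beta> b (Suc k)" for q
    using e1F[OF PL[OF q]] e2F[OF PU[OF q]] y unfolding h_def lowr_def upr_def by auto
  have lowy: "\<And>z. z \<in> lowr X G y \<Longrightarrow> (z, y) \<in> X \<and> z \<noteq> y" unfolding lowr_def by auto
  have upy: "\<And>z. z \<in> upr X G y \<Longrightarrow> (y, z) \<in> X \<and> z \<noteq> y" unfolding upr_def by auto
  have hm: "(h u, h v) \<in> X \<and> h u \<noteq> h v"
    if u: "u \<in> Pset \<beta> b (Suc k)" and v: "v \<in> Pset \<beta> b (Suc k)" and uv: "(u, v) \<in> UU \<beta>" and ne: "u \<noteq> v" for u v
  proof -
    obtain f m f' m' where e: "u = (f, m)" "v = (f', m')" by force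
    have fs: "f \<in> fin_supp \<beta>" "f' \<in> fin_supp \<beta>" using u v e unfolding Pset_def by auto
    have ord: "m < m' \<or> (m = m' \<and> (f, f') \<in> oexp_omega \<beta>)" using uv e by (simp add: U_mem)
    show ?thesis
    proof (cases "m < 2 ^ k")
      case mL: True
      show ?thesis
      proof (cases "m' < 2 ^ k")
        case True
        then show ?thesis using e1m[OF PL[OF u] PL[OF v] uv ne] mL e unfolding h_def by simp
      next
        case m'L: False
        have a: "(e1 u, y) \<in> X" "e1 u \<noteq> y" using lowy[OF e1F[OF PL[OF u]]] mL e by auto
        show ?thesis
        proof (cases "v = mid")
          case True then show ?thesis using a mL e unfolding h_def by (simp add: mid_def)
        next
          case False
          have b: "(y, e2 (f', m' - 2 ^ k)) \<in> X" "e2 (f', m' - 2 ^ k) \<noteq> y"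
            using upy[OF e2F[OF PU[OF v]]] m'L False e by auto
          have "(e1 u, e2 (f', m' - 2 ^ k)) \<in> X" using a b LO_trans[OF LX] by blast
          moreover have "e1 u \<noteq> e2 (f', m' - 2 ^ k)"
          proof
            assume "e1 u = e2 (f', m' - 2 ^ k)"
            then have "(y, e1 u) \<in> X" using b(1) by simp
            then show False using a LO_antisym[OF LX] by blast
          qed
          ultimately show ?thesis using mL m'L False e unfolding h_def by simp
        qed
      qed
    next
      case mL: False
      then have m'L: "\<not> m' < 2 ^ k" using ord by auto
      show ?thesis
      proof (cases "u = mid")
        case True
        then have "v \<noteq> mid" using ne by simp
        then show ?thesis using upy[OF e2F[OF PU[OF v]]] True m'L e unfolding h_def mid_def by auto
      next
        case uM: False
        have vM: "v \<noteq> mid"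
        proof
          assume vm: "v = mid"
          then have "m = 2 ^ k" "(f, (\<lambda>_. 0)) \<in> oexp_omega \<beta>" using ord e mL unfolding mid_def by auto
          then have "f = (\<lambda>_. 0)" using below_zero[OF LOb'] by blast
          then show False using uM e \<open>m = 2 ^ k\<close> unfolding mid_def by simp
        qed
        have "((f, m - 2 ^ k), (f', m' - 2 ^ k)) \<in> UU \<beta>" using ord fs mL m'L by (auto simp: U_mem)
        moreover have "(f, m - 2 ^ k) \<noteq> (f', m' - 2 ^ k)" using ne e mL m'L by auto
        ultimately have "(e2 (f, m - 2 ^ k), e2 (f', m' - 2 ^ k)) \<in> X \<and> e2 (f, m - 2 ^ k) \<noteq> e2 (f', m' - 2 ^ k)"
          using e2m[OF PU[OF u] PU[OF v]] e uM vM mL m'L by auto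
        then show ?thesis using uM vM mL m'L e unfolding h_def by simp
      qed
    qed
  qed
  have "strict_emb (WP \<beta> b (Suc k)) (Restr X G) h"
    unfolding strict_emb_def WP_Field Field_Restr_sub[OF WX GX]
    using hF hm by (auto simp: WP_mem)
  then show ?thesis by (rule strict_ordLeq[OF WP_WO Well_order_Restr[OF WX]])
qed


definition restr_c :: "'b rel \<Rightarrow> 'b \<Rightarrow> ('b \<Rightarrow> nat) \<Rightarrow> ('b \<Rightarrow> nat)" where
  "restr_c \<beta>' c g = (\<lambda>x. if (x, c) \<in> \<beta>' \<and> x \<noteq> c then g x else 0)"

lemma upper_lim:
  assumes WX: "Well_order X" and GX: "G \<subseteq> Field X"
    and IH: "\<And>c n. (Some c, b) \<in> osucc \<beta> \<Longrightarrow> Some c \<noteq> b \<Longrightarrow> (WP \<beta> (Some c) n, Restr X G) \<in> ordLeq"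
  shows "(WP \<beta> b 0, Restr X G) \<in> ordLeq"
proof (rule ccontr)
  assume nl: "(WP \<beta> b 0, Restr X G) \<notin> ordLeq"
  have WRX: "Well_order (Restr X G)" by (rule Well_order_Restr[OF WX])
  have "(Restr X G, WP \<beta> b 0) \<in> ordLess" using not_ordLeq_iff_ordLess[OF WRX WP_WO] nl by blast
  then obtain p where pF: "p \<in> Pset \<beta> b 0" and iso: "(Restr X G, Restr (WP \<beta> b 0) (underS (WP \<beta> b 0) p)) \<in> ordIso"
    using ordLess_iff_ordIso_Restr[OF WP_WO WRX] WP_Field by blast
  obtain f where pf: "p = (f, 0)" and f: "f \<in> fin_supp \<beta>" "supp_below \<beta> b f" "f \<noteq> (\<lambda>_. 0)"
    using pF unfolding Pset_def by (cases p) auto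
  obtain c where c: "c \<in> Field \<beta>" "f c \<noteq> 0" "\<And>y. (c, y) \<in> \<beta> \<Longrightarrow> y \<noteq> c \<Longrightarrow> f y = 0"
    using supp_max[OF LOb' f(1) f(3)] by blast
  have cb: "(Some c, b) \<in> osucc \<beta>" "Some c \<noteq> b" using f(2) c(2) unfolding supp_below_def by auto
  define n where "n = f c"
  have fcn: "f c < 2 ^ n" unfolding n_def by simp
  have le: "(WP \<beta> (Some c) n, Restr X G) \<in> ordLeq" using IH[OF cb] .
  have fsupp: "\<And>x. f x \<noteq> 0 \<Longrightarrow> (x, c) \<in> \<beta>"
  proof -
    fix x assume x: "f x \<noteq> 0"
    then have xF: "x \<in> Field \<beta>" using fs_supp[OF f(1)] by blast
    show "(x, c) \<in> \<beta>"
    proof (rule ccontr)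
      assume "(x, c) \<notin> \<beta>"
      then have cx: "(c, x) \<in> \<beta>" "x \<noteq> c" using LO_total'[OF LOb' xF c(1)] LO_refl[OF LOb' c(1)] by auto
      have "f x = 0" by (rule c(3)[OF cx])
      then show False using x by simp
    qed
  qed
  have below_f: "(\<forall>x. g x \<noteq> 0 \<longrightarrow> (x, c) \<in> \<beta>) \<and> g c \<le> f c" if g: "(g, f) \<in> oexp_omega \<beta>" for g
  proof (cases "g = f")
    case True then show ?thesis using fsupp by auto
  next
    case False
    then obtain w where w: "w \<in> Field \<beta>" "g w < f w" "\<forall>y\<in>Field \<beta>. (w, y) \<in> \<beta> \<and> y \<noteq> w \<longrightarrow> g y = f y"
      using g unfolding E_mem by blast
    have gs: "g \<in> fin_supp \<beta>" using g unfolding E_mem by blast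
    have wc: "(w, c) \<in> \<beta>" using fsupp[of w] w(2) by simp
    have "g x \<noteq> 0 \<longrightarrow> (x, c) \<in> \<beta>" for x
    proof
      assume gx: "g x \<noteq> 0"
      then have xF: "x \<in> Field \<beta>" using fs_supp[OF gs] by blast
      show "(x, c) \<in> \<beta>"
      proof (rule ccontr)
        assume nxc: "(x, c) \<notin> \<beta>"
        then have cx: "(c, x) \<in> \<beta>" "x \<noteq> c" using LO_total'[OF LOb' xF c(1)] LO_refl[OF LOb' c(1)] by auto
        then have "(w, x) \<in> \<beta>" using wc LO_trans[OF LOb'] by blast
        moreover have "x \<noteq> w" using nxc wc by auto
        ultimately have "g x = f x" using w(3) xF by blast
        then show False using gx c(3)[OF cx] by simp
      qed
    qed
    moreover have "g c \<le> f c"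
    proof (cases "w = c")
      case True then show ?thesis using w(2) by simp
    next
      case False then show ?thesis using w(3) wc c(1) by auto
    qed
    ultimately show ?thesis by blast
  qed
  let ?S = "underS (WP \<beta> b 0) p"
  let ?\<pi> = "\<lambda>q. (restr_c \<beta> c (fst q), fst q c)"
  have Ssub: "?S \<subseteq> Pset \<beta> b 0" using underS_sub[of "WP \<beta> b 0" p] WP_Field by simp
  have S_char: "\<exists>g. q = (g, 0) \<and> (g, f) \<in> oexp_omega \<beta> \<and> q \<in> Pset \<beta> b 0" if q: "q \<in> ?S \<union> {p}" for q
  proof -
    have qP: "q \<in> Pset \<beta> b 0" using q Ssub pF by auto
    obtain g m where gm: "q = (g, m)" by force
    have m0: "m = 0" using qP gm unfolding Pset_def by auto
    have "(q, p) \<in> UU \<beta>"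
    proof (cases "q = p")
      case True then show ?thesis using LO_refl[OF WO_lin[OF WOU]] pF Pset_sub by blast
    next
      case False then show ?thesis using q unfolding underS_def by (auto simp: WP_mem)
    qed
    then have "(g, f) \<in> oexp_omega \<beta>" using gm m0 pf by (auto simp: U_mem)
    then show ?thesis using gm m0 qP by blast
  qed
  have rs: "restr_c \<beta> c g \<in> fin_supp \<beta>" if "g \<in> fin_supp \<beta>" for g
  proof (rule fs_I)
    have "{x. restr_c \<beta> c g x \<noteq> 0} \<subseteq> {x. g x \<noteq> 0}" unfolding restr_c_def by auto
    then show "finite {x. restr_c \<beta> c g x \<noteq> 0}" using fs_finite[OF that] finite_subset by blast
    show "\<And>x. restr_c \<beta> c g x \<noteq> 0 \<Longrightarrow> x \<in> Field \<beta>"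
    proof -
      fix x assume "restr_c \<beta> c g x \<noteq> 0"
      then have "(x, c) \<in> \<beta>" unfolding restr_c_def by (auto split: if_splits)
      then show "x \<in> Field \<beta>" by (rule FieldI1')
    qed
  qed
  have piP: "?\<pi> q \<in> Pset \<beta> (Some c) n" if q: "q \<in> ?S \<union> {p}" for q
  proof -
    obtain g where g: "q = (g, 0)" "(g, f) \<in> oexp_omega \<beta>" "q \<in> Pset \<beta> b 0" using S_char[OF q] by blast
    have gs: "g \<in> fin_supp \<beta>" using g(2) unfolding E_mem by blast
    have bf: "\<forall>x. g x \<noteq> 0 \<longrightarrow> (x, c) \<in> \<beta>" "g c \<le> f c" using below_f[OF g(2)] by auto
    have gnz: "g \<noteq> (\<lambda>_. 0)" using g(1,3) unfolding Pset_def by auto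
    have sb: "supp_below \<beta> (Some c) (restr_c \<beta> c g)"
      unfolding supp_below_def restr_c_def by (auto simp: osucc_mem)
    have nz: "?\<pi> q \<noteq> ((\<lambda>_. 0), 0)"
    proof
      assume z: "?\<pi> q = ((\<lambda>_. 0), 0)"
      obtain x where x: "g x \<noteq> 0" using gnz by auto
      show False
      proof (cases "x = c")
        case True then show False using z x g(1) by simp
      next
        case False
        then have "restr_c \<beta> c g x = g x" using bf(1) x unfolding restr_c_def by auto
        moreover have "restr_c \<beta> c g = (\<lambda>_. 0)" using z g(1) by simp
        ultimately show False using x by (metis)
      qed
    qed
    have "g c < 2 ^ n" using bf(2) fcn by simp
    then show ?thesis using rs[OF gs] sb nz g(1) unfolding Pset_def by auto
  qed
  have pim: "(?\<pi> q1, ?\<pi> q2) \<in> UU \<beta> \<and> ?\<pi> q1 \<noteq> ?\<pi> q2"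
    if q1: "q1 \<in> ?S \<union> {p}" and q2: "q2 \<in> ?S \<union> {p}" and q12: "(q1, q2) \<in> UU \<beta>" and ne: "q1 \<noteq> q2" for q1 q2
  proof -
    obtain g1 where g1: "q1 = (g1, 0)" "(g1, f) \<in> oexp_omega \<beta>" using S_char[OF q1] by blast
    obtain g2 where g2: "q2 = (g2, 0)" "(g2, f) \<in> oexp_omega \<beta>" using S_char[OF q2] by blast
    have gs: "g1 \<in> fin_supp \<beta>" "g2 \<in> fin_supp \<beta>" using g1 g2 unfolding E_mem by auto
    have b2: "\<forall>x. g2 x \<noteq> 0 \<longrightarrow> (x, c) \<in> \<beta>" using below_f[OF g2(2)] by auto
    have "(g1, g2) \<in> oexp_omega \<beta>" "g1 \<noteq> g2" using q12 ne g1 g2 by (auto simp: U_mem)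
    then obtain w where w: "w \<in> Field \<beta>" "g1 w < g2 w" "\<forall>y\<in>Field \<beta>. (w, y) \<in> \<beta> \<and> y \<noteq> w \<longrightarrow> g1 y = g2 y"
      unfolding E_mem by blast
    have wc: "(w, c) \<in> \<beta>" using b2 w(2) by auto
    show ?thesis
    proof (cases "w = c")
      case True
      then show ?thesis using w(2) rs[OF gs(1)] rs[OF gs(2)] g1(1) g2(1) by (auto simp: U_mem)
    next
      case False
      have eqc: "g1 c = g2 c" using w(3) wc False c(1) by auto
      have "\<forall>y\<in>Field \<beta>. (w, y) \<in> \<beta> \<and> y \<noteq> w \<longrightarrow> restr_c \<beta> c g1 y = restr_c \<beta> c g2 y"
        using w(3) unfolding restr_c_def by auto
      moreover have "restr_c \<beta> c g1 w < restr_c \<beta> c g2 w" using w(2) wc False unfolding restr_c_def by auto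
      ultimately have "(restr_c \<beta> c g1, restr_c \<beta> c g2) \<in> oexp_omega \<beta>"
        using w(1) rs[OF gs(1)] rs[OF gs(2)] unfolding E_mem by blast
      moreover have "restr_c \<beta> c g1 \<noteq> restr_c \<beta> c g2"
        using \<open>restr_c \<beta> c g1 w < restr_c \<beta> c g2 w\<close> by auto
      ultimately show ?thesis using g1 g2 eqc rs[OF gs(1)] rs[OF gs(2)] by (auto simp: U_mem)
    qed
  qed
  let ?T = "underS (WP \<beta> (Some c) n) (?\<pi> p)"
  have Tsub: "?T \<subseteq> Field (WP \<beta> (Some c) n)" by (rule underS_sub)
  have WRS: "Well_order (Restr (WP \<beta> b 0) ?S)" by (rule Well_order_Restr[OF WP_WO])
  have WRT: "Well_order (Restr (WP \<beta> (Some c) n) ?T)" by (rule Well_order_Restr[OF WP_WO])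
  have FS: "Field (Restr (WP \<beta> b 0) ?S) = ?S" by (rule Field_Restr_sub[OF WP_WO underS_sub])
  have FT: "Field (Restr (WP \<beta> (Some c) n) ?T) = ?T" by (rule Field_Restr_sub[OF WP_WO Tsub])
  have pP: "?\<pi> p \<in> Pset \<beta> (Some c) n" using piP[of p] by simp
  have inT: "?\<pi> q \<in> ?T" if q: "q \<in> ?S" for q
  proof -
    have qp: "(q, p) \<in> UU \<beta>" "q \<noteq> p" using q by (simp_all add: underS_def WP_mem)
    have a: "(?\<pi> q, ?\<pi> p) \<in> UU \<beta>" "?\<pi> q \<noteq> ?\<pi> p" using pim[of q p] q qp by auto
    have b: "?\<pi> q \<in> Pset \<beta> (Some c) n" using piP[of q] q by simp
    show ?thesis unfolding underS_def using a b pP by (simp add: WP_mem)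
  qed
  have "strict_emb (Restr (WP \<beta> b 0) ?S) (Restr (WP \<beta> (Some c) n) ?T) ?\<pi>"
    unfolding strict_emb_def FS FT
  proof (rule conjI)
    show "\<forall>q\<in>?S. ?\<pi> q \<in> ?T" using inT by blast
  next
    show "\<forall>x\<in>?S. \<forall>y\<in>?S. (x, y) \<in> Restr (WP \<beta> b 0) ?S \<longrightarrow> x \<noteq> y \<longrightarrow>
          (?\<pi> x, ?\<pi> y) \<in> Restr (WP \<beta> (Some c) n) ?T \<and> ?\<pi> x \<noteq> ?\<pi> y"
    proof (intro ballI impI)
    fix q1 q2 assume q1: "q1 \<in> ?S" and q2: "q2 \<in> ?S" and r: "(q1, q2) \<in> Restr (WP \<beta> b 0) ?S" and ne: "q1 \<noteq> q2"
    have "(q1, q2) \<in> UU \<beta>" using r by (simp add: WP_mem)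
    then have a: "(?\<pi> q1, ?\<pi> q2) \<in> UU \<beta>" "?\<pi> q1 \<noteq> ?\<pi> q2" using pim[of q1 q2] q1 q2 ne by auto
    have b: "?\<pi> q1 \<in> Pset \<beta> (Some c) n" "?\<pi> q2 \<in> Pset \<beta> (Some c) n" using piP[of q1] piP[of q2] q1 q2 by auto
    show "(?\<pi> q1, ?\<pi> q2) \<in> Restr (WP \<beta> (Some c) n) ?T \<and> ?\<pi> q1 \<noteq> ?\<pi> q2"
      using a b inT[OF q1] inT[OF q2] by (simp add: WP_mem)
  qed
  qed
  then have l1: "(Restr (WP \<beta> b 0) ?S, Restr (WP \<beta> (Some c) n) ?T) \<in> ordLeq"
    by (rule strict_ordLeq[OF WRS WRT])
  have ne: "Field (WP \<beta> (Some c) n) \<noteq> {}" using piP[of p] WP_Field by auto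
  have l2: "(Restr (WP \<beta> (Some c) n) ?T, WP \<beta> (Some c) n) \<in> ordLess"
    by (rule underS_Restr_ordLess[OF WP_WO ne])
  have "(WP \<beta> (Some c) n, Restr (WP \<beta> b 0) ?S) \<in> ordLeq" using le iso ordLeq_ordIso_trans by blast
  then have "(WP \<beta> (Some c) n, Restr (WP \<beta> (Some c) n) ?T) \<in> ordLeq" using l1 ordLeq_transitive by blast
  then have "(WP \<beta> (Some c) n, WP \<beta> (Some c) n) \<in> ordLess" using l2 ordLeq_ordLess_trans by blast
  then show False using ordLess_irreflexive by blast
qed

lemma upper:
  assumes WX: "Well_order X"
  shows "p \<in> Field (RR \<beta>) \<Longrightarrow> G \<subseteq> Field X \<Longrightarrow> spl X (RR \<beta>) p G \<Longrightarrow> (WP \<beta> (snd p) (fst p), Restr X G) \<in> ordLeq"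
proof (induction p arbitrary: G rule: wf_induct_rule[OF WO_wf[OF R_WO[OF WOb]]])
  case (1 p)
  obtain k b where p: "p = (k, b)" by force
  have bF: "b \<in> Field (osucc \<beta>)" using "1.prems"(1) p R_Field[OF WOb] by auto
  show ?case
  proof (cases k)
    case (Suc k')
    have pr: "is_pred (RR \<beta>) (k', b) (Suc k', b)" by (rule R_pred[OF WOb bF])
    have below: "((k', b), p) \<in> RR \<beta> - Id" using pr p Suc unfolding is_pred_def by auto
    have qF: "(k', b) \<in> Field (RR \<beta>)" using bF R_Field[OF WOb] by auto
    obtain y where y: "y \<in> G" "spl X (RR \<beta>) (k', b) (lowr X G y)" "spl X (RR \<beta>) (k', b) (upr X G y)"
      using "1.prems"(3) p Suc spl_succ[OF R_WO[OF WOb] pr, of X G] by auto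
    have lF: "lowr X G y \<subseteq> Field X" "upr X G y \<subseteq> Field X" using "1.prems"(2) unfolding lowr_def upr_def by auto
    have L: "(WP \<beta> b k', Restr X (lowr X G y)) \<in> ordLeq" using "1.IH"[OF below qF lF(1) y(2)] by simp
    have U: "(WP \<beta> b k', Restr X (upr X G y)) \<in> ordLeq" using "1.IH"[OF below qF lF(2) y(3)] by simp
    show ?thesis using upper_succ[OF WX y(1) "1.prems"(2) L U] p Suc by simp
  next
    case 0
    have np: "\<not> (\<exists>q. is_pred (RR \<beta>) q (0, b))" by (rule R_nopred[OF WOb bF])
    have H0: "\<forall>q. (q, (0, b)) \<in> RR \<beta> - Id \<longrightarrow> spl X (RR \<beta>) q G"
      using "1.prems"(3) p 0 spl_lim[OF R_WO[OF WOb] np, of X G] by simp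
    have H: "spl X (RR \<beta>) q G" if "(q, (0, b)) \<in> RR \<beta> - Id" for q
      using H0 that by blast
    have IH: "(WP \<beta> (Some c) n, Restr X G) \<in> ordLeq" if cb: "(Some c, b) \<in> osucc \<beta>" "Some c \<noteq> b" for c n
    proof -
      have cF: "Some c \<in> Field (osucc \<beta>)" using cb(1) by (rule FieldI1')
      have qb: "((n, Some c), (0, b)) \<in> RR \<beta> - Id" using cb cF bF by (auto simp: R_mem)
      have qF: "(n, Some c) \<in> Field (RR \<beta>)" using cF R_Field[OF WOb] by auto
      show ?thesis using "1.IH"[of "(n, Some c)"] qb p 0 qF "1.prems"(2) H[OF qb] by auto
    qed
    show ?thesis using upper_lim[OF WX "1.prems"(2) IH] p 0 by simp
  qed
qed

end

abbreviation tau :: "'b rel \<Rightarrow> nat \<Rightarrow> ((nat \<times> 'b) + nat) rel" where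
  "tau \<beta> k \<equiv> osum (oprod natLeq \<beta>) (natLeq_on k)"

lemma tau_WO: "Well_order \<beta> \<Longrightarrow> Well_order (tau \<beta> k)"
  by (rule osum_WO[OF oprod_WO[OF natLeq_Well_order] natLeq_on_Well_order])

lemma oprod_nat_Field: "Well_order \<beta> \<Longrightarrow> Field (oprod natLeq \<beta>) = UNIV \<times> Field \<beta>"
  using oprod_Field[OF natLeq_Linear_order WO_lin] Field_natLeq by simp

lemma tau_Field: "Well_order \<beta> \<Longrightarrow> Field (tau \<beta> k) = Inl ` (UNIV \<times> Field \<beta>) \<union> Inr ` {i. i < k}"
proof -
  assume WO: "Well_order \<beta>"
  show ?thesis using oprod_nat_Field[OF WO] by (simp add: osum_Field Field_natLeq_on)
qed

lemma natLeq_on_mem: "(i, j) \<in> natLeq_on k \<longleftrightarrow> i < k \<and> j < k \<and> i \<le> j" by simp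

definition M0 :: "((nat \<times> 'b) + nat) \<Rightarrow> nat \<times> 'b option" where
  "M0 u = (case u of Inl p \<Rightarrow> (fst p, Some (snd p)) | Inr i \<Rightarrow> (i, None))"

lemma M0_mono:
  assumes WO: "Well_order \<beta>"
  shows "mono_init (tau \<beta> k) (RR \<beta>) M0" "M0 ` Field (tau \<beta> k) = underS (RR \<beta>) (k, None)"
proof -
  have LO: "Linear_order \<beta>" using WO_lin[OF WO] .
  note TF = tau_Field[OF WO, of k]
  have oF: "Field (osucc \<beta>) = insert None (Some ` Field \<beta>)" by (rule osucc_Field)
  have img: "M0 ` Field (tau \<beta> k) = underS (RR \<beta>) (k, None)"
  proof
    show "M0 ` Field (tau \<beta> k) \<subseteq> underS (RR \<beta>) (k, None)"
      unfolding TF underS_def by (auto simp: M0_def R_mem oF osucc_mem)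
    show "underS (RR \<beta>) (k, None) \<subseteq> M0 ` Field (tau \<beta> k)"
    proof
      fix z assume z: "z \<in> underS (RR \<beta>) (k, None)"
      obtain n b where nb: "z = (n, b)" by force
      show "z \<in> M0 ` Field (tau \<beta> k)"
      proof (cases b)
        case None
        then have "n < k" using z nb unfolding underS_def by (auto simp: R_mem)
        then have "Inr n \<in> Field (tau \<beta> k)" unfolding TF by auto
        moreover have "z = M0 (Inr n)" using nb None by (simp add: M0_def)
        ultimately show ?thesis by blast
      next
        case (Some x)
        then have "x \<in> Field \<beta>" using z nb unfolding underS_def by (auto simp: R_mem oF)
        then have "Inl (n, x) \<in> Field (tau \<beta> k)" unfolding TF by auto
        moreover have "z = M0 (Inl (n, x))" using nb Some by (simp add: M0_def)
        ultimately show ?thesis by blast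
      qed
    qed
  qed
  show "M0 ` Field (tau \<beta> k) = underS (RR \<beta>) (k, None)" by (rule img)
  show "mono_init (tau \<beta> k) (RR \<beta>) M0"
    unfolding mono_init_def
  proof (intro conjI ballI allI impI)
    fix x assume "x \<in> Field (tau \<beta> k)"
    then show "M0 x \<in> Field (RR \<beta>)" using R_Field[OF WO] by (auto simp: TF M0_def oF)
  next
    show "inj_on M0 (Field (tau \<beta> k))" unfolding inj_on_def TF by (auto simp: M0_def)
  next
    fix x y assume x: "x \<in> Field (tau \<beta> k)" and y: "y \<in> Field (tau \<beta> k)"
    show "(x, y) \<in> tau \<beta> k \<longleftrightarrow> (M0 x, M0 y) \<in> RR \<beta>"
      using x y unfolding TF
      by (auto simp: M0_def R_mem oF osucc_mem osum_mem oprod_mem natLeq_mem Field_natLeq Field_natLeq_on oprod_nat_Field[OF WO])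
  next
    fix x z assume x: "x \<in> Field (tau \<beta> k)" and z: "(z, M0 x) \<in> RR \<beta>"
    have "(z, (k, None)) \<in> RR \<beta>" "z \<noteq> (k, None)"
    proof -
      have "M0 x \<in> underS (RR \<beta>) (k, None)" using img x by blast
      then have "(M0 x, (k, None)) \<in> RR \<beta>" "M0 x \<noteq> (k, None)" unfolding underS_def by auto
      then show "(z, (k, None)) \<in> RR \<beta>" "z \<noteq> (k, None)"
        using z LO_trans[OF WO_lin[OF R_WO[OF WO]]] LO_antisym[OF WO_lin[OF R_WO[OF WO]]] by blast+
    qed
    then have "z \<in> underS (RR \<beta>) (k, None)" unfolding underS_def by auto
    then show "z \<in> M0 ` Field (tau \<beta> k)" using img by blast
  qed
qed

lemma ext_mono:
  assumes WR: "Well_order R" and M: "mono_init r R M" and img: "M ` Field r = underS R t" and tF: "t \<in> Field R"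
  shows "mono_init (osucc r) R (\<lambda>u. case u of None \<Rightarrow> t | Some x \<Rightarrow> M x)"
    "(\<lambda>u. case u of None \<Rightarrow> t | Some x \<Rightarrow> M x) ` Field (osucc r) = under R t"
proof -
  let ?M = "\<lambda>u. case u of None \<Rightarrow> t | Some x \<Rightarrow> M x"
  have LR: "Linear_order R" using WO_lin[OF WR] .
  have fF: "\<And>x. x \<in> Field r \<Longrightarrow> M x \<in> Field R" and inj: "inj_on M (Field r)"
    and ord: "\<And>x y. x \<in> Field r \<Longrightarrow> y \<in> Field r \<Longrightarrow> (x, y) \<in> r \<longleftrightarrow> (M x, M y) \<in> R"
    and ini: "\<And>x z. x \<in> Field r \<Longrightarrow> (z, M x) \<in> R \<Longrightarrow> z \<in> M ` Field r"
    using M unfolding mono_init_def by auto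
  have Mt: "\<And>x. x \<in> Field r \<Longrightarrow> (M x, t) \<in> R \<and> M x \<noteq> t" using img unfolding underS_def by blast
  have tM: "\<And>x. x \<in> Field r \<Longrightarrow> (t, M x) \<notin> R" using Mt LO_antisym[OF LR] by blast
  have tt: "(t, t) \<in> R" using LO_refl[OF LR tF] .
  show "?M ` Field (osucc r) = under R t"
  proof -
    have "?M ` Field (osucc r) = insert t (M ` Field r)" by (simp add: osucc_Field image_image)
    also have "\<dots> = insert t (underS R t)" using img by simp
    also have "\<dots> = under R t" using tt unfolding under_def underS_def by auto
    finally show ?thesis .
  qed
  show "mono_init (osucc r) R ?M"
    unfolding mono_init_def
  proof (intro conjI ballI allI impI)
    fix x assume "x \<in> Field (osucc r)"
    then show "?M x \<in> Field R" using tF fF by (auto simp: osucc_Field)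
  next
    show "inj_on ?M (Field (osucc r))"
      unfolding inj_on_def osucc_Field using inj Mt by (auto dest: inj_onD)
  next
    fix x y assume x: "x \<in> Field (osucc r)" and y: "y \<in> Field (osucc r)"
    show "(x, y) \<in> osucc r \<longleftrightarrow> (?M x, ?M y) \<in> R"
      using x y ord Mt tM tt by (cases x; cases y) (auto simp: osucc_mem osucc_Field)
  next
    fix x z assume x: "x \<in> Field (osucc r)" and z: "(z, ?M x) \<in> R"
    show "z \<in> ?M ` Field (osucc r)"
    proof (cases x)
      case None
      show ?thesis
      proof (cases "z = t")
        case True then show ?thesis by (auto simp: osucc_Field)
      next
        case False
        then have "z \<in> underS R t" using z None unfolding underS_def by simp
        then obtain y where y: "y \<in> Field r" "z = M y" using img by blast
        have "Some y \<in> Field (osucc r)" using y by (simp add: osucc_Field)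
        moreover have "z = ?M (Some y)" using y by simp
        ultimately show ?thesis by (rule rev_image_eqI)
      qed
    next
      case (Some x')
      then have "x' \<in> Field r" using x by (auto simp: osucc_Field)
      then obtain y where y: "y \<in> Field r" "z = M y" using ini z Some by auto
      have "Some y \<in> Field (osucc r)" using y by (simp add: osucc_Field)
      moreover have "z = ?M (Some y)" using y by simp
      ultimately show ?thesis by (rule rev_image_eqI)
    qed
  qed
qed

lemma under_succ: "underS (RR \<beta>) (Suc k, None) = under (RR \<beta>) (k, None)"
  unfolding underS_def under_def by (auto simp: R_mem)

lemma osum_list_mem: "((j, x), (j', x')) \<in> osum_list rs \<longleftrightarrow> j < length rs \<and> j' < length rs \<and>
   x \<in> Field (rs ! j) \<and> x' \<in> Field (rs ! j') \<and> (j < j' \<or> (j = j' \<and> (x, x') \<in> rs ! j))"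
  by (simp add: osum_list_def)

lemma osum_list_Field: "Field (osum_list rs) \<subseteq> {(j, x). j < length rs \<and> x \<in> Field (rs ! j)}"
  unfolding osum_list_def Field_def by auto

lemma cnf_nth: "j < length ts \<Longrightarrow> (map (\<lambda>(\<beta>, c). oprod (oexp_omega \<beta>) (natLeq_on c)) ts) ! j
    = oprod (oexp_omega (fst (ts ! j))) (natLeq_on (snd (ts ! j)))"
  by (simp add: case_prod_beta)

lemma cnf_mem: "((j, x), (j', x')) \<in> cnf ts \<longleftrightarrow> j < length ts \<and> j' < length ts \<and>
   x \<in> Field (oprod (oexp_omega (fst (ts ! j))) (natLeq_on (snd (ts ! j)))) \<and>
   x' \<in> Field (oprod (oexp_omega (fst (ts ! j'))) (natLeq_on (snd (ts ! j')))) \<and>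
   (j < j' \<or> (j = j' \<and> (x, x') \<in> oprod (oexp_omega (fst (ts ! j))) (natLeq_on (snd (ts ! j)))))"
proof (cases "j < length ts \<and> j' < length ts")
  case True
  then show ?thesis unfolding cnf_def osum_list_mem by (simp only: length_map cnf_nth simp_thms)
next
  case False
  then show ?thesis unfolding cnf_def osum_list_mem by auto
qed

lemma cnf_Field: "u \<in> Field (cnf ts) \<Longrightarrow> \<exists>j x. u = (j, x) \<and> j < length ts \<and>
    x \<in> Field (oprod (oexp_omega (fst (ts ! j))) (natLeq_on (snd (ts ! j))))"
proof -
  assume u: "u \<in> Field (cnf ts)"
  obtain j x where jx: "u = (j, x)" "j < length ts" "x \<in> Field ((map (\<lambda>(\<beta>, c). oprod (oexp_omega \<beta>) (natLeq_on c)) ts) ! j)"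
    using osum_list_Field[of "map (\<lambda>(\<beta>, c). oprod (oexp_omega \<beta>) (natLeq_on c)) ts"] u
    unfolding cnf_def by auto
  then show ?thesis using cnf_nth[OF jx(2)] by auto
qed

lemma comp_Field: "Well_order \<beta> \<Longrightarrow> Field (oprod (oexp_omega \<beta>) (natLeq_on c)) = fin_supp \<beta> \<times> {i. i < c}"
  using oprod_Field[OF E_LO[OF WO_lin] WO_lin[OF natLeq_on_Well_order]] by (simp add: E_Field Field_natLeq_on)

lemma comp_mem: "Well_order \<beta> \<Longrightarrow> ((g, m), (g', m')) \<in> oprod (oexp_omega \<beta>) (natLeq_on c) \<longleftrightarrow>
   g \<in> fin_supp \<beta> \<and> g' \<in> fin_supp \<beta> \<and> m < c \<and> m' < c \<and> (m < m' \<or> (m = m' \<and> (g, g') \<in> oexp_omega \<beta>))"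
  by (auto simp: oprod_mem E_Field Field_natLeq_on)

lemma least_elem:
  assumes WO: "Well_order r" and ne: "Field r \<noteq> {}"
  obtains m where "m \<in> Field r" "\<And>x. x \<in> Field r \<Longrightarrow> (m, x) \<in> r"
proof -
  obtain m where m: "m \<in> Field r" "m \<notin> {}" and mm: "\<And>y. (y, m) \<in> r \<Longrightarrow> y \<noteq> m \<Longrightarrow> y \<in> {}"
    using least_outside[OF WO, of "{}"] ne by blast
  have "(m, x) \<in> r" if x: "x \<in> Field r" for x
    using LO_total'[OF WO_lin[OF WO] m(1) x] mm LO_refl[OF WO_lin[OF WO] x] by blast
  then show ?thesis using that m(1) by blast
qed

lemma supp_below_None: "f \<in> fin_supp \<beta> \<Longrightarrow> supp_below \<beta> None f"
  unfolding supp_below_def using fs_supp by (fastforce simp: osucc_mem)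

lemma sum_le_member: "(i::nat) < l \<Longrightarrow> (c i :: nat) \<le> (\<Sum>j<l. c j)"
  using member_le_sum[of i "{..<l}" c] by simp

lemma big_embed:
  fixes ts :: "('b rel \<times> nat) list"
  assumes ne: "ts \<noteq> []"
    and wo: "\<forall>i < length ts. Well_order (fst (ts ! i)) \<and> 1 \<le> snd (ts ! i)"
    and dec: "\<forall>i j. i < j \<and> j < length ts \<longrightarrow> (fst (ts ! j), fst (ts ! i)) \<in> ordLess"
    and WOE: "Well_order (oexp_omega (fst (ts ! 0)))"
    and nonempty: "Field (fst (ts ! 0)) \<noteq> {}"
    and ck: "snd (ts ! 0) < 2 ^ K"
  shows "\<exists>w \<in> Pset (fst (ts ! 0)) None K. \<exists>\<Phi>. strict_emb (cnf ts)
     (Restr (WP (fst (ts ! 0)) None K) (underS (WP (fst (ts ! 0)) None K) w)) \<Phi>"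
proof -
  define l where "l = length ts"
  define \<beta> where "\<beta> j = fst (ts ! j)" for j
  define c where "c j = snd (ts ! j)" for j
  have l0: "0 < l" using ne unfolding l_def by simp
  have WOj: "\<And>j. j < l \<Longrightarrow> Well_order (\<beta> j)" using wo unfolding l_def \<beta>_def by auto
  have c1: "\<And>j. j < l \<Longrightarrow> 1 \<le> c j" using wo unfolding l_def c_def by auto
  have WO0: "Well_order (\<beta> 0)" using WOj[OF l0] .
  have LO0: "Linear_order (\<beta> 0)" using WO_lin[OF WO0] .
  have WOE0: "Well_order (oexp_omega (\<beta> 0))" using WOE unfolding \<beta>_def .
  obtain b0 where b0: "b0 \<in> Field (\<beta> 0)" "\<And>x. x \<in> Field (\<beta> 0) \<Longrightarrow> (b0, x) \<in> \<beta> 0"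
    using least_elem[OF WO0] nonempty unfolding \<beta>_def by blast
  have "\<forall>j. \<exists>p. 0 < j \<and> j < l \<longrightarrow> fst p \<in> Field (\<beta> 0) \<and> iso (\<beta> j) (Restr (\<beta> 0) (underS (\<beta> 0) (fst p))) (snd p)"
  proof
    fix j
    show "\<exists>p. 0 < j \<and> j < l \<longrightarrow> fst p \<in> Field (\<beta> 0) \<and> iso (\<beta> j) (Restr (\<beta> 0) (underS (\<beta> 0) (fst p))) (snd p)"
    proof (cases "0 < j \<and> j < l")
      case True
      then have "(\<beta> j, \<beta> 0) \<in> ordLess" using dec unfolding l_def \<beta>_def by auto
      then obtain a where a: "a \<in> Field (\<beta> 0)" "(\<beta> j, Restr (\<beta> 0) (underS (\<beta> 0) a)) \<in> ordIso"
        using ordLess_iff_ordIso_Restr[OF WO0 WOj] True by blast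
      then obtain \<psi> where "iso (\<beta> j) (Restr (\<beta> 0) (underS (\<beta> 0) a)) \<psi>" unfolding ordIso_def by blast
      then show ?thesis using a(1) by (intro exI[of _ "(a, \<psi>)"]) simp
    next
      case False then show ?thesis by blast
    qed
  qed
  then obtain P where P: "\<And>j. 0 < j \<Longrightarrow> j < l \<Longrightarrow> fst (P j) \<in> Field (\<beta> 0) \<and> iso (\<beta> j) (Restr (\<beta> 0) (underS (\<beta> 0) (fst (P j)))) (snd (P j))"
    by (metis choice)
  define A where "A j = fst (P j)" for j
  define \<Psi> where "\<Psi> j = snd (P j)" for j
  have AF: "\<And>j. 0 < j \<Longrightarrow> j < l \<Longrightarrow> A j \<in> Field (\<beta> 0)" using P unfolding A_def by blast
  have isoj: "\<And>j. 0 < j \<Longrightarrow> j < l \<Longrightarrow> iso (\<beta> j) (Restr (\<beta> 0) (underS (\<beta> 0) (A j))) (\<Psi> j)"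
    using P unfolding A_def \<Psi>_def by blast
  define S where "S = insert b0 (A ` {j. 0 < j \<and> j < l})"
  have Sfin: "finite S" unfolding S_def by simp
  have Ssub: "S \<subseteq> Field (\<beta> 0)" unfolding S_def using b0(1) AF by auto
  obtain d where d: "d \<in> S" "\<forall>y\<in>S. (y, d) \<in> \<beta> 0" using finite_max[OF LO0 Sfin _ Ssub] unfolding S_def by blast
  have dF: "d \<in> Field (\<beta> 0)" using d(1) Ssub by auto
  have Ad: "\<And>j. 0 < j \<Longrightarrow> j < l \<Longrightarrow> (A j, d) \<in> \<beta> 0" using d(2) unfolding S_def by auto
  have P1: "\<Psi> j x \<in> Field (\<beta> 0) \<and> (\<Psi> j x, d) \<in> \<beta> 0 \<and> \<Psi> j x \<noteq> d"
    if j: "0 < j" "j < l" and x: "x \<in> Field (\<beta> j)" for j x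
  proof -
    have US: "underS (\<beta> 0) (A j) \<subseteq> Field (\<beta> 0)" by (rule underS_sub)
    have "\<Psi> j ` Field (\<beta> j) = Field (Restr (\<beta> 0) (underS (\<beta> 0) (A j)))" by (rule iso_Field[OF isoj[OF j]])
    also have "\<dots> = underS (\<beta> 0) (A j)" by (rule Field_Restr_sub[OF WO0 US])
    finally have "\<Psi> j x \<in> underS (\<beta> 0) (A j)" using x by blast
    then have 1: "(\<Psi> j x, A j) \<in> \<beta> 0" "\<Psi> j x \<noteq> A j" unfolding underS_def by auto
    have 2: "(\<Psi> j x, d) \<in> \<beta> 0" using 1(1) Ad[OF j] LO_trans[OF LO0] by blast
    have 3: "\<Psi> j x \<noteq> d"
    proof
      assume "\<Psi> j x = d"
      then have "A j = d" using 1(1) Ad[OF j] LO_antisym[OF LO0] by blast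
      then show False using 1(2) \<open>\<Psi> j x = d\<close> by simp
    qed
    show ?thesis using 1(1) 2 3 by (auto intro: FieldI1')
  qed
  have P2: "(x, y) \<in> \<beta> j \<longleftrightarrow> (\<Psi> j x, \<Psi> j y) \<in> \<beta> 0"
    if j: "0 < j" "j < l" and x: "x \<in> Field (\<beta> j)" and y: "y \<in> Field (\<beta> j)" for j x y
  proof -
    have e: "embed (\<beta> j) (Restr (\<beta> 0) (underS (\<beta> 0) (A j))) (\<Psi> j)" using isoj[OF j] unfolding iso_def by blast
    have W': "Well_order (Restr (\<beta> 0) (underS (\<beta> 0) (A j)))" by (rule Well_order_Restr[OF WO0])
    note ef = embed_facts[OF WOj[OF j(2)] W' e]
    have "(x, y) \<in> \<beta> j \<longleftrightarrow> (\<Psi> j x, \<Psi> j y) \<in> Restr (\<beta> 0) (underS (\<beta> 0) (A j))" using ef(4)[OF x y] .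
    moreover have "\<Psi> j x \<in> underS (\<beta> 0) (A j)" "\<Psi> j y \<in> underS (\<beta> 0) (A j)"
      using ef(1)[OF x] ef(1)[OF y] Field_Restr_sub[OF WO0 underS_sub] by auto
    ultimately show ?thesis by auto
  qed
  have P3: "inj_on (\<Psi> j) (Field (\<beta> j))" if j: "0 < j" "j < l" for j
    using isoj[OF j] unfolding iso_def bij_betw_def by blast
  define K' where "K' = Suc (\<Sum>i<l. c i)"
  have cK: "\<And>j. j < l \<Longrightarrow> c j < K'" unfolding K'_def using sum_le_member[of _ l c] by (simp add: le_imp_less_Suc)
  define F where "F j g m = (\<lambda>x. if x = d then j * K' + m else if x \<in> \<Psi> j ` Field (\<beta> j) then g (inv_into (Field (\<beta> j)) (\<Psi> j) x) else 0)"
    for j and g :: "'b \<Rightarrow> nat" and m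
  define inc where "inc g = g(b0 := Suc (g b0))" for g :: "'b \<Rightarrow> nat"
  define \<Phi> where "\<Phi> u = (if fst u = 0 then (inc (fst (snd u)), snd (snd u)) else (F (fst u) (fst (snd u)) (snd (snd u)), c 0))" for u
  define w where "w = ((\<lambda>x. if x = d then l * K' else 0), c 0)"
  have c0K: "c 0 < 2 ^ K" using ck unfolding c_def .
  have Q1: "inc g \<in> fin_supp (\<beta> 0) \<and> inc g \<noteq> (\<lambda>_. 0)" if g: "g \<in> fin_supp (\<beta> 0)" for g
  proof
    show "inc g \<in> fin_supp (\<beta> 0)"
    proof (rule fs_I)
      have "{x. inc g x \<noteq> 0} \<subseteq> insert b0 {x. g x \<noteq> 0}" unfolding inc_def by auto
      then show "finite {x. inc g x \<noteq> 0}" using fs_finite[OF g] finite_subset by blast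
      show "\<And>x. inc g x \<noteq> 0 \<Longrightarrow> x \<in> Field (\<beta> 0)" using fs_supp[OF g] b0(1) unfolding inc_def by (auto split: if_splits)
    qed
    show "inc g \<noteq> (\<lambda>_. 0)" unfolding inc_def by (metis fun_upd_same nat.distinct(1))
  qed
  have Q2: "(inc g, inc g') \<in> oexp_omega (\<beta> 0) \<and> inc g \<noteq> inc g'"
    if g: "(g, g') \<in> oexp_omega (\<beta> 0)" "g \<noteq> g'" for g g'
  proof -
    have gs: "g \<in> fin_supp (\<beta> 0)" "g' \<in> fin_supp (\<beta> 0)" using g(1) unfolding E_mem by auto
    obtain x where x: "x \<in> Field (\<beta> 0)" "g x < g' x" "\<forall>y\<in>Field (\<beta> 0). (x, y) \<in> \<beta> 0 \<and> y \<noteq> x \<longrightarrow> g y = g' y"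
      using g unfolding E_mem by blast
    have "\<forall>y\<in>Field (\<beta> 0). (x, y) \<in> \<beta> 0 \<and> y \<noteq> x \<longrightarrow> inc g y = inc g' y"
    proof (intro ballI impI)
      fix y assume y: "y \<in> Field (\<beta> 0)" "(x, y) \<in> \<beta> 0 \<and> y \<noteq> x"
      have "y \<noteq> b0"
      proof
        assume "y = b0"
        then have "(y, x) \<in> \<beta> 0" using b0(2)[OF x(1)] by simp
        then show False using y LO_antisym[OF LO0] by blast
      qed
      then show "inc g y = inc g' y" using x(3) y unfolding inc_def by auto
    qed
    moreover have "inc g x < inc g' x" using x(2) unfolding inc_def by auto
    ultimately have "(inc g, inc g') \<in> oexp_omega (\<beta> 0)" using x(1) Q1[OF gs(1)] Q1[OF gs(2)] unfolding E_mem by blast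
    moreover have "inc g \<noteq> inc g'" using \<open>inc g x < inc g' x\<close> by auto
    ultimately show ?thesis by simp
  qed
  have Finv: "F j g m (\<Psi> j x) = g x" if j: "0 < j" "j < l" and x: "x \<in> Field (\<beta> j)" for j g m x
    using P1[OF j x] inv_into_f_f[OF P3[OF j] x] x unfolding F_def by auto
  have Fd: "F j g m d = j * K' + m" for j g m unfolding F_def by simp
  have Fabove: "F j g m y = 0" if j: "0 < j" "j < l" and y: "(d, y) \<in> \<beta> 0" "y \<noteq> d" for j g m y
  proof -
    have "y \<notin> \<Psi> j ` Field (\<beta> j)"
    proof
      assume "y \<in> \<Psi> j ` Field (\<beta> j)"
      then obtain x where x: "x \<in> Field (\<beta> j)" "y = \<Psi> j x" by blast
      then have "(y, d) \<in> \<beta> 0" using P1[OF j x(1)] by simp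
      then show False using y LO_antisym[OF LO0] by blast
    qed
    then show ?thesis using y unfolding F_def by auto
  qed
  have Ffs: "F j g m \<in> fin_supp (\<beta> 0)" if j: "0 < j" "j < l" and g: "g \<in> fin_supp (\<beta> j)" for j g m
  proof (rule fs_I)
    have "{x. F j g m x \<noteq> 0} \<subseteq> insert d (\<Psi> j ` {x. g x \<noteq> 0})"
    proof
      fix x assume x: "x \<in> {x. F j g m x \<noteq> 0}"
      show "x \<in> insert d (\<Psi> j ` {x. g x \<noteq> 0})"
      proof (cases "x = d")
        case False
        then have xi: "x \<in> \<Psi> j ` Field (\<beta> j)" using x unfolding F_def by (auto split: if_splits)
        then obtain y where y: "y \<in> Field (\<beta> j)" "x = \<Psi> j y" by blast
        then have "g y \<noteq> 0" using x Finv[OF j y(1)] by simp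
        then show ?thesis using y by auto
      qed simp
    qed
    then show "finite {x. F j g m x \<noteq> 0}" using fs_finite[OF g] finite_subset by blast
    show "\<And>x. F j g m x \<noteq> 0 \<Longrightarrow> x \<in> Field (\<beta> 0)"
    proof -
      fix x assume x: "F j g m x \<noteq> 0"
      show "x \<in> Field (\<beta> 0)"
      proof (cases "x = d")
        case False
        then have "x \<in> \<Psi> j ` Field (\<beta> j)" using x unfolding F_def by (auto split: if_splits)
        then show ?thesis using P1[OF j] by auto
      qed (use dF in simp)
    qed
  qed
  have Q4: "(F j g m, F j g' m) \<in> oexp_omega (\<beta> 0) \<and> F j g m \<noteq> F j g' m"
    if j: "0 < j" "j < l" and g: "(g, g') \<in> oexp_omega (\<beta> j)" "g \<noteq> g'" for j g g' m
  proof -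
    have gs: "g \<in> fin_supp (\<beta> j)" "g' \<in> fin_supp (\<beta> j)" using g(1) unfolding E_mem by auto
    obtain x where x: "x \<in> Field (\<beta> j)" "g x < g' x" "\<forall>y\<in>Field (\<beta> j). (x, y) \<in> \<beta> j \<and> y \<noteq> x \<longrightarrow> g y = g' y"
      using g unfolding E_mem by blast
    have xx: "F j g m (\<Psi> j x) < F j g' m (\<Psi> j x)" using x(2) Finv[OF j x(1)] by simp
    have "\<forall>y\<in>Field (\<beta> 0). (\<Psi> j x, y) \<in> \<beta> 0 \<and> y \<noteq> \<Psi> j x \<longrightarrow> F j g m y = F j g' m y"
    proof (intro ballI impI)
      fix y assume y: "y \<in> Field (\<beta> 0)" "(\<Psi> j x, y) \<in> \<beta> 0 \<and> y \<noteq> \<Psi> j x"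
      show "F j g m y = F j g' m y"
      proof (cases "y = d")
        case False
        show ?thesis
        proof (cases "y \<in> \<Psi> j ` Field (\<beta> j)")
          case True
          then obtain z where z: "z \<in> Field (\<beta> j)" "y = \<Psi> j z" by blast
          have "(x, z) \<in> \<beta> j" using P2[OF j x(1) z(1)] y z by simp
          moreover have "z \<noteq> x" using y z by auto
          ultimately have "g z = g' z" using x(3) z(1) by blast
          then show ?thesis using Finv[OF j z(1)] z(2) by simp
        next
          case nI: False
          then show ?thesis using False unfolding F_def by simp
        qed
      qed (simp add: F_def)
    qed
    then have "(F j g m, F j g' m) \<in> oexp_omega (\<beta> 0)"
      using xx P1[OF j x(1)] Ffs[OF j gs(1)] Ffs[OF j gs(2)] unfolding E_mem by blast
    then show ?thesis using xx by auto
  qed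
  have Q5: "(F j g m, F j' g' m') \<in> oexp_omega (\<beta> 0) \<and> F j g m \<noteq> F j' g' m'"
    if j: "0 < j" "j < l" and j': "0 < j'" "j' < l" and g: "g \<in> fin_supp (\<beta> j)" and g': "g' \<in> fin_supp (\<beta> j')"
      and lt: "j * K' + m < j' * K' + m'" for j j' g g' m m'
  proof -
    have "\<forall>y\<in>Field (\<beta> 0). (d, y) \<in> \<beta> 0 \<and> y \<noteq> d \<longrightarrow> F j g m y = F j' g' m' y"
      using Fabove[OF j] Fabove[OF j'] by auto
    then have "(F j g m, F j' g' m') \<in> oexp_omega (\<beta> 0)"
      using lt Fd dF Ffs[OF j g] Ffs[OF j' g'] unfolding E_mem by (intro conjI disjI2 bexI[of _ d]) auto
    moreover have "F j g m \<noteq> F j' g' m'" using lt Fd by (metis less_irrefl)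
    ultimately show ?thesis by simp
  qed
  have wfs: "fst w \<in> fin_supp (\<beta> 0)"
  proof (rule fs_I)
    have "{x. fst w x \<noteq> 0} \<subseteq> {d}" unfolding w_def by auto
    then show "finite {x. fst w x \<noteq> 0}" using finite_subset by blast
    show "\<And>x. fst w x \<noteq> 0 \<Longrightarrow> x \<in> Field (\<beta> 0)" unfolding w_def using dF by (auto split: if_splits)
  qed
  have lK: "0 < l * K'" using l0 unfolding K'_def by simp
  have wP: "w \<in> Pset (\<beta> 0) None K"
    unfolding Pset_def using wfs supp_below_None[OF wfs] c0K lK unfolding w_def by (auto dest: fun_cong[of _ _ d])
  have Fw: "(F j g m, fst w) \<in> oexp_omega (\<beta> 0) \<and> F j g m \<noteq> fst w"
    if j: "0 < j" "j < l" and g: "g \<in> fin_supp (\<beta> j)" and m: "m < c j" for j g m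
  proof -
    have "j * K' + m < l * K'"
    proof -
      have "j * K' + m < j * K' + K'" using m cK[OF j(2)] by simp
      also have "\<dots> = Suc j * K'" by simp
      also have "\<dots> \<le> l * K'" using j(2) by (intro mult_right_mono) auto
      finally show ?thesis .
    qed
    moreover have "fst w d = l * K'" unfolding w_def by simp
    moreover have "\<forall>y\<in>Field (\<beta> 0). (d, y) \<in> \<beta> 0 \<and> y \<noteq> d \<longrightarrow> F j g m y = fst w y"
      using Fabove[OF j] unfolding w_def by auto
    ultimately have "(F j g m, fst w) \<in> oexp_omega (\<beta> 0)"
      using Fd dF Ffs[OF j g] wfs unfolding E_mem by (intro conjI disjI2 bexI[of _ d]) auto
    moreover have "F j g m \<noteq> fst w" using \<open>j * K' + m < l * K'\<close> \<open>fst w d = l * K'\<close> Fd by (metis less_irrefl)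
    ultimately show ?thesis by simp
  qed
  have fieldc: "\<exists>j g m. u = (j, (g, m)) \<and> j < l \<and> g \<in> fin_supp (\<beta> j) \<and> m < c j" if u: "u \<in> Field (cnf ts)" for u
  proof -
    obtain j x where jx: "u = (j, x)" "j < length ts" "x \<in> Field (oprod (oexp_omega (fst (ts ! j))) (natLeq_on (snd (ts ! j))))"
      using cnf_Field[OF u] by blast
    have "x \<in> fin_supp (\<beta> j) \<times> {i. i < c j}"
      using jx(3) comp_Field[OF WOj, of j "c j"] jx(2) unfolding l_def \<beta>_def c_def by auto
    then show ?thesis using jx unfolding l_def by (cases x) auto
  qed
  have PhiP: "\<Phi> u \<in> Pset (\<beta> 0) None K \<and> (\<Phi> u, w) \<in> UU (\<beta> 0) \<and> \<Phi> u \<noteq> w" if u: "u \<in> Field (cnf ts)" for u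
  proof -
    obtain j g m where jgm: "u = (j, (g, m))" "j < l" "g \<in> fin_supp (\<beta> j)" "m < c j" using fieldc[OF u] by blast
    show ?thesis
    proof (cases "j = 0")
      case True
      then have Pu: "\<Phi> u = (inc g, m)" using jgm unfolding \<Phi>_def by simp
      have gs: "g \<in> fin_supp (\<beta> 0)" using jgm True by simp
      have "m < 2 ^ K" using jgm(4) True c0K by simp
      then have "\<Phi> u \<in> Pset (\<beta> 0) None K" using Q1[OF gs] supp_below_None Pu unfolding Pset_def by auto
      moreover have "(\<Phi> u, w) \<in> UU (\<beta> 0)" "\<Phi> u \<noteq> w"
        using Pu jgm(4) True Q1[OF gs] wfs unfolding w_def by (auto simp: U_mem)
      ultimately show ?thesis by simp
    next
      case False
      then have j: "0 < j" "j < l" using jgm by auto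
      have Pu: "\<Phi> u = (F j g m, c 0)" using jgm False unfolding \<Phi>_def by simp
      have Fz: "F j g m \<noteq> (\<lambda>_. 0)"
      proof
        assume "F j g m = (\<lambda>_. 0)"
        then have "F j g m d = 0" by simp
        then show False using Fd j(1) unfolding K'_def by simp
      qed
      have "\<Phi> u \<in> Pset (\<beta> 0) None K" using Ffs[OF j jgm(3)] supp_below_None Pu c0K Fz unfolding Pset_def by auto
      moreover have "(\<Phi> u, w) \<in> UU (\<beta> 0)" "\<Phi> u \<noteq> w"
        using Pu Fw[OF j jgm(3) jgm(4)] Ffs[OF j jgm(3)] wfs unfolding w_def by (auto simp: U_mem)
      ultimately show ?thesis by simp
    qed
  qed
  have PhiM: "(\<Phi> u, \<Phi> v) \<in> UU (\<beta> 0) \<and> \<Phi> u \<noteq> \<Phi> v"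
    if u: "u \<in> Field (cnf ts)" and v: "v \<in> Field (cnf ts)" and uv: "(u, v) \<in> cnf ts" and ne: "u \<noteq> v" for u v
  proof -
    obtain j g m where jgm: "u = (j, (g, m))" "j < l" "g \<in> fin_supp (\<beta> j)" "m < c j" using fieldc[OF u] by blast
    obtain j' g' m' where jgm': "v = (j', (g', m'))" "j' < l" "g' \<in> fin_supp (\<beta> j')" "m' < c j'" using fieldc[OF v] by blast
    have "((j, (g, m)), (j', (g', m'))) \<in> cnf ts" using uv jgm(1) jgm'(1) by simp
    then have "j < j' \<or> (j = j' \<and> ((g, m), (g', m')) \<in> oprod (oexp_omega (fst (ts ! j))) (natLeq_on (snd (ts ! j))))"
      by (simp only: cnf_mem)
    then have rel: "j < j' \<or> (j = j' \<and> ((g, m), (g', m')) \<in> oprod (oexp_omega (\<beta> j)) (natLeq_on (c j)))"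
      unfolding \<beta>_def c_def .
    show ?thesis
    proof (cases "j = 0")
      case True
      note j0 = True
      have gs: "g \<in> fin_supp (\<beta> 0)" using jgm True by simp
      have Pu: "\<Phi> u = (inc g, m)" using jgm True unfolding \<Phi>_def by simp
      show ?thesis
      proof (cases "j' = 0")
        case True
        have g's: "g' \<in> fin_supp (\<beta> 0)" using jgm' True by simp
        have Pv: "\<Phi> v = (inc g', m')" using jgm' True unfolding \<Phi>_def by simp
        have r: "m < m' \<or> (m = m' \<and> (g, g') \<in> oexp_omega (\<beta> 0))"
          using rel j0 True comp_mem[OF WO0] by auto
        show ?thesis
        proof (cases "m < m'")
          case True then show ?thesis using Pu Pv Q1[OF gs] Q1[OF g's] by (auto simp: U_mem)
        next
          case False
          then have "m = m'" "(g, g') \<in> oexp_omega (\<beta> 0)" using r by auto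
          moreover have "g \<noteq> g'" using ne jgm jgm' j0 True \<open>m = m'\<close> by auto
          ultimately show ?thesis using Pu Pv Q2 Q1[OF gs] Q1[OF g's] by (auto simp: U_mem)
        qed
      next
        case False
        then have j': "0 < j'" "j' < l" using jgm' by auto
        have Pv: "\<Phi> v = (F j' g' m', c 0)" using jgm' False unfolding \<Phi>_def by simp
        show ?thesis using Pu Pv jgm(4) j0 Q1[OF gs] Ffs[OF j' jgm'(3)] by (auto simp: U_mem)
      qed
    next
      case False
      then have j: "0 < j" "j < l" using jgm by auto
      have Pu: "\<Phi> u = (F j g m, c 0)" using jgm False unfolding \<Phi>_def by simp
      have j': "0 < j'" using rel False by auto
      have Pv: "\<Phi> v = (F j' g' m', c 0)" using jgm' j' unfolding \<Phi>_def by simp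
      have Fs: "F j g m \<in> fin_supp (\<beta> 0)" "F j' g' m' \<in> fin_supp (\<beta> 0)"
        using Ffs[OF j jgm(3)] Ffs[OF j' jgm'(2) jgm'(3)] by auto
      show ?thesis
      proof (cases "j < j' \<or> (j = j' \<and> m < m')")
        case True
        have "j * K' + m < j' * K' + m'"
        proof (cases "j < j'")
          case True
          have "j * K' + m < j * K' + K'" using jgm(4) cK[OF j(2)] by simp
          also have "\<dots> = Suc j * K'" by simp
          also have "\<dots> \<le> j' * K'" using True by (intro mult_right_mono) auto
          finally show ?thesis by simp
        next
          case False then show ?thesis using \<open>j < j' \<or> (j = j' \<and> m < m')\<close> by auto
        qed
        then show ?thesis using Q5[OF j j' jgm'(2) jgm(3) jgm'(3)] Pu Pv Fs by (auto simp: U_mem)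
      next
        case False
        then have jj: "j = j'" "m = m'" "(g, g') \<in> oexp_omega (\<beta> j)"
          using rel comp_mem[OF WOj[OF j(2)]] by auto
        have "g \<noteq> g'" using ne jgm jgm' jj by auto
        then show ?thesis using Q4[OF j jj(3)] Pu Pv jj Fs by (auto simp: U_mem)
      qed
    qed
  qed
  have WPw: "Well_order (WP (\<beta> 0) None K)" by (rule WP_WO[OF WO0 WOE0])
  have FR: "Field (Restr (WP (\<beta> 0) None K) (underS (WP (\<beta> 0) None K) w)) = underS (WP (\<beta> 0) None K) w"
    by (rule Field_Restr_sub[OF WPw underS_sub])
  have inU: "\<Phi> u \<in> underS (WP (\<beta> 0) None K) w" if u: "u \<in> Field (cnf ts)" for u
    using PhiP[OF u] wP unfolding underS_def by (simp add: WP_mem[OF WO0 WOE0])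
  have "strict_emb (cnf ts) (Restr (WP (\<beta> 0) None K) (underS (WP (\<beta> 0) None K) w)) \<Phi>"
    unfolding strict_emb_def FR
  proof (rule conjI)
    show "\<forall>x\<in>Field (cnf ts). \<Phi> x \<in> underS (WP (\<beta> 0) None K) w" using inU by blast
    show "\<forall>x\<in>Field (cnf ts). \<forall>y\<in>Field (cnf ts). (x, y) \<in> cnf ts \<longrightarrow> x \<noteq> y \<longrightarrow>
        (\<Phi> x, \<Phi> y) \<in> Restr (WP (\<beta> 0) None K) (underS (WP (\<beta> 0) None K) w) \<and> \<Phi> x \<noteq> \<Phi> y"
    proof (intro ballI impI)
      fix x y assume x: "x \<in> Field (cnf ts)" and y: "y \<in> Field (cnf ts)" and xy: "(x, y) \<in> cnf ts" and ne: "x \<noteq> y"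
      have a: "(\<Phi> x, \<Phi> y) \<in> UU (\<beta> 0)" "\<Phi> x \<noteq> \<Phi> y" using PhiM[OF x y xy ne] by auto
      have b: "\<Phi> x \<in> Pset (\<beta> 0) None K" "\<Phi> y \<in> Pset (\<beta> 0) None K" using PhiP[OF x] PhiP[OF y] by auto
      show "(\<Phi> x, \<Phi> y) \<in> Restr (WP (\<beta> 0) None K) (underS (WP (\<beta> 0) None K) w) \<and> \<Phi> x \<noteq> \<Phi> y"
        using a b inU[OF x] inU[OF y] by (simp add: WP_mem[OF WO0 WOE0])
    qed
  qed
  then show ?thesis using wP unfolding \<beta>_def by blast
qed

theorem theorem6p13:
  fixes A :: "'a rel" and ts :: "('b rel \<times> nat) list"
  assumes "Well_order A" and "countable (Field A)"
    and "(natLeq, A) \<in> ordLeq"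
    and "ts \<noteq> []"
    and "\<forall>i < length ts. Well_order (fst (ts ! i)) \<and> 1 \<le> snd (ts ! i)"
    and "\<forall>i j. i < j \<and> j < length ts \<longrightarrow> (fst (ts ! j), fst (ts ! i)) \<in> ordLess"
    and "(A, cnf ts) \<in> ordIso"
  shows "rk_ge A {} (osum (oprod natLeq (fst (hd ts))) (natLeq_on (nat \<lfloor>log 2 (real (snd (hd ts)))\<rfloor>)))
       \<and> (\<forall>\<gamma> :: 'c rel. Well_order \<gamma> \<longrightarrow> rk_ge A {} \<gamma> \<longrightarrow>
            (\<gamma>, osum (oprod natLeq (fst (hd ts))) (natLeq_on (nat \<lfloor>log 2 (real (snd (hd ts)))\<rfloor>))) \<in> ordLeq)"
proof -
  note WOA = assms(1)
  have hd0: "hd ts = ts ! 0" using assms(4) by (simp add: hd_conv_nth)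
  define \<beta>0 where "\<beta>0 = fst (ts ! 0)"
  define c0 where "c0 = snd (ts ! 0)"
  have l0: "0 < length ts" using assms(4) by simp
  have WO0: "Well_order \<beta>0" using assms(5) l0 unfolding \<beta>0_def by blast
  have c01: "1 \<le> c0" using assms(5) l0 unfolding c0_def by blast
  obtain k0 where k0: "2 ^ k0 \<le> c0" "c0 < 2 ^ (k0 + 1)" using ex_power_ivl1[of 2 c0] c01 by auto
  have "\<lfloor>log (real 2) (real c0)\<rfloor> = int k0" by (rule floor_log_nat_eq_if[OF k0]) simp
  then have kk: "nat \<lfloor>log 2 (real (snd (hd ts)))\<rfloor> = k0" unfolding hd0 c0_def[symmetric] by simp
  have fh: "fst (hd ts) = \<beta>0" unfolding hd0 \<beta>0_def ..
  have WOC: "Well_order (cnf ts)" using assms(7) unfolding ordIso_def by blast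
  have LA: "Linear_order A" using WO_lin[OF WOA] .
  have WOE: "Well_order (oexp_omega \<beta>0)"
  proof (rule WO_intro)
    show "Linear_order (oexp_omega \<beta>0)" by (rule E_LO[OF WO_lin[OF WO0]])
    let ?\<phi> = "\<lambda>f. (0::nat, (f, 0::nat))"
    have "oexp_omega \<beta>0 - Id \<subseteq> inv_image (cnf ts - Id) ?\<phi>"
    proof
      fix p assume p: "p \<in> oexp_omega \<beta>0 - Id"
      obtain f g where fg: "p = (f, g)" by force
      have fs34: "(f, g) \<in> oexp_omega \<beta>0" "f \<noteq> g" using p fg by auto
      have fs12: "f \<in> fin_supp \<beta>0" "g \<in> fin_supp \<beta>0" using fs34(1) by (simp_all add: E_mem)
      note fs = fs12 fs34
      have "(?\<phi> f, ?\<phi> g) \<in> cnf ts"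
        unfolding cnf_mem using l0 fs c01 comp_Field[OF WO0, of c0] comp_mem[OF WO0, of f 0 g 0 c0]
        unfolding \<beta>0_def c0_def by auto
      then show "p \<in> inv_image (cnf ts - Id) ?\<phi>" using fg fs(4) by simp
    qed
    then show "wf (oexp_omega \<beta>0 - Id)" by (rule wf_subset[OF wf_inv_image[OF WO_wf[OF WOC]]])
  qed
  obtain \<psi> where \<psi>: "iso (cnf ts) A \<psi>" using ordIso_symmetric[OF assms(7)] unfolding ordIso_def by blast
  have e\<psi>: "embed (cnf ts) A \<psi>" using \<psi> unfolding iso_def by blast
  note ef = embed_facts[OF WOC WOA e\<psi>]
  have nonempty: "Field \<beta>0 \<noteq> {}"
  proof
    assume E: "Field \<beta>0 = {}"
    have len1: "length ts = 1"
    proof (rule ccontr)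
      assume "length ts \<noteq> 1"
      then have "1 < length ts" using l0 by linarith
      then have "(fst (ts ! 1), \<beta>0) \<in> ordLess" using assms(6) unfolding \<beta>0_def by auto
      moreover have "Well_order (fst (ts ! 1))" using assms(5) \<open>1 < length ts\<close> by blast
      ultimately show False using ordLess_iff_ordIso_Restr[OF WO0] E by blast
    qed
    have fz: "fin_supp \<beta>0 = {(\<lambda>_. 0)}" using E fs_zero unfolding fin_supp_def by auto
    have "Field (cnf ts) \<subseteq> (\<lambda>m. (0::nat, ((\<lambda>_. 0), m))) ` {m. m < c0}"
    proof
      fix u assume "u \<in> Field (cnf ts)"
      then obtain j x where jx: "u = (j, x)" "j < length ts" "x \<in> Field (oprod (oexp_omega (fst (ts ! j))) (natLeq_on (snd (ts ! j))))"
        using cnf_Field by blast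
      have j0: "j = 0" using jx(2) len1 by simp
      then have "x \<in> fin_supp \<beta>0 \<times> {m. m < c0}" using jx(3) comp_Field[OF WO0] unfolding \<beta>0_def c0_def by simp
      then show "u \<in> (\<lambda>m. (0::nat, ((\<lambda>_. 0), m))) ` {m. m < c0}" using jx(1) j0 fz by auto
    qed
    then have finC: "finite (Field (cnf ts))" by (rule finite_subset) simp
    obtain e where e: "embed natLeq A e" using assms(3) unfolding ordLeq_def by blast
    note ef2 = embed_facts[OF natLeq_Well_order WOA e]
    have "infinite (Field A)"
    proof
      assume "finite (Field A)"
      moreover have "e ` UNIV \<subseteq> Field A" using ef2(1) Field_natLeq by auto
      ultimately have "finite (e ` (UNIV :: nat set))" by (rule finite_subset[rotated])
      then show False using ef2(3) Field_natLeq finite_imageD[of e UNIV] by auto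
    qed
    moreover have "bij_betw \<psi> (Field (cnf ts)) (Field A)" using \<psi> unfolding iso_def by blast
    ultimately show False using finC bij_betw_finite by blast
  qed
  define \<tau> where "\<tau> = tau \<beta>0 k0"
  have WOt: "Well_order \<tau>" unfolding \<tau>_def by (rule tau_WO[OF WO0])
  have WOR: "Well_order (RR \<beta>0)" by (rule R_WO[OF WO0])
  have NoneF: "None \<in> Field (osucc \<beta>0)" by (simp add: osucc_Field)
  have t1F: "(k0, None) \<in> Field (RR \<beta>0)" using NoneF R_Field[OF WO0] by auto
  have t2F: "(Suc k0, None) \<in> Field (RR \<beta>0)" using NoneF R_Field[OF WO0] by auto
  note M0m = M0_mono[OF WO0, of k0]
  define M1 where "M1 = (\<lambda>u :: (nat \<times> 'b + nat) option. case u of None \<Rightarrow> (k0, None) | Some x \<Rightarrow> M0 x)"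
  have M1m: "mono_init (osucc \<tau>) (RR \<beta>0) M1" "M1 ` Field (osucc \<tau>) = under (RR \<beta>0) (k0, None)"
    using ext_mono[OF WOR M0m(1) M0m(2) t1F] unfolding M1_def \<tau>_def by auto
  have M1img: "M1 ` Field (osucc \<tau>) = underS (RR \<beta>0) (Suc k0, None)"
    unfolding M1m(2) by (rule under_succ[of \<beta>0 k0, symmetric])
  define M2 where "M2 = (\<lambda>u :: (nat \<times> 'b + nat) option option. case u of None \<Rightarrow> (Suc k0, None) | Some x \<Rightarrow> M1 x)"
  have M2m: "mono_init (osucc (osucc \<tau>)) (RR \<beta>0) M2"
    using ext_mono(1)[OF WOR M1m(1) M1img t2F] unfolding M2_def by simp
  have NF1: "None \<in> Field (osucc \<tau>)" by (simp add: osucc_Field)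
  have NF2: "None \<in> Field (osucc (osucc \<tau>))" by (simp add: osucc_Field)
  have part1: "rk_ge A {} \<tau>"
  proof -
    have lowerRR: "spl (UU \<beta>0) (RR \<beta>0) (k0, None) (Pset \<beta>0 None k0)"
      using lower[OF WO0 t1F] by simp
    let ?\<chi> = "\<lambda>q. \<psi> (0::nat, q)"
    have inC: "(0::nat, q) \<in> Field (cnf ts)" if q: "q \<in> Pset \<beta>0 None k0" for q
    proof -
      obtain f m where fm: "q = (f, m)" by force
      have "f \<in> fin_supp \<beta>0" "m < c0" using q fm k0(1) unfolding Pset_def by auto
      then have "((0::nat, q), (0::nat, q)) \<in> cnf ts"
        unfolding cnf_mem fm using l0 comp_Field[OF WO0, of c0] comp_mem[OF WO0, of f m f m c0]
          E_mem unfolding \<beta>0_def c0_def by auto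
      then show ?thesis by (rule FieldI1')
    qed
    have "spl A (RR \<beta>0) (k0, None) (Field A)"
    proof (rule spl_emb[OF WOR lowerRR, of ?\<chi>])
      show "inj_on ?\<chi> (Pset \<beta>0 None k0)"
        using ef(3) inC unfolding inj_on_def by blast
      show "?\<chi> ` Pset \<beta>0 None k0 \<subseteq> Field A" using ef(1) inC by blast
      show "\<forall>u\<in>Pset \<beta>0 None k0. \<forall>v\<in>Pset \<beta>0 None k0. (u, v) \<in> UU \<beta>0 \<longrightarrow> (?\<chi> u, ?\<chi> v) \<in> A"
      proof (intro ballI impI)
        fix u v assume u: "u \<in> Pset \<beta>0 None k0" and v: "v \<in> Pset \<beta>0 None k0" and uv: "(u, v) \<in> UU \<beta>0"
        obtain f m f' m' where e: "u = (f, m)" "v = (f', m')" by force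
        have "m < c0" "m' < c0" using u v e k0(1) unfolding Pset_def by auto
        then have "((0::nat, u), (0::nat, v)) \<in> cnf ts"
          unfolding cnf_mem e using l0 uv e comp_Field[OF WO0, of c0] comp_mem[OF WO0, of f m f' m' c0]
          unfolding \<beta>0_def c0_def by (auto simp: U_mem)
        then show "(?\<chi> u, ?\<chi> v) \<in> A" using ef(4)[OF inC[OF u] inC[OF v]] by simp
      qed
    qed
    then have "spl A (osucc \<tau>) None (Field A)"
      using spl_transfer[OF osucc_WO[OF WOt] WOR M1m(1) NF1, of A "Field A"] unfolding M1_def by simp
    then show ?thesis using rk_ge_spl[OF WOt LA] by simp
  qed
  have part2: "(\<gamma>, \<tau>) \<in> ordLeq" if WOg: "Well_order \<gamma>" and rg: "rk_ge A {} \<gamma>" for \<gamma> :: "'c rel"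
  proof (rule ccontr)
    assume nl: "(\<gamma>, \<tau>) \<notin> ordLeq"
    then have "(\<tau>, \<gamma>) \<in> ordLess" using not_ordLeq_iff_ordLess[OF WOt WOg] by blast
    then have "(osucc \<tau>, \<gamma>) \<in> ordLeq" by (rule ordLess_osucc[OF WOt WOg])
    then obtain H where H: "mono_init (osucc (osucc \<tau>)) (osucc \<gamma>) H"
      using ordLeq_osucc_map[OF osucc_WO[OF WOt] WOg] by blast
    have s0: "spl A (osucc \<gamma>) None (Field A)" using rg rk_ge_spl[OF WOg LA] by simp
    have HF: "H None \<in> Field (osucc \<gamma>)" using H NF2 unfolding mono_init_def by blast
    have "(H None, None) \<in> osucc \<gamma>" using HF by (cases "H None") (auto simp: osucc_Field osucc_mem)
    then have "spl A (osucc \<gamma>) (H None) (Field A)" using spl_down[OF osucc_WO[OF WOg] s0] by blast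
    moreover have "spl A (osucc (osucc \<tau>)) None (Field A) = spl A (osucc \<gamma>) (H None) (Field A)"
      by (rule spl_transfer[OF osucc_WO[OF osucc_WO[OF WOt]] osucc_WO[OF WOg] H NF2])
    ultimately have "spl A (osucc (osucc \<tau>)) None (Field A)" by simp
    then have "spl A (RR \<beta>0) (Suc k0, None) (Field A)"
      using spl_transfer[OF osucc_WO[OF osucc_WO[OF WOt]] WOR M2m NF2, of A "Field A"] unfolding M2_def by simp
    then have "(WP \<beta>0 None (Suc k0), Restr A (Field A)) \<in> ordLeq"
      using upper[OF WO0 WOE WOA t2F] by simp
    then have l1: "(WP \<beta>0 None (Suc k0), A) \<in> ordLeq" by (simp add: Restr_Field)
    have ck: "snd (ts ! 0) < 2 ^ Suc k0" using k0(2) unfolding c0_def by simp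
    obtain w \<Phi> where w: "w \<in> Pset \<beta>0 None (Suc k0)"
      and \<Phi>: "strict_emb (cnf ts) (Restr (WP \<beta>0 None (Suc k0)) (underS (WP \<beta>0 None (Suc k0)) w)) \<Phi>"
      using big_embed[OF assms(4) assms(5) assms(6) WOE[unfolded \<beta>0_def] nonempty[unfolded \<beta>0_def] ck]
      unfolding \<beta>0_def by blast
    have WPW: "Well_order (WP \<beta>0 None (Suc k0))" by (rule WP_WO[OF WO0 WOE])
    have l2: "(cnf ts, Restr (WP \<beta>0 None (Suc k0)) (underS (WP \<beta>0 None (Suc k0)) w)) \<in> ordLeq"
      by (rule strict_ordLeq[OF WOC Well_order_Restr[OF WPW] \<Phi>])
    have neF: "Field (WP \<beta>0 None (Suc k0)) \<noteq> {}" using w WP_Field[OF WO0 WOE] by auto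
    have l3: "(Restr (WP \<beta>0 None (Suc k0)) (underS (WP \<beta>0 None (Suc k0)) w), WP \<beta>0 None (Suc k0)) \<in> ordLess"
      by (rule underS_Restr_ordLess[OF WPW neF])
    have "(WP \<beta>0 None (Suc k0), cnf ts) \<in> ordLeq" using l1 assms(7) ordLeq_ordIso_trans by blast
    then have "(WP \<beta>0 None (Suc k0), Restr (WP \<beta>0 None (Suc k0)) (underS (WP \<beta>0 None (Suc k0)) w)) \<in> ordLeq"
      using l2 ordLeq_transitive by blast
    then have "(WP \<beta>0 None (Suc k0), WP \<beta>0 None (Suc k0)) \<in> ordLess" using l3 ordLeq_ordLess_trans by blast
    then show False using ordLess_irreflexive by blast
  qed
  have teq: "osum (oprod natLeq (fst (hd ts))) (natLeq_on (nat \<lfloor>log 2 (real (snd (hd ts)))\<rfloor>)) = \<tau>"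
    unfolding \<tau>_def kk fh ..
  show ?thesis unfolding teq using part1 part2 by blast
qed

end
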